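(* Fix an integer $\Lambda\ge3$ and let $(G,s,t)$ be a 2-terminal graph in the class $\mathcal W$ such that $G$ has maxmaxflow at most $\Lambda$. Let $\rho^\star_\Lambda$ be the unique solution in $(0,1)$ of $(1+\rho)^\Lambda=2(1+\rho^2)^{\Lambda-1}$. For $q\in\mathbb C$ with $q\neq1$ put $\rho=1/|q-1|$ and $X=\big(2/(1+\rho)\big)^{1/(\Lambda-1)}$. Then $P_G(q)\neq0$ whenever $$|q-1|\ge1/\rho^\star_\Lambda\quad\text{and}\quad|q-2|\ge\frac{2(1-\rho X^2)}{X^2-1}.$$
   Context: Chromatic polynomial of $G=(V,E)$: $P_G(q)=\sum_{A\subseteq E}(-1)^{|A|}q^{k(A)}$, $k(A)$ = number of connected components of $(V,A)$. $\lambda_G(x,y)$ = maximum number of edge-disjoint $x$–$y$ paths; maxmaxflow $\Lambda(G)=\max_{x\ne y}\lambda_G(x,y)$. A 2-terminal graph $(G,s,t)$ has distinct terminals $s,t$. Parallel composition of $(G_1,s_1,t_1),(G_2,s_2,t_2)$ (disjoint vertex sets): identify $s_2$ with $s_1$ and $t_2$ with $t_1$, terminals $s_1,t_1$. Series composition: identify $t_1$ with $s_2$, terminals $s_1,t_2$. The Wheatstone bridge is $(W,s,t)$ with $W=K_4$ minus an edge and $s,t$ its two vertices of degree 2. $\mathcal W$ is the smallest class of 2-terminal graphs containing $K_2$ (terminals its two vertices) and the Wheatstone bridge and closed under series and parallel composition. *)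

theory Defs
  imports Complex_Main
begin

text \<open>Multigraphs: a vertex set V :: 'a set and an edge set E of labelled edges
  (label, {u,v}); the label allows parallel edges. Edges are undirected.\<close>

type_synonym ('a,'b) edge = "'b \<times> 'a set"

definition adj_rel :: "('a,'b) edge set \<Rightarrow> ('a \<times> 'a) set" where
  "adj_rel A = {(u,v). \<exists>l. (l, {u,v}) \<in> A}"

definition conn_rel :: "'a set \<Rightarrow> ('a,'b) edge set \<Rightarrow> ('a \<times> 'a) set" where
  "conn_rel V A = (adj_rel A)\<^sup>* \<inter> (V \<times> V)"

definition num_comps :: "'a set \<Rightarrow> ('a,'b) edge set \<Rightarrow> nat" where
  "num_comps V A = card (V // conn_rel V A)"

definition chrom_poly :: "'a set \<Rightarrow> ('a,'b) edge set \<Rightarrow> complex \<Rightarrow> complex" where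
  "chrom_poly V E q = (\<Sum>A\<in>Pow E. (-1) ^ card A * q ^ num_comps V A)"

definition is_path :: "'a set \<Rightarrow> ('a,'b) edge set \<Rightarrow> 'a \<Rightarrow> 'a \<Rightarrow> 'a list \<Rightarrow> ('a,'b) edge list \<Rightarrow> bool" where
  "is_path V E x y vs es \<longleftrightarrow>
     vs \<noteq> [] \<and> hd vs = x \<and> last vs = y \<and> distinct vs \<and> set vs \<subseteq> V \<and>
     length vs = Suc (length es) \<and>
     (\<forall>i < length es. es ! i \<in> E \<and> snd (es ! i) = {vs ! i, vs ! Suc i})"

definition local_edge_conn :: "'a set \<Rightarrow> ('a,'b) edge set \<Rightarrow> 'a \<Rightarrow> 'a \<Rightarrow> nat" where
  "local_edge_conn V E x y = Max {n. \<exists>P :: ('a list \<times> ('a,'b) edge list) list.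
      length P = n \<and> (\<forall>i < n. is_path V E x y (fst (P ! i)) (snd (P ! i))) \<and>
      (\<forall>i < n. \<forall>j < n. i \<noteq> j \<longrightarrow> set (snd (P ! i)) \<inter> set (snd (P ! j)) = {})}"

definition maxmaxflow :: "'a set \<Rightarrow> ('a,'b) edge set \<Rightarrow> nat" where
  "maxmaxflow V E = Max {local_edge_conn V E x y | x y. x \<in> V \<and> y \<in> V \<and> x \<noteq> y}"

inductive inW :: "'a set \<Rightarrow> ('a,'b) edge set \<Rightarrow> 'a \<Rightarrow> 'a \<Rightarrow> bool" where
  K2: "s \<noteq> t \<Longrightarrow> inW {s, t} {(l, {s, t})} s t"
| Wheatstone: "distinct [s, a, b, t] \<Longrightarrow>
     inW {s, a, b, t} {(l1, {s, a}), (l2, {s, b}), (l3, {a, b}), (l4, {a, t}), (l5, {b, t})} s t"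
| parallel: "inW V1 E1 s t \<Longrightarrow> inW V2 E2 s t \<Longrightarrow> V1 \<inter> V2 = {s, t} \<Longrightarrow> E1 \<inter> E2 = {} \<Longrightarrow>
     inW (V1 \<union> V2) (E1 \<union> E2) s t"
| series: "inW V1 E1 s m \<Longrightarrow> inW V2 E2 m t \<Longrightarrow> V1 \<inter> V2 = {m} \<Longrightarrow> E1 \<inter> E2 = {} \<Longrightarrow>
     inW (V1 \<union> V2) (E1 \<union> E2) s t"

definition rho_star :: "nat \<Rightarrow> real" where
  "rho_star L = (THE r. 0 < r \<and> r < 1 \<and> (1 + r) ^ L = 2 * (1 + r\<^sup>2) ^ (L - 1))"

end

theory Submission
  imports Defs "HOL-Library.FuncSet"
begin

definition wfE :: "'a set \<Rightarrow> ('a,'b) edge set \<Rightarrow> bool" where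
  "wfE V A \<longleftrightarrow> (\<forall>x\<in>A. \<exists>u v. snd x = {u,v} \<and> u \<in> V \<and> v \<in> V \<and> u \<noteq> v)"

lemma wfE_subset: "wfE V A \<Longrightarrow> B \<subseteq> A \<Longrightarrow> wfE V B"
  unfolding wfE_def by (meson subsetD)

lemma wfE_Un: "wfE V (A \<union> B) \<longleftrightarrow> wfE V A \<and> wfE V B"
  unfolding wfE_def by (rule ball_Un)

lemma wfE_mono: assumes "wfE V A" "V \<subseteq> W" shows "wfE W A"
  unfolding wfE_def
proof
  fix x assume "x \<in> A"
  then obtain u v where "snd x = {u,v}" "u \<in> V" "v \<in> V" "u \<noteq> v" using assms(1) unfolding wfE_def by blast
  then show "\<exists>u v. snd x = {u,v} \<and> u \<in> W \<and> v \<in> W \<and> u \<noteq> v" using assms(2) by blast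
qed

lemma adj_rel_Un: "adj_rel (A \<union> B) = adj_rel A \<union> adj_rel B"
  unfolding adj_rel_def by blast

lemma adj_rel_mono: "A \<subseteq> B \<Longrightarrow> adj_rel A \<subseteq> adj_rel B"
  unfolding adj_rel_def by blast

lemma adj_rel_sym: "(u,v) \<in> adj_rel A \<Longrightarrow> (v,u) \<in> adj_rel A"
  unfolding adj_rel_def by (auto simp: insert_commute)

lemma adj_rel_in_V: assumes "wfE V A" "(u,v) \<in> adj_rel A" shows "u \<in> V" "v \<in> V"
proof -
  from assms(2) obtain l where "(l,{u,v}) \<in> A" unfolding adj_rel_def by auto
  with assms(1) obtain u' v' where "{u,v} = {u',v'}" "u' \<in> V" "v' \<in> V" unfolding wfE_def by force
  then show "u \<in> V" "v \<in> V" by (auto simp: doubleton_eq_iff)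
qed

lemma sym_adj: "sym (adj_rel A)"
  by (meson adj_rel_sym symI)

lemma rtrancl_adj_sym: "(x,y) \<in> (adj_rel A)\<^sup>* \<Longrightarrow> (y,x) \<in> (adj_rel A)\<^sup>*"
  by (metis sym_adj sym_conv_converse_eq rtrancl_converseI)

lemma rtrancl_adj_V: assumes "wfE V A" "(x,y) \<in> (adj_rel A)\<^sup>*" "x \<in> V" shows "y \<in> V"
  using assms(2,3) by (induction rule: rtrancl_induct) (use adj_rel_in_V[OF assms(1)] in auto)

definition good :: "('a,'b) edge set \<Rightarrow> ('a \<Rightarrow> bool) \<Rightarrow> bool" where
  "good A f \<longleftrightarrow> (\<forall>(x,y)\<in>adj_rel A. f x = f y)"

definition FF :: "'a set \<Rightarrow> ('a,'b) edge set \<Rightarrow> ('a \<Rightarrow> bool) set" where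
  "FF V A = {f \<in> V \<rightarrow>\<^sub>E (UNIV::bool set). good A f}"

lemma good_rtrancl: assumes "good A f" "(x,y) \<in> (adj_rel A)\<^sup>*" shows "f x = f y"
  using assms(2) by (induction rule: rtrancl_induct) (use assms(1) in \<open>auto simp: good_def\<close>)

lemma conn_iff:
  assumes "wfE V A"
  shows "(x,y) \<in> conn_rel V A \<longleftrightarrow> x \<in> V \<and> y \<in> V \<and> (\<forall>f\<in>FF V A. f x = f y)"
proof
  assume "(x,y) \<in> conn_rel V A"
  then show "x \<in> V \<and> y \<in> V \<and> (\<forall>f\<in>FF V A. f x = f y)"
    unfolding conn_rel_def FF_def using good_rtrancl by fastforce
next
  assume h: "x \<in> V \<and> y \<in> V \<and> (\<forall>f\<in>FF V A. f x = f y)"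
  define f where "f = (\<lambda>z\<in>V. (x,z) \<in> (adj_rel A)\<^sup>*)"
  have "good A f" unfolding good_def
  proof (clarify)
    fix u v assume uv: "(u,v) \<in> adj_rel A"
    have uV: "u \<in> V" and vV: "v \<in> V" using adj_rel_in_V[OF assms uv] by auto
    have "(x,u) \<in> (adj_rel A)\<^sup>* \<longleftrightarrow> (x,v) \<in> (adj_rel A)\<^sup>*"
      using uv adj_rel_sym[OF uv] by (meson rtrancl_into_rtrancl)
    then show "f u = f v" using uV vV unfolding f_def by simp
  qed
  then have "f \<in> FF V A" unfolding FF_def f_def by auto
  with h have "f x = f y" by simp
  then show "(x,y) \<in> conn_rel V A" using h unfolding f_def conn_rel_def by simp
qed

lemma equiv_conn: assumes "wfE V A" shows "equiv V (conn_rel V A)"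
proof (rule equivI)
  show "conn_rel V A \<subseteq> V \<times> V" unfolding conn_rel_def by (rule Int_lower2)
  show "refl_on V (conn_rel V A)" unfolding refl_on_def conn_rel_def by simp
  show "sym (conn_rel V A)" unfolding sym_def conn_rel_def by (metis IntD1 IntD2 IntI mem_Sigma_iff rtrancl_adj_sym)
  show "trans (conn_rel V A)" unfolding trans_def conn_rel_def
    by (metis (no_types, lifting) IntD1 IntD2 IntI mem_Sigma_iff rtrancl_trans)
qed

lemma card_FF:
  assumes fin: "finite V" and wf: "wfE V A"
  shows "card (FF V A) = 2 ^ num_comps V A"
proof -
  let ?R = "conn_rel V A"
  have eq: "equiv V ?R" by (rule equiv_conn[OF wf])
  define \<phi> where "\<phi> = (\<lambda>g. \<lambda>x\<in>V. g (?R``{x}) :: bool)"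
  have fq: "finite (V // ?R)" using fin by (rule finite_quotient) (use eq in \<open>simp add: equiv_def\<close>)
  have "bij_betw \<phi> (V // ?R \<rightarrow>\<^sub>E (UNIV::bool set)) (FF V A)"
  proof (rule bij_betwI')
    fix g h assume g: "g \<in> V // ?R \<rightarrow>\<^sub>E (UNIV::bool set)" and h: "h \<in> V // ?R \<rightarrow>\<^sub>E (UNIV::bool set)"
    show "(\<phi> g = \<phi> h) = (g = h)"
    proof
      assume e: "\<phi> g = \<phi> h"
      show "g = h"
      proof (rule extensionalityI[OF PiE_iff[THEN iffD1, OF g, THEN conjunct2] PiE_iff[THEN iffD1, OF h, THEN conjunct2]])
        fix C assume "C \<in> V // ?R"
        then obtain x where x: "x \<in> V" "C = ?R``{x}" by (auto simp: quotient_def)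
        from fun_cong[OF e, of x] x show "g C = h C" unfolding \<phi>_def by simp
      qed
    qed simp
  next
    fix g assume g: "g \<in> V // ?R \<rightarrow>\<^sub>E (UNIV::bool set)"
    have "good A (\<phi> g)" unfolding good_def
    proof clarify
      fix u v assume uv: "(u,v) \<in> adj_rel A"
      have uV: "u \<in> V" and vV: "v \<in> V" using adj_rel_in_V[OF wf uv] by auto
      have "(u,v) \<in> ?R" unfolding conn_rel_def using uv uV vV by auto
      then have "?R``{u} = ?R``{v}" using eq by (simp add: equiv_class_eq)
      then show "\<phi> g u = \<phi> g v" unfolding \<phi>_def using uV vV by simp
    qed
    then show "\<phi> g \<in> FF V A" unfolding FF_def \<phi>_def by auto
  next
    fix f assume f: "f \<in> FF V A"
    define g where "g = (\<lambda>C\<in>V // ?R. f (SOME z. z \<in> C))"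
    have "g \<in> V // ?R \<rightarrow>\<^sub>E (UNIV::bool set)" unfolding g_def by auto
    moreover have "f = \<phi> g"
    proof (rule extensionalityI[where A=V])
      show "f \<in> extensional V" using f unfolding FF_def by (auto simp: PiE_def)
      show "\<phi> g \<in> extensional V" unfolding \<phi>_def by simp
      fix x assume x: "x \<in> V"
      have cl: "?R``{x} \<in> V // ?R" using x by (rule quotientI)
      have "x \<in> ?R``{x}" using x unfolding conn_rel_def by simp
      define z where "z = (SOME z. z \<in> ?R``{x})"
      have "z \<in> ?R``{x}" unfolding z_def by (rule someI) fact
      then have "(x, z) \<in> ?R" by simp
      then have "f x = f z" using conn_iff[OF wf, of x z] f by metis
      then have "f x = f (SOME z. z \<in> ?R``{x})" unfolding z_def .
      then show "f x = \<phi> g x" unfolding \<phi>_def g_def using x cl by simp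
    qed
    ultimately show "\<exists>g\<in>V // ?R \<rightarrow>\<^sub>E (UNIV::bool set). f = \<phi> g" by auto
  qed
  then have "card (FF V A) = card (V // ?R \<rightarrow>\<^sub>E (UNIV::bool set))" by (simp add: bij_betw_same_card)
  also have "\<dots> = 2 ^ card (V // ?R)" using fq by (simp add: card_PiE prod_constant)
  finally show ?thesis unfolding num_comps_def .
qed


lemma card_invol:
  assumes "\<And>x. x \<in> S \<Longrightarrow> \<phi> x \<in> T" "\<And>x. x \<in> T \<Longrightarrow> \<phi> x \<in> S"
    "\<And>x. x \<in> S \<Longrightarrow> \<phi> (\<phi> x) = x" "\<And>x. x \<in> T \<Longrightarrow> \<phi> (\<phi> x) = x"
  shows "card S = card T"
proof -
  have "bij_betw \<phi> S T" by (rule bij_betw_byWitness[where f'=\<phi>]) (use assms in auto)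
  then show ?thesis by (rule bij_betw_same_card)
qed

lemma finite_FF: "finite V \<Longrightarrow> finite (FF V A)"
proof -
  assume "finite V"
  then have "finite (V \<rightarrow>\<^sub>E (UNIV::bool set))" by (simp add: finite_PiE)
  then show ?thesis unfolding FF_def by simp
qed

definition cnt :: "'a set \<Rightarrow> ('a,'b) edge set \<Rightarrow> 'a \<Rightarrow> 'a \<Rightarrow> bool \<Rightarrow> bool \<Rightarrow> nat" where
  "cnt V A u v p r = card {f \<in> FF V A. f u = p \<and> f v = r}"

definition negf :: "'a set \<Rightarrow> ('a \<Rightarrow> bool) \<Rightarrow> 'a \<Rightarrow> bool" where
  "negf V f = (\<lambda>x\<in>V. \<not> f x)"

lemma negf_FF: assumes "wfE V A" "f \<in> FF V A" shows "negf V f \<in> FF V A"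
proof -
  have "good A (negf V f)" unfolding good_def
  proof clarify
    fix x y assume xy: "(x,y) \<in> adj_rel A"
    then have "x \<in> V" "y \<in> V" using adj_rel_in_V[OF assms(1)] by auto
    moreover have "f x = f y" using assms(2) xy unfolding FF_def good_def by auto
    ultimately show "negf V f x = negf V f y" unfolding negf_def by simp
  qed
  then show ?thesis unfolding FF_def negf_def by auto
qed

lemma negf_negf: assumes "f \<in> FF V A" shows "negf V (negf V f) = f"
proof (rule extensionalityI[where A=V])
  show "f \<in> extensional V" using assms unfolding FF_def by (simp add: PiE_iff)
qed (auto simp: negf_def)

lemma cnt_flip_global:
  assumes wf: "wfE V A" and "u \<in> V" "v \<in> V"
  shows "cnt V A u v p r = cnt V A u v (\<not>p) (\<not>r)"
  unfolding cnt_def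
proof (rule card_invol[where \<phi>="negf V"])
  fix f assume f: "f \<in> {f \<in> FF V A. f u = p \<and> f v = r}"
  show "negf V f \<in> {f \<in> FF V A. f u = (\<not> p) \<and> f v = (\<not> r)}"
    using f negf_FF[OF wf] assms by (auto simp: negf_def)
  show "negf V (negf V f) = f" by (rule negf_negf[of _ V A]) (use f in simp)
next
  fix f assume f: "f \<in> {f \<in> FF V A. f u = (\<not>p) \<and> f v = (\<not>r)}"
  show "negf V f \<in> {f \<in> FF V A. f u = p \<and> f v = r}"
    using f negf_FF[OF wf] assms by (auto simp: negf_def)
  show "negf V (negf V f) = f" by (rule negf_negf[of _ V A]) (use f in simp)
qed

definition compf :: "'a set \<Rightarrow> ('a,'b) edge set \<Rightarrow> 'a \<Rightarrow> ('a \<Rightarrow> bool) \<Rightarrow> 'a \<Rightarrow> bool" where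
  "compf V A v f = (\<lambda>x\<in>V. if (v,x) \<in> (adj_rel A)\<^sup>* then \<not> f x else f x)"

lemma compf_FF: assumes "wfE V A" "f \<in> FF V A" shows "compf V A v f \<in> FF V A"
proof -
  have "good A (compf V A v f)" unfolding good_def
  proof clarify
    fix x y assume xy: "(x,y) \<in> adj_rel A"
    then have V: "x \<in> V" "y \<in> V" using adj_rel_in_V[OF assms(1)] by auto
    have fe: "f x = f y" using assms(2) xy unfolding FF_def good_def by auto
    have "(v,x) \<in> (adj_rel A)\<^sup>* \<longleftrightarrow> (v,y) \<in> (adj_rel A)\<^sup>*"
      using xy adj_rel_sym[OF xy] by (meson rtrancl_into_rtrancl)
    then show "compf V A v f x = compf V A v f y" unfolding compf_def using V fe by simp
  qed
  then show ?thesis unfolding FF_def compf_def by auto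
qed

lemma compf_compf: assumes "f \<in> FF V A" shows "compf V A v (compf V A v f) = f"
proof (rule extensionalityI[where A=V])
  show "f \<in> extensional V" using assms unfolding FF_def by (simp add: PiE_iff)
qed (auto simp: compf_def)

lemma cnt_flip_comp:
  assumes wf: "wfE V A" and V: "u \<in> V" "v \<in> V" and nc: "(u,v) \<notin> conn_rel V A"
  shows "cnt V A u v p r = cnt V A u v p (\<not>r)"
proof -
  have nvu: "(v,u) \<notin> (adj_rel A)\<^sup>*" using nc V unfolding conn_rel_def by (metis IntI mem_Sigma_iff rtrancl_adj_sym)
  have vv: "(v,v) \<in> (adj_rel A)\<^sup>*" by simp
  show ?thesis unfolding cnt_def
  proof (rule card_invol[where \<phi>="compf V A v"])
    fix f assume f: "f \<in> {f \<in> FF V A. f u = p \<and> f v = r}"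
    show "compf V A v f \<in> {f \<in> FF V A. f u = p \<and> f v = (\<not> r)}"
      using f compf_FF[OF wf] V nvu vv by (auto simp: compf_def)
    show "compf V A v (compf V A v f) = f" by (rule compf_compf[of _ V A]) (use f in simp)
  next
    fix f assume f: "f \<in> {f \<in> FF V A. f u = p \<and> f v = (\<not>r)}"
    show "compf V A v f \<in> {f \<in> FF V A. f u = p \<and> f v = r}"
      using f compf_FF[OF wf] V nvu vv by (auto simp: compf_def)
    show "compf V A v (compf V A v f) = f" by (rule compf_compf[of _ V A]) (use f in simp)
  qed
qed

lemma cnt_conn_zero:
  assumes wf: "wfE V A" and c: "(u,v) \<in> conn_rel V A"
  shows "cnt V A u v p (\<not>p) = 0"
proof -
  have "{f \<in> FF V A. f u = p \<and> f v = (\<not>p)} = {}" using c conn_iff[OF wf] by auto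
  then show ?thesis unfolding cnt_def by (metis card.empty)
qed

lemma card_FF_split:
  assumes "finite V"
  shows "card (FF V A) = cnt V A u v True True + cnt V A u v True False + cnt V A u v False True + cnt V A u v False False"
proof -
  have fF: "finite (FF V A)" using finite_FF[OF assms, of A] .
  have fin: "\<And>P. finite {f \<in> FF V A. P f}" by (rule finite_subset[OF _ fF]) auto
  let ?S = "\<lambda>p r. {f \<in> FF V A. f u = p \<and> f v = r}"
  have e: "FF V A = (?S True True \<union> ?S True False) \<union> (?S False True \<union> ?S False False)" by auto
  have c1: "card (?S True True \<union> ?S True False) = card (?S True True) + card (?S True False)"
    by (rule card_Un_disjoint[OF fin fin]) auto
  have c2: "card (?S False True \<union> ?S False False) = card (?S False True) + card (?S False False)"
    by (rule card_Un_disjoint[OF fin fin]) auto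
  have c3: "card ((?S True True \<union> ?S True False) \<union> (?S False True \<union> ?S False False)) =
     card (?S True True \<union> ?S True False) + card (?S False True \<union> ?S False False)"
    by (rule card_Un_disjoint) (use fF in \<open>auto intro: finite_subset[OF _ fF]\<close>)
  show ?thesis unfolding cnt_def by (subst e) (simp only: c1 c2 c3 add.assoc)
qed

definition glue :: "'a set \<Rightarrow> 'a set \<Rightarrow> ('a \<Rightarrow> bool) \<Rightarrow> ('a \<Rightarrow> bool) \<Rightarrow> 'a \<Rightarrow> bool" where
  "glue V1 V2 f1 f2 = (\<lambda>x\<in>V1 \<union> V2. if x \<in> V1 then f1 x else f2 x)"

lemma glue_FF:
  assumes wf1: "wfE V1 A1" and wf2: "wfE V2 A2" and f1: "f1 \<in> FF V1 A1" and f2: "f2 \<in> FF V2 A2"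
    and agree: "\<And>x. x \<in> V1 \<Longrightarrow> x \<in> V2 \<Longrightarrow> f1 x = f2 x"
  shows "glue V1 V2 f1 f2 \<in> FF (V1 \<union> V2) (A1 \<union> A2)"
proof -
  have "good (A1 \<union> A2) (glue V1 V2 f1 f2)" unfolding good_def adj_rel_Un
  proof clarify
    fix x y assume "(x,y) \<in> adj_rel A1 \<union> adj_rel A2"
    then show "glue V1 V2 f1 f2 x = glue V1 V2 f1 f2 y"
    proof
      assume xy: "(x,y) \<in> adj_rel A1"
      then have "x \<in> V1" "y \<in> V1" using adj_rel_in_V[OF wf1] by auto
      moreover have "f1 x = f1 y" using f1 xy unfolding FF_def good_def by auto
      ultimately show ?thesis unfolding glue_def by simp
    next
      assume xy: "(x,y) \<in> adj_rel A2"
      then have V: "x \<in> V2" "y \<in> V2" using adj_rel_in_V[OF wf2] by auto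
      moreover have "f2 x = f2 y" using f2 xy unfolding FF_def good_def by auto
      ultimately show ?thesis unfolding glue_def using agree by auto
    qed
  qed
  then show ?thesis unfolding FF_def glue_def by auto
qed

lemma restrict_FF:
  assumes wf1: "wfE V1 A1" and f: "f \<in> FF V A" and sub: "V1 \<subseteq> V" "A1 \<subseteq> A"
  shows "restrict f V1 \<in> FF V1 A1"
proof -
  have "good A1 (restrict f V1)" unfolding good_def
  proof clarify
    fix x y assume xy: "(x,y) \<in> adj_rel A1"
    then have "x \<in> V1" "y \<in> V1" using adj_rel_in_V[OF wf1] by auto
    moreover have "(x,y) \<in> adj_rel A" using adj_rel_mono[OF sub(2)] xy by auto
    then have "f x = f y" using f unfolding FF_def good_def by auto
    ultimately show "restrict f V1 x = restrict f V1 y" by simp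
  qed
  then show ?thesis unfolding FF_def by auto
qed

lemma card_FF_glue:
  assumes wf1: "wfE V1 A1" and wf2: "wfE V2 A2"
  shows "card (FF (V1 \<union> V2) (A1 \<union> A2)) =
         card {(f1,f2). f1 \<in> FF V1 A1 \<and> f2 \<in> FF V2 A2 \<and> (\<forall>x\<in>V1 \<inter> V2. f1 x = f2 x)}"
proof -
  let ?T = "{(f1,f2). f1 \<in> FF V1 A1 \<and> f2 \<in> FF V2 A2 \<and> (\<forall>x\<in>V1 \<inter> V2. f1 x = f2 x)}"
  have wf: "wfE (V1 \<union> V2) (A1 \<union> A2)" using wfE_mono[OF wf1, of "V1 \<union> V2"] wfE_mono[OF wf2, of "V1 \<union> V2"]
    by (simp add: wfE_Un)
  have "bij_betw (\<lambda>f. (restrict f V1, restrict f V2)) (FF (V1 \<union> V2) (A1 \<union> A2)) ?T"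
  proof (rule bij_betw_byWitness[where f'="\<lambda>(f1,f2). glue V1 V2 f1 f2"])
    show "\<forall>a\<in>FF (V1 \<union> V2) (A1 \<union> A2). (\<lambda>(f1, f2). glue V1 V2 f1 f2) (restrict a V1, restrict a V2) = a"
    proof
      fix f assume f: "f \<in> FF (V1 \<union> V2) (A1 \<union> A2)"
      show "(\<lambda>(f1, f2). glue V1 V2 f1 f2) (restrict f V1, restrict f V2) = f"
      proof (rule extensionalityI[where A="V1 \<union> V2"])
        show "f \<in> extensional (V1 \<union> V2)" using f unfolding FF_def by (simp add: PiE_iff)
      qed (auto simp: glue_def)
    qed
    show "\<forall>a'\<in>?T. (\<lambda>f. (restrict f V1, restrict f V2)) ((\<lambda>(f1, f2). glue V1 V2 f1 f2) a') = a'"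
    proof
      fix p assume p: "p \<in> ?T"
      obtain f1 f2 where pe: "p = (f1,f2)" by (cases p)
      have f1: "f1 \<in> FF V1 A1" and f2: "f2 \<in> FF V2 A2" and ag: "\<forall>x\<in>V1 \<inter> V2. f1 x = f2 x"
        using p unfolding pe by auto
      have e1: "f1 \<in> extensional V1" using f1 unfolding FF_def by (simp add: PiE_iff)
      have e2: "f2 \<in> extensional V2" using f2 unfolding FF_def by (simp add: PiE_iff)
      have r1: "restrict (glue V1 V2 f1 f2) V1 = f1"
        by (rule extensionalityI[OF _ e1]) (auto simp: glue_def)
      have r2: "restrict (glue V1 V2 f1 f2) V2 = f2"
        by (rule extensionalityI[OF _ e2]) (use ag in \<open>auto simp: glue_def\<close>)
      show "(\<lambda>f. (restrict f V1, restrict f V2)) ((\<lambda>(f1, f2). glue V1 V2 f1 f2) p) = p"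
        unfolding pe using r1 r2 by simp
    qed
    show "(\<lambda>f. (restrict f V1, restrict f V2)) ` FF (V1 \<union> V2) (A1 \<union> A2) \<subseteq> ?T"
    proof clarify
      fix f assume f: "f \<in> FF (V1 \<union> V2) (A1 \<union> A2)"
      show "restrict f V1 \<in> FF V1 A1 \<and> restrict f V2 \<in> FF V2 A2 \<and> (\<forall>x\<in>V1 \<inter> V2. restrict f V1 x = restrict f V2 x)"
        using restrict_FF[OF wf1 f] restrict_FF[OF wf2 f] by auto
    qed
    show "(\<lambda>(f1, f2). glue V1 V2 f1 f2) ` ?T \<subseteq> FF (V1 \<union> V2) (A1 \<union> A2)"
      using glue_FF[OF wf1 wf2] by auto
  qed
  then show ?thesis by (rule bij_betw_same_card)
qed


lemma conn_mono: assumes "(x,y) \<in> conn_rel V1 A1" "V1 \<subseteq> V" "A1 \<subseteq> A" shows "(x,y) \<in> conn_rel V A"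
proof -
  have "(x,y) \<in> (adj_rel A1)\<^sup>*" "x \<in> V1" "y \<in> V1" using assms(1) unfolding conn_rel_def by auto
  moreover have "(adj_rel A1)\<^sup>* \<subseteq> (adj_rel A)\<^sup>*" by (rule rtrancl_mono[OF adj_rel_mono[OF assms(3)]])
  ultimately show ?thesis using assms(2) unfolding conn_rel_def by auto
qed

lemma card_pairs:
  assumes f1: "finite V1" and f2: "finite V2"
  shows "card {(f1,f2). f1 \<in> FF V1 A1 \<and> f2 \<in> FF V2 A2 \<and> f1 u = f2 u \<and> f1 v = f2 v} =
    cnt V1 A1 u v True True * cnt V2 A2 u v True True + cnt V1 A1 u v True False * cnt V2 A2 u v True False
  + cnt V1 A1 u v False True * cnt V2 A2 u v False True + cnt V1 A1 u v False False * cnt V2 A2 u v False False"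
proof -
  let ?S1 = "\<lambda>p r. {f \<in> FF V1 A1. f u = p \<and> f v = r}"
  let ?S2 = "\<lambda>p r. {f \<in> FF V2 A2. f u = p \<and> f v = r}"
  have fF1: "finite (FF V1 A1)" using finite_FF[OF f1, of A1] .
  have fF2: "finite (FF V2 A2)" using finite_FF[OF f2, of A2] .
  have fin1: "\<And>P. finite {f \<in> FF V1 A1. P f}" by (rule finite_subset[OF _ fF1]) auto
  have fin2: "\<And>P. finite {f \<in> FF V2 A2. P f}" by (rule finite_subset[OF _ fF2]) auto
  have finP: "\<And>p r. finite (?S1 p r \<times> ?S2 p r)" by (rule finite_cartesian_product[OF fin1 fin2])
  have e: "{(f1,f2). f1 \<in> FF V1 A1 \<and> f2 \<in> FF V2 A2 \<and> f1 u = f2 u \<and> f1 v = f2 v} =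
     ((?S1 True True \<times> ?S2 True True) \<union> (?S1 True False \<times> ?S2 True False)) \<union>
     ((?S1 False True \<times> ?S2 False True) \<union> (?S1 False False \<times> ?S2 False False))" by auto
  have c1: "card ((?S1 True True \<times> ?S2 True True) \<union> (?S1 True False \<times> ?S2 True False)) =
     card (?S1 True True \<times> ?S2 True True) + card (?S1 True False \<times> ?S2 True False)"
    by (rule card_Un_disjoint[OF finP finP]) auto
  have c2: "card ((?S1 False True \<times> ?S2 False True) \<union> (?S1 False False \<times> ?S2 False False)) =
     card (?S1 False True \<times> ?S2 False True) + card (?S1 False False \<times> ?S2 False False)"
    by (rule card_Un_disjoint[OF finP finP]) auto
  have c3: "card (((?S1 True True \<times> ?S2 True True) \<union> (?S1 True False \<times> ?S2 True False)) \<union>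
     ((?S1 False True \<times> ?S2 False True) \<union> (?S1 False False \<times> ?S2 False False))) =
     card ((?S1 True True \<times> ?S2 True True) \<union> (?S1 True False \<times> ?S2 True False)) +
     card ((?S1 False True \<times> ?S2 False True) \<union> (?S1 False False \<times> ?S2 False False))"
    by (rule card_Un_disjoint[OF finite_UnI[OF finP finP] finite_UnI[OF finP finP]]) auto
  show ?thesis unfolding cnt_def by (subst e) (simp only: c1 c2 c3 card_cartesian_product add.assoc)
qed

lemma pow2_inj: "(2::nat) ^ a = 2 ^ b \<Longrightarrow> a = b" by simp

lemma wf_union: "wfE V1 A1 \<Longrightarrow> wfE V2 A2 \<Longrightarrow> wfE (V1 \<union> V2) (A1 \<union> A2)"
  using wfE_mono[of V1 A1 "V1 \<union> V2"] wfE_mono[of V2 A2 "V1 \<union> V2"] by (simp add: wfE_Un)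

lemma series_k:
  assumes f1: "finite V1" and f2: "finite V2" and wf1: "wfE V1 A1" and wf2: "wfE V2 A2"
    and I: "V1 \<inter> V2 = {m}"
  shows "num_comps (V1 \<union> V2) (A1 \<union> A2) + 1 = num_comps V1 A1 + num_comps V2 A2"
proof -
  have m1: "m \<in> V1" and m2: "m \<in> V2" using I by auto
  have "card (FF (V1 \<union> V2) (A1 \<union> A2)) =
     card {(f1,f2). f1 \<in> FF V1 A1 \<and> f2 \<in> FF V2 A2 \<and> f1 m = f2 m \<and> f1 m = f2 m}"
    unfolding card_FF_glue[OF wf1 wf2] I by simp
  also have "\<dots> = cnt V1 A1 m m True True * cnt V2 A2 m m True True + cnt V1 A1 m m True False * cnt V2 A2 m m True False
  + cnt V1 A1 m m False True * cnt V2 A2 m m False True + cnt V1 A1 m m False False * cnt V2 A2 m m False False"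
    by (rule card_pairs[OF f1 f2])
  finally have N: "card (FF (V1 \<union> V2) (A1 \<union> A2)) = \<dots>" .
  have mm1: "(m,m) \<in> conn_rel V1 A1" and mm2: "(m,m) \<in> conn_rel V2 A2" using m1 m2 unfolding conn_rel_def by auto
  have z1: "cnt V1 A1 m m True False = 0" "cnt V1 A1 m m False True = 0"
    using cnt_conn_zero[OF wf1 mm1, of True] cnt_conn_zero[OF wf1 mm1, of False] by auto
  have z2: "cnt V2 A2 m m True False = 0" "cnt V2 A2 m m False True = 0"
    using cnt_conn_zero[OF wf2 mm2, of True] cnt_conn_zero[OF wf2 mm2, of False] by auto
  have g1: "cnt V1 A1 m m False False = cnt V1 A1 m m True True"
    using cnt_flip_global[OF wf1 m1 m1, of True True] by simp
  have g2: "cnt V2 A2 m m False False = cnt V2 A2 m m True True"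
    using cnt_flip_global[OF wf2 m2 m2, of True True] by simp
  have N1: "card (FF V1 A1) = 2 * cnt V1 A1 m m True True"
    using card_FF_split[OF f1, of A1 m m] z1 g1 by simp
  have N2: "card (FF V2 A2) = 2 * cnt V2 A2 m m True True"
    using card_FF_split[OF f2, of A2 m m] z2 g2 by simp
  have "2 * card (FF (V1 \<union> V2) (A1 \<union> A2)) = card (FF V1 A1) * card (FF V2 A2)"
    using N N1 N2 z1 z2 g1 g2 by simp
  then have "(2::nat) * 2 ^ num_comps (V1 \<union> V2) (A1 \<union> A2) = 2 ^ num_comps V1 A1 * 2 ^ num_comps V2 A2"
    using card_FF[OF _ wf_union[OF wf1 wf2]] card_FF[OF f1 wf1] card_FF[OF f2 wf2] f1 f2 by simp
  then have "(2::nat) ^ (num_comps (V1 \<union> V2) (A1 \<union> A2) + 1) = 2 ^ (num_comps V1 A1 + num_comps V2 A2)"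
    by (simp add: power_add)
  then show ?thesis by (rule pow2_inj)
qed

lemma parallel_k:
  assumes f1: "finite V1" and f2: "finite V2" and wf1: "wfE V1 A1" and wf2: "wfE V2 A2"
    and I: "V1 \<inter> V2 = {s,t}" and st: "s \<noteq> t"
  shows "num_comps (V1 \<union> V2) (A1 \<union> A2) + 2 = num_comps V1 A1 + num_comps V2 A2
     + (if (s,t) \<in> conn_rel V1 A1 \<and> (s,t) \<in> conn_rel V2 A2 then 1 else 0)"
proof -
  have s1: "s \<in> V1" and s2: "s \<in> V2" and t1: "t \<in> V1" and t2: "t \<in> V2" using I by auto
  have "card (FF (V1 \<union> V2) (A1 \<union> A2)) =
     card {(f1,f2). f1 \<in> FF V1 A1 \<and> f2 \<in> FF V2 A2 \<and> f1 s = f2 s \<and> f1 t = f2 t}"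
    unfolding card_FF_glue[OF wf1 wf2] I by simp
  also have "\<dots> = cnt V1 A1 s t True True * cnt V2 A2 s t True True + cnt V1 A1 s t True False * cnt V2 A2 s t True False
  + cnt V1 A1 s t False True * cnt V2 A2 s t False True + cnt V1 A1 s t False False * cnt V2 A2 s t False False"
    by (rule card_pairs[OF f1 f2])
  finally have N: "card (FF (V1 \<union> V2) (A1 \<union> A2)) = \<dots>" .
  define a1 where "a1 = cnt V1 A1 s t True True"
  define b1 where "b1 = cnt V1 A1 s t True False"
  define a2 where "a2 = cnt V2 A2 s t True True"
  define b2 where "b2 = cnt V2 A2 s t True False"
  have g1: "cnt V1 A1 s t False False = a1" "cnt V1 A1 s t False True = b1"
    using cnt_flip_global[OF wf1 s1 t1, of True True] cnt_flip_global[OF wf1 s1 t1, of True False]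
    unfolding a1_def b1_def by simp_all
  have g2: "cnt V2 A2 s t False False = a2" "cnt V2 A2 s t False True = b2"
    using cnt_flip_global[OF wf2 s2 t2, of True True] cnt_flip_global[OF wf2 s2 t2, of True False]
    unfolding a2_def b2_def by simp_all
  have N': "card (FF (V1 \<union> V2) (A1 \<union> A2)) = 2 * a1 * a2 + 2 * b1 * b2"
    using N g1 g2 unfolding a1_def b1_def a2_def b2_def by simp
  have N1: "card (FF V1 A1) = 2 * a1 + 2 * b1"
    using card_FF_split[OF f1, of A1 s t] g1 unfolding a1_def b1_def by simp
  have N2: "card (FF V2 A2) = 2 * a2 + 2 * b2"
    using card_FF_split[OF f2, of A2 s t] g2 unfolding a2_def b2_def by simp
  have c1: "(s,t) \<in> conn_rel V1 A1 \<Longrightarrow> b1 = 0" using cnt_conn_zero[OF wf1, of s t True] unfolding b1_def by simp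
  have c2: "(s,t) \<in> conn_rel V2 A2 \<Longrightarrow> b2 = 0" using cnt_conn_zero[OF wf2, of s t True] unfolding b2_def by simp
  have n1: "(s,t) \<notin> conn_rel V1 A1 \<Longrightarrow> b1 = a1" using cnt_flip_comp[OF wf1 s1 t1, of True True] unfolding a1_def b1_def by simp
  have n2: "(s,t) \<notin> conn_rel V2 A2 \<Longrightarrow> b2 = a2" using cnt_flip_comp[OF wf2 s2 t2, of True True] unfolding a2_def b2_def by simp
  define x where "x = (if (s,t) \<in> conn_rel V1 A1 \<and> (s,t) \<in> conn_rel V2 A2 then 1 else (0::nat))"
  have key: "4 * card (FF (V1 \<union> V2) (A1 \<union> A2)) = card (FF V1 A1) * card (FF V2 A2) * 2 ^ x"
    unfolding N' N1 N2 x_def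
    by (cases "(s,t) \<in> conn_rel V1 A1"; cases "(s,t) \<in> conn_rel V2 A2") (simp_all add: c1 c2 n1 n2 algebra_simps)
  then have "(2::nat) ^ 2 * 2 ^ num_comps (V1 \<union> V2) (A1 \<union> A2) = 2 ^ num_comps V1 A1 * 2 ^ num_comps V2 A2 * 2 ^ x"
    using card_FF[OF _ wf_union[OF wf1 wf2]] card_FF[OF f1 wf1] card_FF[OF f2 wf2] f1 f2 by simp
  then have "(2::nat) ^ (num_comps (V1 \<union> V2) (A1 \<union> A2) + 2) = 2 ^ (num_comps V1 A1 + num_comps V2 A2 + x)"
    by (simp add: power_add mult.commute)
  then have "num_comps (V1 \<union> V2) (A1 \<union> A2) + 2 = num_comps V1 A1 + num_comps V2 A2 + x" by (rule pow2_inj)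
  then show ?thesis unfolding x_def .
qed

lemma series_conn:
  assumes wf1: "wfE V1 A1" and wf2: "wfE V2 A2" and I: "V1 \<inter> V2 = {m}"
    and s: "s \<in> V1" and t: "t \<in> V2"
  shows "(s,t) \<in> conn_rel (V1 \<union> V2) (A1 \<union> A2) \<longleftrightarrow> (s,m) \<in> conn_rel V1 A1 \<and> (m,t) \<in> conn_rel V2 A2"
proof
  assume h: "(s,m) \<in> conn_rel V1 A1 \<and> (m,t) \<in> conn_rel V2 A2"
  have "(s,m) \<in> conn_rel (V1 \<union> V2) (A1 \<union> A2)" by (rule conn_mono) (use h in auto)
  moreover have "(m,t) \<in> conn_rel (V1 \<union> V2) (A1 \<union> A2)" by (rule conn_mono) (use h in auto)
  ultimately show "(s,t) \<in> conn_rel (V1 \<union> V2) (A1 \<union> A2)"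
    using equiv_conn[OF wf_union[OF wf1 wf2]] unfolding equiv_def trans_def by blast
next
  have m1: "m \<in> V1" and m2: "m \<in> V2" using I by auto
  have wf: "wfE (V1 \<union> V2) (A1 \<union> A2)" by (rule wf_union[OF wf1 wf2])
  assume h: "(s,t) \<in> conn_rel (V1 \<union> V2) (A1 \<union> A2)"
  then have hf: "\<forall>f\<in>FF (V1 \<union> V2) (A1 \<union> A2). f s = f t" using conn_iff[OF wf] by simp
  show "(s,m) \<in> conn_rel V1 A1 \<and> (m,t) \<in> conn_rel V2 A2"
  proof (rule ccontr)
    assume "\<not> ?thesis"
    then consider "(s,m) \<notin> conn_rel V1 A1" | "(m,t) \<notin> conn_rel V2 A2" by blast
    then show False
    proof cases
      case 1
      then obtain f1 where f1: "f1 \<in> FF V1 A1" "f1 s \<noteq> f1 m" using conn_iff[OF wf1, of s m] s m1 by auto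
      define f2 where "f2 = (\<lambda>x\<in>V2. f1 m)"
      have f2: "f2 \<in> FF V2 A2" unfolding f2_def FF_def good_def
        using adj_rel_in_V[OF wf2] by auto
      have "glue V1 V2 f1 f2 \<in> FF (V1 \<union> V2) (A1 \<union> A2)"
        by (rule glue_FF[OF wf1 wf2 f1(1) f2]) (use I in \<open>auto simp: f2_def\<close>)
      then have "glue V1 V2 f1 f2 s = glue V1 V2 f1 f2 t" using hf by blast
      moreover have "glue V1 V2 f1 f2 s = f1 s" using s unfolding glue_def by simp
      moreover have "glue V1 V2 f1 f2 t = f1 m"
        using t m1 unfolding glue_def f2_def by (cases "t \<in> V1") (use I in auto)
      ultimately show False using f1 by simp
    next
      case 2
      then obtain f2 where f2: "f2 \<in> FF V2 A2" "f2 m \<noteq> f2 t" using conn_iff[OF wf2, of m t] t m2 by auto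
      define f1 where "f1 = (\<lambda>x\<in>V1. f2 m)"
      have f1: "f1 \<in> FF V1 A1" unfolding f1_def FF_def good_def
        using adj_rel_in_V[OF wf1] by auto
      have "glue V1 V2 f1 f2 \<in> FF (V1 \<union> V2) (A1 \<union> A2)"
        by (rule glue_FF[OF wf1 wf2 f1 f2(1)]) (use I in \<open>auto simp: f1_def\<close>)
      then have "glue V1 V2 f1 f2 s = glue V1 V2 f1 f2 t" using hf by blast
      moreover have "glue V1 V2 f1 f2 s = f2 m" using s unfolding glue_def f1_def by simp
      moreover have "glue V1 V2 f1 f2 t = f2 t"
        using t m2 unfolding glue_def f1_def by (cases "t \<in> V1") (use I in auto)
      ultimately show False using f2 by simp
    qed
  qed
qed

lemma parallel_conn:
  assumes wf1: "wfE V1 A1" and wf2: "wfE V2 A2" and I: "V1 \<inter> V2 = {s,t}"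
  shows "(s,t) \<in> conn_rel (V1 \<union> V2) (A1 \<union> A2) \<longleftrightarrow> (s,t) \<in> conn_rel V1 A1 \<or> (s,t) \<in> conn_rel V2 A2"
proof
  assume h: "(s,t) \<in> conn_rel V1 A1 \<or> (s,t) \<in> conn_rel V2 A2"
  then show "(s,t) \<in> conn_rel (V1 \<union> V2) (A1 \<union> A2)"
  proof
    assume "(s,t) \<in> conn_rel V1 A1" then show ?thesis by (rule conn_mono) auto
  next
    assume "(s,t) \<in> conn_rel V2 A2" then show ?thesis by (rule conn_mono) auto
  qed
next
  have s1: "s \<in> V1" and s2: "s \<in> V2" and t1: "t \<in> V1" and t2: "t \<in> V2" using I by auto
  have wf: "wfE (V1 \<union> V2) (A1 \<union> A2)" by (rule wf_union[OF wf1 wf2])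
  assume h: "(s,t) \<in> conn_rel (V1 \<union> V2) (A1 \<union> A2)"
  then have hf: "\<forall>f\<in>FF (V1 \<union> V2) (A1 \<union> A2). f s = f t" using conn_iff[OF wf] by simp
  show "(s,t) \<in> conn_rel V1 A1 \<or> (s,t) \<in> conn_rel V2 A2"
  proof (rule ccontr)
    assume "\<not> ?thesis"
    then have n1: "(s,t) \<notin> conn_rel V1 A1" and n2: "(s,t) \<notin> conn_rel V2 A2" by auto
    obtain f1 where f1: "f1 \<in> FF V1 A1" "f1 s \<noteq> f1 t" using conn_iff[OF wf1, of s t] n1 s1 t1 by auto
    obtain g2 where g2: "g2 \<in> FF V2 A2" "g2 s \<noteq> g2 t" using conn_iff[OF wf2, of s t] n2 s2 t2 by auto
    obtain f2 where f2: "f2 \<in> FF V2 A2" "f2 s = f1 s" "f2 t = f1 t"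
    proof (cases "g2 s = f1 s")
      case True then show ?thesis using that[of g2] g2 f1 by auto
    next
      case False
      have "negf V2 g2 \<in> FF V2 A2" by (rule negf_FF[OF wf2 g2(1)])
      moreover have "negf V2 g2 s = f1 s" "negf V2 g2 t = f1 t" using False g2 f1 s2 t2 unfolding negf_def by auto
      ultimately show ?thesis using that by blast
    qed
    have ag: "\<And>x. x \<in> V1 \<Longrightarrow> x \<in> V2 \<Longrightarrow> f1 x = f2 x" using I f2 by auto
    have "glue V1 V2 f1 f2 \<in> FF (V1 \<union> V2) (A1 \<union> A2)" by (rule glue_FF[OF wf1 wf2 f1(1) f2(1) ag])
    then have "glue V1 V2 f1 f2 s = glue V1 V2 f1 f2 t" using hf by blast
    then show False using f1 s1 t1 unfolding glue_def by simp
  qed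
qed


definition CS :: "'a set \<Rightarrow> ('a,'b) edge set \<Rightarrow> 'a \<Rightarrow> 'a \<Rightarrow> complex \<Rightarrow> complex" where
  "CS V E s t q = (\<Sum>A\<in>Pow E. if (s,t) \<in> conn_rel V A then (-1) ^ card A * q ^ num_comps V A else 0)"

definition CD :: "'a set \<Rightarrow> ('a,'b) edge set \<Rightarrow> 'a \<Rightarrow> 'a \<Rightarrow> complex \<Rightarrow> complex" where
  "CD V E s t q = (\<Sum>A\<in>Pow E. if (s,t) \<in> conn_rel V A then 0 else (-1) ^ card A * q ^ num_comps V A)"

lemma CP_split: "chrom_poly V E q = CS V E s t q + CD V E s t q"
  unfolding chrom_poly_def CS_def CD_def sum.distrib[symmetric] by (rule sum.cong) auto

lemma sum_Pow_Un:
  assumes f1: "finite E1" and f2: "finite E2" and d: "E1 \<inter> E2 = {}"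
  shows "(\<Sum>A\<in>Pow (E1 \<union> E2). h A) = (\<Sum>A1\<in>Pow E1. \<Sum>A2\<in>Pow E2. h (A1 \<union> A2))"
proof -
  have inj: "inj_on (\<lambda>(A1,A2). A1 \<union> A2) (Pow E1 \<times> Pow E2)"
  proof (rule inj_onI, clarify)
    fix A1 A2 B1 B2 assume h: "A1 \<subseteq> E1" "A2 \<subseteq> E2" "B1 \<subseteq> E1" "B2 \<subseteq> E2" "A1 \<union> A2 = B1 \<union> B2"
    have "A1 = (A1 \<union> A2) \<inter> E1" using h(1,2) d by auto
    also have "\<dots> = (B1 \<union> B2) \<inter> E1" using h(5) by simp
    also have "\<dots> = B1" using h(3,4) d by auto
    finally have 1: "A1 = B1" .
    have "A2 = (A1 \<union> A2) \<inter> E2" using h(1,2) d by auto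
    also have "\<dots> = (B1 \<union> B2) \<inter> E2" using h(5) by simp
    also have "\<dots> = B2" using h(3,4) d by auto
    finally show "A1 = B1 \<and> A2 = B2" using 1 by simp
  qed
  have img: "Pow (E1 \<union> E2) = (\<lambda>(A1,A2). A1 \<union> A2) ` (Pow E1 \<times> Pow E2)"
  proof
    show "Pow (E1 \<union> E2) \<subseteq> (\<lambda>(A1,A2). A1 \<union> A2) ` (Pow E1 \<times> Pow E2)"
    proof
      fix A assume "A \<in> Pow (E1 \<union> E2)"
      then have "A = (\<lambda>(A1,A2). A1 \<union> A2) (A \<inter> E1, A \<inter> E2)" "(A \<inter> E1, A \<inter> E2) \<in> Pow E1 \<times> Pow E2" by auto
      then show "A \<in> (\<lambda>(A1,A2). A1 \<union> A2) ` (Pow E1 \<times> Pow E2)" by (rule image_eqI)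
    qed
  qed auto
  have "(\<Sum>A\<in>Pow (E1 \<union> E2). h A) = (\<Sum>p\<in>Pow E1 \<times> Pow E2. h ((\<lambda>(A1,A2). A1 \<union> A2) p))"
    unfolding img by (rule sum.reindex[OF inj, unfolded comp_def])
  also have "\<dots> = (\<Sum>A1\<in>Pow E1. \<Sum>A2\<in>Pow E2. h (A1 \<union> A2))"
    by (subst sum.cartesian_product) (simp add: split_beta)
  finally show ?thesis .
qed

lemma card_Un_sub:
  assumes "finite E1" "finite E2" "E1 \<inter> E2 = {}" "A1 \<subseteq> E1" "A2 \<subseteq> E2"
  shows "card (A1 \<union> A2) = card A1 + card A2"
  by (rule card_Un_disjoint) (use assms in \<open>auto intro: finite_subset\<close>)

lemma series_poly:
  assumes fV1: "finite V1" and fV2: "finite V2" and fE1: "finite E1" and fE2: "finite E2"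
    and wf1: "wfE V1 E1" and wf2: "wfE V2 E2" and I: "V1 \<inter> V2 = {m}" and d: "E1 \<inter> E2 = {}"
    and s: "s \<in> V1" and t: "t \<in> V2"
  shows "q * chrom_poly (V1 \<union> V2) (E1 \<union> E2) q = chrom_poly V1 E1 q * chrom_poly V2 E2 q"
    and "q * CS (V1 \<union> V2) (E1 \<union> E2) s t q = CS V1 E1 s m q * CS V2 E2 m t q"
proof -
  have key: "q * q ^ num_comps (V1 \<union> V2) (A1 \<union> A2) = q ^ num_comps V1 A1 * q ^ num_comps V2 A2"
    and cd: "card (A1 \<union> A2) = card A1 + card A2"
    and cn: "(s,t) \<in> conn_rel (V1 \<union> V2) (A1 \<union> A2) \<longleftrightarrow> (s,m) \<in> conn_rel V1 A1 \<and> (m,t) \<in> conn_rel V2 A2"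
    if "A1 \<subseteq> E1" "A2 \<subseteq> E2" for A1 A2
  proof -
    have w1: "wfE V1 A1" by (rule wfE_subset[OF wf1 that(1)])
    have w2: "wfE V2 A2" by (rule wfE_subset[OF wf2 that(2)])
    have "num_comps (V1 \<union> V2) (A1 \<union> A2) + 1 = num_comps V1 A1 + num_comps V2 A2"
      by (rule series_k[OF fV1 fV2 w1 w2 I])
    then have "q ^ (num_comps (V1 \<union> V2) (A1 \<union> A2) + 1) = q ^ (num_comps V1 A1 + num_comps V2 A2)" by simp
    then show "q * q ^ num_comps (V1 \<union> V2) (A1 \<union> A2) = q ^ num_comps V1 A1 * q ^ num_comps V2 A2"
      by (simp add: power_add mult.commute power2_eq_square)
    show "card (A1 \<union> A2) = card A1 + card A2" by (rule card_Un_sub[OF fE1 fE2 d that])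
    show "(s,t) \<in> conn_rel (V1 \<union> V2) (A1 \<union> A2) \<longleftrightarrow> (s,m) \<in> conn_rel V1 A1 \<and> (m,t) \<in> conn_rel V2 A2"
      by (rule series_conn[OF w1 w2 I s t])
  qed
  have "q * chrom_poly (V1 \<union> V2) (E1 \<union> E2) q =
      (\<Sum>A1\<in>Pow E1. \<Sum>A2\<in>Pow E2. q * ((-1) ^ card (A1 \<union> A2) * q ^ num_comps (V1 \<union> V2) (A1 \<union> A2)))"
    unfolding chrom_poly_def sum_Pow_Un[OF fE1 fE2 d] by (simp add: sum_distrib_left)
  also have "\<dots> = (\<Sum>A1\<in>Pow E1. \<Sum>A2\<in>Pow E2. ((-1) ^ card A1 * q ^ num_comps V1 A1) * ((-1) ^ card A2 * q ^ num_comps V2 A2))"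
  proof (intro sum.cong refl)
    fix A1 A2 assume "A1 \<in> Pow E1" "A2 \<in> Pow E2"
    then have "A1 \<subseteq> E1" "A2 \<subseteq> E2" by auto
    from key[OF this] cd[OF this] show "q * ((-1) ^ card (A1 \<union> A2) * q ^ num_comps (V1 \<union> V2) (A1 \<union> A2)) =
        ((-1) ^ card A1 * q ^ num_comps V1 A1) * ((-1) ^ card A2 * q ^ num_comps V2 A2)"
      by (simp add: power_add algebra_simps)
  qed
  also have "\<dots> = chrom_poly V1 E1 q * chrom_poly V2 E2 q"
    unfolding chrom_poly_def by (simp add: sum_product)
  finally show "q * chrom_poly (V1 \<union> V2) (E1 \<union> E2) q = chrom_poly V1 E1 q * chrom_poly V2 E2 q" .
  have "q * CS (V1 \<union> V2) (E1 \<union> E2) s t q =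
      (\<Sum>A1\<in>Pow E1. \<Sum>A2\<in>Pow E2. q * (if (s,t) \<in> conn_rel (V1 \<union> V2) (A1 \<union> A2) then (-1) ^ card (A1 \<union> A2) * q ^ num_comps (V1 \<union> V2) (A1 \<union> A2) else 0))"
    unfolding CS_def sum_Pow_Un[OF fE1 fE2 d] by (simp add: sum_distrib_left)
  also have "\<dots> = (\<Sum>A1\<in>Pow E1. \<Sum>A2\<in>Pow E2. (if (s,m) \<in> conn_rel V1 A1 then (-1) ^ card A1 * q ^ num_comps V1 A1 else 0) * (if (m,t) \<in> conn_rel V2 A2 then (-1) ^ card A2 * q ^ num_comps V2 A2 else 0))"
  proof (intro sum.cong refl)
    fix A1 A2 assume "A1 \<in> Pow E1" "A2 \<in> Pow E2"
    then have "A1 \<subseteq> E1" "A2 \<subseteq> E2" by auto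
    from key[OF this] cd[OF this] cn[OF this] show "q * (if (s,t) \<in> conn_rel (V1 \<union> V2) (A1 \<union> A2) then (-1) ^ card (A1 \<union> A2) * q ^ num_comps (V1 \<union> V2) (A1 \<union> A2) else 0) =
        (if (s,m) \<in> conn_rel V1 A1 then (-1) ^ card A1 * q ^ num_comps V1 A1 else 0) * (if (m,t) \<in> conn_rel V2 A2 then (-1) ^ card A2 * q ^ num_comps V2 A2 else 0)"
      by (simp add: power_add algebra_simps)
  qed
  also have "\<dots> = CS V1 E1 s m q * CS V2 E2 m t q"
    unfolding CS_def by (simp add: sum_product)
  finally show "q * CS (V1 \<union> V2) (E1 \<union> E2) s t q = CS V1 E1 s m q * CS V2 E2 m t q" .
qed

lemma parallel_poly:
  assumes fV1: "finite V1" and fV2: "finite V2" and fE1: "finite E1" and fE2: "finite E2"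
    and wf1: "wfE V1 E1" and wf2: "wfE V2 E2" and I: "V1 \<inter> V2 = {s,t}" and d: "E1 \<inter> E2 = {}"
    and st: "s \<noteq> t"
  shows "q^2 * chrom_poly (V1 \<union> V2) (E1 \<union> E2) q = chrom_poly V1 E1 q * chrom_poly V2 E2 q + (q - 1) * CS V1 E1 s t q * CS V2 E2 s t q"
    and "q^2 * CD (V1 \<union> V2) (E1 \<union> E2) s t q = CD V1 E1 s t q * CD V2 E2 s t q"
proof -
  let ?k = "\<lambda>V A. num_comps V A"
  let ?c1 = "\<lambda>A1. (s,t) \<in> conn_rel V1 A1"
  let ?c2 = "\<lambda>A2. (s,t) \<in> conn_rel V2 A2"
  have key: "q^2 * q ^ ?k (V1 \<union> V2) (A1 \<union> A2) = q ^ ?k V1 A1 * q ^ ?k V2 A2 * (if ?c1 A1 \<and> ?c2 A2 then q else 1)"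
    and cd: "card (A1 \<union> A2) = card A1 + card A2"
    and cn: "(s,t) \<in> conn_rel (V1 \<union> V2) (A1 \<union> A2) \<longleftrightarrow> ?c1 A1 \<or> ?c2 A2"
    if "A1 \<subseteq> E1" "A2 \<subseteq> E2" for A1 A2
  proof -
    have w1: "wfE V1 A1" by (rule wfE_subset[OF wf1 that(1)])
    have w2: "wfE V2 A2" by (rule wfE_subset[OF wf2 that(2)])
    have e: "?k (V1 \<union> V2) (A1 \<union> A2) + 2 = ?k V1 A1 + ?k V2 A2 + (if ?c1 A1 \<and> ?c2 A2 then 1 else 0)"
      by (rule parallel_k[OF fV1 fV2 w1 w2 I st])
    show "q^2 * q ^ ?k (V1 \<union> V2) (A1 \<union> A2) = q ^ ?k V1 A1 * q ^ ?k V2 A2 * (if ?c1 A1 \<and> ?c2 A2 then q else 1)"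
    proof (cases "?c1 A1 \<and> ?c2 A2")
      case True
      with e have "?k (V1 \<union> V2) (A1 \<union> A2) + 2 = ?k V1 A1 + ?k V2 A2 + 1" by simp
      then have h: "q ^ (?k (V1 \<union> V2) (A1 \<union> A2) + 2) = q ^ (?k V1 A1 + ?k V2 A2 + 1)" by simp
      have "q^2 * q ^ ?k (V1 \<union> V2) (A1 \<union> A2) = q ^ (?k (V1 \<union> V2) (A1 \<union> A2) + 2)" by (simp add: power_add mult.commute power2_eq_square)
      also have "\<dots> = q ^ (?k V1 A1 + ?k V2 A2 + 1)" by (rule h)
      also have "\<dots> = q ^ ?k V1 A1 * q ^ ?k V2 A2 * q" by (simp add: power_add)
      finally show ?thesis by (simp only: if_P[OF True])
    next
      case False
      with e have "?k (V1 \<union> V2) (A1 \<union> A2) + 2 = ?k V1 A1 + ?k V2 A2" by simp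
      then have h: "q ^ (?k (V1 \<union> V2) (A1 \<union> A2) + 2) = q ^ (?k V1 A1 + ?k V2 A2)" by simp
      have "q^2 * q ^ ?k (V1 \<union> V2) (A1 \<union> A2) = q ^ (?k (V1 \<union> V2) (A1 \<union> A2) + 2)" by (simp add: power_add mult.commute power2_eq_square)
      also have "\<dots> = q ^ (?k V1 A1 + ?k V2 A2)" by (rule h)
      also have "\<dots> = q ^ ?k V1 A1 * q ^ ?k V2 A2" by (simp add: power_add)
      finally show ?thesis by (simp only: if_not_P[OF False] mult_1_right)
    qed
    show "card (A1 \<union> A2) = card A1 + card A2" by (rule card_Un_sub[OF fE1 fE2 d that])
    show "(s,t) \<in> conn_rel (V1 \<union> V2) (A1 \<union> A2) \<longleftrightarrow> ?c1 A1 \<or> ?c2 A2"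
      by (rule parallel_conn[OF w1 w2 I])
  qed
  have "q^2 * chrom_poly (V1 \<union> V2) (E1 \<union> E2) q =
      (\<Sum>A1\<in>Pow E1. \<Sum>A2\<in>Pow E2. q^2 * ((-1) ^ card (A1 \<union> A2) * q ^ ?k (V1 \<union> V2) (A1 \<union> A2)))"
    unfolding chrom_poly_def sum_Pow_Un[OF fE1 fE2 d] by (simp add: sum_distrib_left)
  also have "\<dots> = (\<Sum>A1\<in>Pow E1. \<Sum>A2\<in>Pow E2. ((-1) ^ card A1 * q ^ ?k V1 A1) * ((-1) ^ card A2 * q ^ ?k V2 A2)
      + (q - 1) * ((if ?c1 A1 then (-1) ^ card A1 * q ^ ?k V1 A1 else 0) * (if ?c2 A2 then (-1) ^ card A2 * q ^ ?k V2 A2 else 0)))"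
  proof (intro sum.cong refl)
    fix A1 A2 assume "A1 \<in> Pow E1" "A2 \<in> Pow E2"
    then have "A1 \<subseteq> E1" "A2 \<subseteq> E2" by auto
    note K = key[OF this] cd[OF this]
    show "q^2 * ((-1) ^ card (A1 \<union> A2) * q ^ ?k (V1 \<union> V2) (A1 \<union> A2)) =
        ((-1) ^ card A1 * q ^ ?k V1 A1) * ((-1) ^ card A2 * q ^ ?k V2 A2)
      + (q - 1) * ((if ?c1 A1 then (-1) ^ card A1 * q ^ ?k V1 A1 else 0) * (if ?c2 A2 then (-1) ^ card A2 * q ^ ?k V2 A2 else 0))"
      apply (cases "?c1 A1"; cases "?c2 A2")
      using K by (simp_all add: power_add algebra_simps)
  qed
  also have "\<dots> = (\<Sum>A1\<in>Pow E1. \<Sum>A2\<in>Pow E2. ((-1) ^ card A1 * q ^ ?k V1 A1) * ((-1) ^ card A2 * q ^ ?k V2 A2))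
      + (q - 1) * (\<Sum>A1\<in>Pow E1. \<Sum>A2\<in>Pow E2. (if ?c1 A1 then (-1) ^ card A1 * q ^ ?k V1 A1 else 0) * (if ?c2 A2 then (-1) ^ card A2 * q ^ ?k V2 A2 else 0))"
    by (simp only: sum.distrib sum_distrib_left)
  also have "\<dots> = chrom_poly V1 E1 q * chrom_poly V2 E2 q + (q - 1) * (CS V1 E1 s t q * CS V2 E2 s t q)"
    unfolding chrom_poly_def CS_def sum_product ..
  also have "\<dots> = chrom_poly V1 E1 q * chrom_poly V2 E2 q + (q - 1) * CS V1 E1 s t q * CS V2 E2 s t q"
    by (simp only: mult.assoc)
  finally show "q^2 * chrom_poly (V1 \<union> V2) (E1 \<union> E2) q = chrom_poly V1 E1 q * chrom_poly V2 E2 q + (q - 1) * CS V1 E1 s t q * CS V2 E2 s t q" .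
  have "q^2 * CD (V1 \<union> V2) (E1 \<union> E2) s t q =
      (\<Sum>A1\<in>Pow E1. \<Sum>A2\<in>Pow E2. q^2 * (if (s,t) \<in> conn_rel (V1 \<union> V2) (A1 \<union> A2) then 0 else (-1) ^ card (A1 \<union> A2) * q ^ ?k (V1 \<union> V2) (A1 \<union> A2)))"
    unfolding CD_def sum_Pow_Un[OF fE1 fE2 d] by (simp add: sum_distrib_left)
  also have "\<dots> = (\<Sum>A1\<in>Pow E1. \<Sum>A2\<in>Pow E2. (if ?c1 A1 then 0 else (-1) ^ card A1 * q ^ ?k V1 A1) * (if ?c2 A2 then 0 else (-1) ^ card A2 * q ^ ?k V2 A2))"
  proof (intro sum.cong refl)
    fix A1 A2 assume "A1 \<in> Pow E1" "A2 \<in> Pow E2"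
    then have "A1 \<subseteq> E1" "A2 \<subseteq> E2" by auto
    note K = key[OF this] cd[OF this] cn[OF this]
    show "q^2 * (if (s,t) \<in> conn_rel (V1 \<union> V2) (A1 \<union> A2) then 0 else (-1) ^ card (A1 \<union> A2) * q ^ ?k (V1 \<union> V2) (A1 \<union> A2)) =
        (if ?c1 A1 then 0 else (-1) ^ card A1 * q ^ ?k V1 A1) * (if ?c2 A2 then 0 else (-1) ^ card A2 * q ^ ?k V2 A2)"
      apply (cases "?c1 A1"; cases "?c2 A2")
      using K by (simp_all add: power_add algebra_simps)
  qed
  also have "\<dots> = CD V1 E1 s t q * CD V2 E2 s t q"
    unfolding CD_def by (simp add: sum_product)
  finally show "q^2 * CD (V1 \<union> V2) (E1 \<union> E2) s t q = CD V1 E1 s t q * CD V2 E2 s t q" .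
qed


lemma adj_rel_empty[simp]: "adj_rel {} = {}"
  unfolding adj_rel_def by simp

lemma adj_rel_insert: "adj_rel (insert (l,{u,v}) A) = insert (u,v) (insert (v,u) (adj_rel A))"
  unfolding adj_rel_def by (auto simp: doubleton_eq_iff)

lemma label_conn:
  assumes c1: "\<forall>(x,y)\<in>adj_rel A. c x = c y" and c2: "\<forall>x\<in>V. (x, c x) \<in> (adj_rel A)\<^sup>*"
  shows "conn_rel V A = {(x,y). x \<in> V \<and> y \<in> V \<and> c x = c y}"
proof -
  have 1: "c x = c y" if "(x,y) \<in> (adj_rel A)\<^sup>*" for x y
    using that by (induction rule: rtrancl_induct) (use c1 in auto)
  have 2: "(x,y) \<in> (adj_rel A)\<^sup>*" if "x \<in> V" "y \<in> V" "c x = c y" for x y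
  proof -
    have "(x, c x) \<in> (adj_rel A)\<^sup>*" using c2 that(1) by auto
    moreover have "(c y, y) \<in> (adj_rel A)\<^sup>*" by (rule rtrancl_adj_sym) (use c2 that(2) in auto)
    ultimately show ?thesis using that(3) by simp
  qed
  show ?thesis unfolding conn_rel_def using 1 2 by auto
qed

lemma label_numc:
  assumes R: "conn_rel V A = {(x,y). x \<in> V \<and> y \<in> V \<and> c x = c y}"
  shows "num_comps V A = card (c ` V)"
proof -
  have q1: "conn_rel V A `` {x} = {y \<in> V. c y = c x}" if "x \<in> V" for x using that unfolding R by auto
  have "V // conn_rel V A = (\<lambda>x. conn_rel V A `` {x}) ` V" unfolding quotient_def by auto
  also have "\<dots> = (\<lambda>x. {y \<in> V. c y = c x}) ` V" by (rule image_cong[OF refl q1])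
  also have "\<dots> = (\<lambda>z. {y \<in> V. c y = z}) ` (c ` V)" by (simp add: image_image)
  finally have "V // conn_rel V A = (\<lambda>z. {y \<in> V. c y = z}) ` (c ` V)" .
  moreover have "inj_on (\<lambda>z. {y \<in> V. c y = z}) (c ` V)"
    by (rule inj_onI) auto
  ultimately show ?thesis unfolding num_comps_def by (simp add: card_image)
qed

lemma label_all:
  assumes c1: "\<forall>(x,y)\<in>adj_rel A. c x = c y" and c2: "\<forall>x\<in>V. (x, c x) \<in> (adj_rel A)\<^sup>*"
  shows "num_comps V A = card (c ` V)" "\<And>x y. x \<in> V \<Longrightarrow> y \<in> V \<Longrightarrow> (x,y) \<in> conn_rel V A \<longleftrightarrow> c x = c y"
  using label_numc[OF label_conn[OF c1 c2]] label_conn[OF c1 c2] by auto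

lemma sum_Pow_insert:
  assumes "finite A" "e \<notin> A"
  shows "(\<Sum>X\<in>Pow (insert e A). h X) = (\<Sum>X\<in>Pow A. h X) + (\<Sum>X\<in>Pow A. h (insert e X))"
proof -
  have inj: "inj_on (insert e) (Pow A)" by (rule inj_onI) (use assms(2) in \<open>auto simp: insert_ident\<close>)
  have d: "Pow A \<inter> insert e ` Pow A = {}" using assms(2) by auto
  have "(\<Sum>X\<in>Pow (insert e A). h X) = (\<Sum>X\<in>Pow A \<union> insert e ` Pow A. h X)" by (simp add: Pow_insert)
  also have "\<dots> = (\<Sum>X\<in>Pow A. h X) + (\<Sum>X\<in>insert e ` Pow A. h X)"
    by (rule sum.union_disjoint) (use assms d in auto)
  also have "(\<Sum>X\<in>insert e ` Pow A. h X) = (\<Sum>X\<in>Pow A. h (insert e X))"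
    by (rule sum.reindex_cong[OF inj]) auto
  finally show ?thesis .
qed

lemma K2_vals:
  assumes st: "s \<noteq> t"
  shows "chrom_poly {s,t} {(l,{s,t})} q = q^2 - q" "CS {s,t} {(l,{s,t})} s t q = - q"
proof -
  have n0: "num_comps {s,t} ({}::('a,'b) edge set) = 2" and c0: "(s,t) \<notin> conn_rel {s,t} ({}::('a,'b) edge set)"
  proof -
    have h1: "\<forall>(x,y)\<in>adj_rel ({}::('a,'b) edge set). id x = id y" by simp
    have h2: "\<forall>x\<in>{s,t}. (x, id x) \<in> (adj_rel ({}::('a,'b) edge set))\<^sup>*" by simp
    show "num_comps {s,t} ({}::('a,'b) edge set) = 2" using label_all(1)[OF h1 h2] st by (simp add: numeral_2_eq_2)
    show "(s,t) \<notin> conn_rel {s,t} ({}::('a,'b) edge set)" using label_all(2)[OF h1 h2, of s t] st by simp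
  qed
  have n1: "num_comps {s,t} {(l,{s,t})} = 1" and c1: "(s,t) \<in> conn_rel {s,t} {(l,{s,t})}"
  proof -
    let ?c = "\<lambda>x::'a. s"
    have h1: "\<forall>(x,y)\<in>adj_rel {(l,{s,t})}. ?c x = ?c y" by simp
    have h2: "\<forall>x\<in>{s,t}. (x, ?c x) \<in> (adj_rel {(l,{s,t})})\<^sup>*"
      using adj_rel_insert[of l t s "{}"] by (auto simp: insert_commute)
    show "num_comps {s,t} {(l,{s,t})} = 1" using label_all(1)[OF h1 h2] by simp
    show "(s,t) \<in> conn_rel {s,t} {(l,{s,t})}" using label_all(2)[OF h1 h2, of s t] by simp
  qed
  have P: "Pow {(l,{s,t})} = {{}, {(l,{s,t})}}" by blast
  show "chrom_poly {s,t} {(l,{s,t})} q = q^2 - q"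
    unfolding chrom_poly_def P using n0 n1 by simp
  show "CS {s,t} {(l,{s,t})} s t q = - q"
    unfolding CS_def P using c0 c1 n1 by simp
qed


context
  fixes s a b t :: 'a and l1 l2 l3 l4 l5 :: 'b
  assumes dW: "distinct [s,a,b,t]"
begin

lemma dfacts: "s \<noteq> a" "s \<noteq> b" "s \<noteq> t" "a \<noteq> b" "a \<noteq> t" "b \<noteq> t"
  "a \<noteq> s" "b \<noteq> s" "t \<noteq> s" "b \<noteq> a" "t \<noteq> a" "t \<noteq> b"
  using dW by auto

lemma efacts: "(l1,{s,a}) \<noteq> (l2,{s,b})" "(l1,{s,a}) \<noteq> (l3,{a,b})" "(l1,{s,a}) \<noteq> (l4,{a,t})" "(l1,{s,a}) \<noteq> (l5,{b,t})" "(l2,{s,b}) \<noteq> (l3,{a,b})"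
   "(l2,{s,b}) \<noteq> (l4,{a,t})" "(l2,{s,b}) \<noteq> (l5,{b,t})" "(l3,{a,b}) \<noteq> (l4,{a,t})" "(l3,{a,b}) \<noteq> (l5,{b,t})" "(l4,{a,t}) \<noteq> (l5,{b,t})"
  using dfacts by (auto simp: doubleton_eq_iff)

lemma ws_0: "num_comps {s,a,b,t} ({}::('a,'b) edge set) = 4" "((s,t) \<in> conn_rel {s,a,b,t} ({}::('a,'b) edge set)) = False"
proof -
  let ?c = "(\<lambda>x. if x = s then s else if x = a then a else if x = b then b else t)"
  have h1: "\<forall>(x,y)\<in>adj_rel ({}::('a,'b) edge set). ?c x = ?c y" using dfacts by (simp add: adj_rel_insert)
  have p_s: "(s, s) \<in> (adj_rel ({}::('a,'b) edge set))\<^sup>*"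
    by (rule rtrancl_refl)
  have p_a: "(a, a) \<in> (adj_rel ({}::('a,'b) edge set))\<^sup>*"
    by (rule rtrancl_refl)
  have p_b: "(b, b) \<in> (adj_rel ({}::('a,'b) edge set))\<^sup>*"
    by (rule rtrancl_refl)
  have p_t: "(t, t) \<in> (adj_rel ({}::('a,'b) edge set))\<^sup>*"
    by (rule rtrancl_refl)
  have h2: "\<forall>x\<in>{s,a,b,t}. (x, ?c x) \<in> (adj_rel ({}::('a,'b) edge set))\<^sup>*" using p_s p_a p_b p_t dfacts by simp
  show "num_comps {s,a,b,t} ({}::('a,'b) edge set) = 4" using label_all(1)[OF h1 h2] dfacts by (simp add: numeral_eq_Suc card_insert_if)
  show "((s,t) \<in> conn_rel {s,a,b,t} ({}::('a,'b) edge set)) = False" using label_all(2)[OF h1 h2, of s t] dfacts by simp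
qed

lemma ws_1: "num_comps {s,a,b,t} {(l1,{s,a})} = 3" "((s,t) \<in> conn_rel {s,a,b,t} {(l1,{s,a})}) = False"
proof -
  let ?c = "(\<lambda>x. if x = s then s else if x = a then s else if x = b then b else t)"
  have h1: "\<forall>(x,y)\<in>adj_rel {(l1,{s,a})}. ?c x = ?c y" using dfacts by (simp add: adj_rel_insert)
  have p_s: "(s, s) \<in> (adj_rel {(l1,{s,a})})\<^sup>*"
    by (rule rtrancl_refl)
  have p_a: "(a, s) \<in> (adj_rel {(l1,{s,a})})\<^sup>*"
    apply (rule converse_rtrancl_into_rtrancl[of a s])
     apply (simp add: adj_rel_insert)
    by (rule rtrancl_refl)
  have p_b: "(b, b) \<in> (adj_rel {(l1,{s,a})})\<^sup>*"
    by (rule rtrancl_refl)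
  have p_t: "(t, t) \<in> (adj_rel {(l1,{s,a})})\<^sup>*"
    by (rule rtrancl_refl)
  have h2: "\<forall>x\<in>{s,a,b,t}. (x, ?c x) \<in> (adj_rel {(l1,{s,a})})\<^sup>*" using p_s p_a p_b p_t dfacts by simp
  show "num_comps {s,a,b,t} {(l1,{s,a})} = 3" using label_all(1)[OF h1 h2] dfacts by (simp add: numeral_eq_Suc card_insert_if)
  show "((s,t) \<in> conn_rel {s,a,b,t} {(l1,{s,a})}) = False" using label_all(2)[OF h1 h2, of s t] dfacts by simp
qed

lemma ws_2: "num_comps {s,a,b,t} {(l2,{s,b})} = 3" "((s,t) \<in> conn_rel {s,a,b,t} {(l2,{s,b})}) = False"
proof -
  let ?c = "(\<lambda>x. if x = s then s else if x = a then a else if x = b then s else t)"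
  have h1: "\<forall>(x,y)\<in>adj_rel {(l2,{s,b})}. ?c x = ?c y" using dfacts by (simp add: adj_rel_insert)
  have p_s: "(s, s) \<in> (adj_rel {(l2,{s,b})})\<^sup>*"
    by (rule rtrancl_refl)
  have p_a: "(a, a) \<in> (adj_rel {(l2,{s,b})})\<^sup>*"
    by (rule rtrancl_refl)
  have p_b: "(b, s) \<in> (adj_rel {(l2,{s,b})})\<^sup>*"
    apply (rule converse_rtrancl_into_rtrancl[of b s])
     apply (simp add: adj_rel_insert)
    by (rule rtrancl_refl)
  have p_t: "(t, t) \<in> (adj_rel {(l2,{s,b})})\<^sup>*"
    by (rule rtrancl_refl)
  have h2: "\<forall>x\<in>{s,a,b,t}. (x, ?c x) \<in> (adj_rel {(l2,{s,b})})\<^sup>*" using p_s p_a p_b p_t dfacts by simp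
  show "num_comps {s,a,b,t} {(l2,{s,b})} = 3" using label_all(1)[OF h1 h2] dfacts by (simp add: numeral_eq_Suc card_insert_if)
  show "((s,t) \<in> conn_rel {s,a,b,t} {(l2,{s,b})}) = False" using label_all(2)[OF h1 h2, of s t] dfacts by simp
qed

lemma ws_3: "num_comps {s,a,b,t} {(l3,{a,b})} = 3" "((s,t) \<in> conn_rel {s,a,b,t} {(l3,{a,b})}) = False"
proof -
  let ?c = "(\<lambda>x. if x = s then s else if x = a then a else if x = b then a else t)"
  have h1: "\<forall>(x,y)\<in>adj_rel {(l3,{a,b})}. ?c x = ?c y" using dfacts by (simp add: adj_rel_insert)
  have p_s: "(s, s) \<in> (adj_rel {(l3,{a,b})})\<^sup>*"
    by (rule rtrancl_refl)
  have p_a: "(a, a) \<in> (adj_rel {(l3,{a,b})})\<^sup>*"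
    by (rule rtrancl_refl)
  have p_b: "(b, a) \<in> (adj_rel {(l3,{a,b})})\<^sup>*"
    apply (rule converse_rtrancl_into_rtrancl[of b a])
     apply (simp add: adj_rel_insert)
    by (rule rtrancl_refl)
  have p_t: "(t, t) \<in> (adj_rel {(l3,{a,b})})\<^sup>*"
    by (rule rtrancl_refl)
  have h2: "\<forall>x\<in>{s,a,b,t}. (x, ?c x) \<in> (adj_rel {(l3,{a,b})})\<^sup>*" using p_s p_a p_b p_t dfacts by simp
  show "num_comps {s,a,b,t} {(l3,{a,b})} = 3" using label_all(1)[OF h1 h2] dfacts by (simp add: numeral_eq_Suc card_insert_if)
  show "((s,t) \<in> conn_rel {s,a,b,t} {(l3,{a,b})}) = False" using label_all(2)[OF h1 h2, of s t] dfacts by simp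
qed

lemma ws_4: "num_comps {s,a,b,t} {(l4,{a,t})} = 3" "((s,t) \<in> conn_rel {s,a,b,t} {(l4,{a,t})}) = False"
proof -
  let ?c = "(\<lambda>x. if x = s then s else if x = a then a else if x = b then b else a)"
  have h1: "\<forall>(x,y)\<in>adj_rel {(l4,{a,t})}. ?c x = ?c y" using dfacts by (simp add: adj_rel_insert)
  have p_s: "(s, s) \<in> (adj_rel {(l4,{a,t})})\<^sup>*"
    by (rule rtrancl_refl)
  have p_a: "(a, a) \<in> (adj_rel {(l4,{a,t})})\<^sup>*"
    by (rule rtrancl_refl)
  have p_b: "(b, b) \<in> (adj_rel {(l4,{a,t})})\<^sup>*"
    by (rule rtrancl_refl)
  have p_t: "(t, a) \<in> (adj_rel {(l4,{a,t})})\<^sup>*"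
    apply (rule converse_rtrancl_into_rtrancl[of t a])
     apply (simp add: adj_rel_insert)
    by (rule rtrancl_refl)
  have h2: "\<forall>x\<in>{s,a,b,t}. (x, ?c x) \<in> (adj_rel {(l4,{a,t})})\<^sup>*" using p_s p_a p_b p_t dfacts by simp
  show "num_comps {s,a,b,t} {(l4,{a,t})} = 3" using label_all(1)[OF h1 h2] dfacts by (simp add: numeral_eq_Suc card_insert_if)
  show "((s,t) \<in> conn_rel {s,a,b,t} {(l4,{a,t})}) = False" using label_all(2)[OF h1 h2, of s t] dfacts by simp
qed

lemma ws_5: "num_comps {s,a,b,t} {(l5,{b,t})} = 3" "((s,t) \<in> conn_rel {s,a,b,t} {(l5,{b,t})}) = False"
proof -
  let ?c = "(\<lambda>x. if x = s then s else if x = a then a else if x = b then b else b)"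
  have h1: "\<forall>(x,y)\<in>adj_rel {(l5,{b,t})}. ?c x = ?c y" using dfacts by (simp add: adj_rel_insert)
  have p_s: "(s, s) \<in> (adj_rel {(l5,{b,t})})\<^sup>*"
    by (rule rtrancl_refl)
  have p_a: "(a, a) \<in> (adj_rel {(l5,{b,t})})\<^sup>*"
    by (rule rtrancl_refl)
  have p_b: "(b, b) \<in> (adj_rel {(l5,{b,t})})\<^sup>*"
    by (rule rtrancl_refl)
  have p_t: "(t, b) \<in> (adj_rel {(l5,{b,t})})\<^sup>*"
    apply (rule converse_rtrancl_into_rtrancl[of t b])
     apply (simp add: adj_rel_insert)
    by (rule rtrancl_refl)
  have h2: "\<forall>x\<in>{s,a,b,t}. (x, ?c x) \<in> (adj_rel {(l5,{b,t})})\<^sup>*" using p_s p_a p_b p_t dfacts by simp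
  show "num_comps {s,a,b,t} {(l5,{b,t})} = 3" using label_all(1)[OF h1 h2] dfacts by (simp add: numeral_eq_Suc card_insert_if)
  show "((s,t) \<in> conn_rel {s,a,b,t} {(l5,{b,t})}) = False" using label_all(2)[OF h1 h2, of s t] dfacts by simp
qed

lemma ws_12: "num_comps {s,a,b,t} {(l1,{s,a}), (l2,{s,b})} = 2" "((s,t) \<in> conn_rel {s,a,b,t} {(l1,{s,a}), (l2,{s,b})}) = False"
proof -
  let ?c = "(\<lambda>x. if x = s then s else if x = a then s else if x = b then s else t)"
  have h1: "\<forall>(x,y)\<in>adj_rel {(l1,{s,a}), (l2,{s,b})}. ?c x = ?c y" using dfacts by (simp add: adj_rel_insert)
  have p_s: "(s, s) \<in> (adj_rel {(l1,{s,a}), (l2,{s,b})})\<^sup>*"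
    by (rule rtrancl_refl)
  have p_a: "(a, s) \<in> (adj_rel {(l1,{s,a}), (l2,{s,b})})\<^sup>*"
    apply (rule converse_rtrancl_into_rtrancl[of a s])
     apply (simp add: adj_rel_insert)
    by (rule rtrancl_refl)
  have p_b: "(b, s) \<in> (adj_rel {(l1,{s,a}), (l2,{s,b})})\<^sup>*"
    apply (rule converse_rtrancl_into_rtrancl[of b s])
     apply (simp add: adj_rel_insert)
    by (rule rtrancl_refl)
  have p_t: "(t, t) \<in> (adj_rel {(l1,{s,a}), (l2,{s,b})})\<^sup>*"
    by (rule rtrancl_refl)
  have h2: "\<forall>x\<in>{s,a,b,t}. (x, ?c x) \<in> (adj_rel {(l1,{s,a}), (l2,{s,b})})\<^sup>*" using p_s p_a p_b p_t dfacts by simp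
  show "num_comps {s,a,b,t} {(l1,{s,a}), (l2,{s,b})} = 2" using label_all(1)[OF h1 h2] dfacts by (simp add: numeral_eq_Suc card_insert_if)
  show "((s,t) \<in> conn_rel {s,a,b,t} {(l1,{s,a}), (l2,{s,b})}) = False" using label_all(2)[OF h1 h2, of s t] dfacts by simp
qed

lemma ws_13: "num_comps {s,a,b,t} {(l1,{s,a}), (l3,{a,b})} = 2" "((s,t) \<in> conn_rel {s,a,b,t} {(l1,{s,a}), (l3,{a,b})}) = False"
proof -
  let ?c = "(\<lambda>x. if x = s then s else if x = a then s else if x = b then s else t)"
  have h1: "\<forall>(x,y)\<in>adj_rel {(l1,{s,a}), (l3,{a,b})}. ?c x = ?c y" using dfacts by (simp add: adj_rel_insert)
  have p_s: "(s, s) \<in> (adj_rel {(l1,{s,a}), (l3,{a,b})})\<^sup>*"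
    by (rule rtrancl_refl)
  have p_a: "(a, s) \<in> (adj_rel {(l1,{s,a}), (l3,{a,b})})\<^sup>*"
    apply (rule converse_rtrancl_into_rtrancl[of a s])
     apply (simp add: adj_rel_insert)
    by (rule rtrancl_refl)
  have p_b: "(b, s) \<in> (adj_rel {(l1,{s,a}), (l3,{a,b})})\<^sup>*"
    apply (rule converse_rtrancl_into_rtrancl[of b a])
     apply (simp add: adj_rel_insert)
    apply (rule converse_rtrancl_into_rtrancl[of a s])
     apply (simp add: adj_rel_insert)
    by (rule rtrancl_refl)
  have p_t: "(t, t) \<in> (adj_rel {(l1,{s,a}), (l3,{a,b})})\<^sup>*"
    by (rule rtrancl_refl)
  have h2: "\<forall>x\<in>{s,a,b,t}. (x, ?c x) \<in> (adj_rel {(l1,{s,a}), (l3,{a,b})})\<^sup>*" using p_s p_a p_b p_t dfacts by simp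
  show "num_comps {s,a,b,t} {(l1,{s,a}), (l3,{a,b})} = 2" using label_all(1)[OF h1 h2] dfacts by (simp add: numeral_eq_Suc card_insert_if)
  show "((s,t) \<in> conn_rel {s,a,b,t} {(l1,{s,a}), (l3,{a,b})}) = False" using label_all(2)[OF h1 h2, of s t] dfacts by simp
qed

lemma ws_14: "num_comps {s,a,b,t} {(l1,{s,a}), (l4,{a,t})} = 2" "((s,t) \<in> conn_rel {s,a,b,t} {(l1,{s,a}), (l4,{a,t})}) = True"
proof -
  let ?c = "(\<lambda>x. if x = s then s else if x = a then s else if x = b then b else s)"
  have h1: "\<forall>(x,y)\<in>adj_rel {(l1,{s,a}), (l4,{a,t})}. ?c x = ?c y" using dfacts by (simp add: adj_rel_insert)
  have p_s: "(s, s) \<in> (adj_rel {(l1,{s,a}), (l4,{a,t})})\<^sup>*"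
    by (rule rtrancl_refl)
  have p_a: "(a, s) \<in> (adj_rel {(l1,{s,a}), (l4,{a,t})})\<^sup>*"
    apply (rule converse_rtrancl_into_rtrancl[of a s])
     apply (simp add: adj_rel_insert)
    by (rule rtrancl_refl)
  have p_b: "(b, b) \<in> (adj_rel {(l1,{s,a}), (l4,{a,t})})\<^sup>*"
    by (rule rtrancl_refl)
  have p_t: "(t, s) \<in> (adj_rel {(l1,{s,a}), (l4,{a,t})})\<^sup>*"
    apply (rule converse_rtrancl_into_rtrancl[of t a])
     apply (simp add: adj_rel_insert)
    apply (rule converse_rtrancl_into_rtrancl[of a s])
     apply (simp add: adj_rel_insert)
    by (rule rtrancl_refl)
  have h2: "\<forall>x\<in>{s,a,b,t}. (x, ?c x) \<in> (adj_rel {(l1,{s,a}), (l4,{a,t})})\<^sup>*" using p_s p_a p_b p_t dfacts by simp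
  show "num_comps {s,a,b,t} {(l1,{s,a}), (l4,{a,t})} = 2" using label_all(1)[OF h1 h2] dfacts by (simp add: numeral_eq_Suc card_insert_if)
  show "((s,t) \<in> conn_rel {s,a,b,t} {(l1,{s,a}), (l4,{a,t})}) = True" using label_all(2)[OF h1 h2, of s t] dfacts by simp
qed

lemma ws_15: "num_comps {s,a,b,t} {(l1,{s,a}), (l5,{b,t})} = 2" "((s,t) \<in> conn_rel {s,a,b,t} {(l1,{s,a}), (l5,{b,t})}) = False"
proof -
  let ?c = "(\<lambda>x. if x = s then s else if x = a then s else if x = b then b else b)"
  have h1: "\<forall>(x,y)\<in>adj_rel {(l1,{s,a}), (l5,{b,t})}. ?c x = ?c y" using dfacts by (simp add: adj_rel_insert)
  have p_s: "(s, s) \<in> (adj_rel {(l1,{s,a}), (l5,{b,t})})\<^sup>*"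
    by (rule rtrancl_refl)
  have p_a: "(a, s) \<in> (adj_rel {(l1,{s,a}), (l5,{b,t})})\<^sup>*"
    apply (rule converse_rtrancl_into_rtrancl[of a s])
     apply (simp add: adj_rel_insert)
    by (rule rtrancl_refl)
  have p_b: "(b, b) \<in> (adj_rel {(l1,{s,a}), (l5,{b,t})})\<^sup>*"
    by (rule rtrancl_refl)
  have p_t: "(t, b) \<in> (adj_rel {(l1,{s,a}), (l5,{b,t})})\<^sup>*"
    apply (rule converse_rtrancl_into_rtrancl[of t b])
     apply (simp add: adj_rel_insert)
    by (rule rtrancl_refl)
  have h2: "\<forall>x\<in>{s,a,b,t}. (x, ?c x) \<in> (adj_rel {(l1,{s,a}), (l5,{b,t})})\<^sup>*" using p_s p_a p_b p_t dfacts by simp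
  show "num_comps {s,a,b,t} {(l1,{s,a}), (l5,{b,t})} = 2" using label_all(1)[OF h1 h2] dfacts by (simp add: numeral_eq_Suc card_insert_if)
  show "((s,t) \<in> conn_rel {s,a,b,t} {(l1,{s,a}), (l5,{b,t})}) = False" using label_all(2)[OF h1 h2, of s t] dfacts by simp
qed

lemma ws_23: "num_comps {s,a,b,t} {(l2,{s,b}), (l3,{a,b})} = 2" "((s,t) \<in> conn_rel {s,a,b,t} {(l2,{s,b}), (l3,{a,b})}) = False"
proof -
  let ?c = "(\<lambda>x. if x = s then s else if x = a then s else if x = b then s else t)"
  have h1: "\<forall>(x,y)\<in>adj_rel {(l2,{s,b}), (l3,{a,b})}. ?c x = ?c y" using dfacts by (simp add: adj_rel_insert)
  have p_s: "(s, s) \<in> (adj_rel {(l2,{s,b}), (l3,{a,b})})\<^sup>*"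
    by (rule rtrancl_refl)
  have p_a: "(a, s) \<in> (adj_rel {(l2,{s,b}), (l3,{a,b})})\<^sup>*"
    apply (rule converse_rtrancl_into_rtrancl[of a b])
     apply (simp add: adj_rel_insert)
    apply (rule converse_rtrancl_into_rtrancl[of b s])
     apply (simp add: adj_rel_insert)
    by (rule rtrancl_refl)
  have p_b: "(b, s) \<in> (adj_rel {(l2,{s,b}), (l3,{a,b})})\<^sup>*"
    apply (rule converse_rtrancl_into_rtrancl[of b s])
     apply (simp add: adj_rel_insert)
    by (rule rtrancl_refl)
  have p_t: "(t, t) \<in> (adj_rel {(l2,{s,b}), (l3,{a,b})})\<^sup>*"
    by (rule rtrancl_refl)
  have h2: "\<forall>x\<in>{s,a,b,t}. (x, ?c x) \<in> (adj_rel {(l2,{s,b}), (l3,{a,b})})\<^sup>*" using p_s p_a p_b p_t dfacts by simp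
  show "num_comps {s,a,b,t} {(l2,{s,b}), (l3,{a,b})} = 2" using label_all(1)[OF h1 h2] dfacts by (simp add: numeral_eq_Suc card_insert_if)
  show "((s,t) \<in> conn_rel {s,a,b,t} {(l2,{s,b}), (l3,{a,b})}) = False" using label_all(2)[OF h1 h2, of s t] dfacts by simp
qed

lemma ws_24: "num_comps {s,a,b,t} {(l2,{s,b}), (l4,{a,t})} = 2" "((s,t) \<in> conn_rel {s,a,b,t} {(l2,{s,b}), (l4,{a,t})}) = False"
proof -
  let ?c = "(\<lambda>x. if x = s then s else if x = a then a else if x = b then s else a)"
  have h1: "\<forall>(x,y)\<in>adj_rel {(l2,{s,b}), (l4,{a,t})}. ?c x = ?c y" using dfacts by (simp add: adj_rel_insert)
  have p_s: "(s, s) \<in> (adj_rel {(l2,{s,b}), (l4,{a,t})})\<^sup>*"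
    by (rule rtrancl_refl)
  have p_a: "(a, a) \<in> (adj_rel {(l2,{s,b}), (l4,{a,t})})\<^sup>*"
    by (rule rtrancl_refl)
  have p_b: "(b, s) \<in> (adj_rel {(l2,{s,b}), (l4,{a,t})})\<^sup>*"
    apply (rule converse_rtrancl_into_rtrancl[of b s])
     apply (simp add: adj_rel_insert)
    by (rule rtrancl_refl)
  have p_t: "(t, a) \<in> (adj_rel {(l2,{s,b}), (l4,{a,t})})\<^sup>*"
    apply (rule converse_rtrancl_into_rtrancl[of t a])
     apply (simp add: adj_rel_insert)
    by (rule rtrancl_refl)
  have h2: "\<forall>x\<in>{s,a,b,t}. (x, ?c x) \<in> (adj_rel {(l2,{s,b}), (l4,{a,t})})\<^sup>*" using p_s p_a p_b p_t dfacts by simp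
  show "num_comps {s,a,b,t} {(l2,{s,b}), (l4,{a,t})} = 2" using label_all(1)[OF h1 h2] dfacts by (simp add: numeral_eq_Suc card_insert_if)
  show "((s,t) \<in> conn_rel {s,a,b,t} {(l2,{s,b}), (l4,{a,t})}) = False" using label_all(2)[OF h1 h2, of s t] dfacts by simp
qed

lemma ws_25: "num_comps {s,a,b,t} {(l2,{s,b}), (l5,{b,t})} = 2" "((s,t) \<in> conn_rel {s,a,b,t} {(l2,{s,b}), (l5,{b,t})}) = True"
proof -
  let ?c = "(\<lambda>x. if x = s then s else if x = a then a else if x = b then s else s)"
  have h1: "\<forall>(x,y)\<in>adj_rel {(l2,{s,b}), (l5,{b,t})}. ?c x = ?c y" using dfacts by (simp add: adj_rel_insert)
  have p_s: "(s, s) \<in> (adj_rel {(l2,{s,b}), (l5,{b,t})})\<^sup>*"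
    by (rule rtrancl_refl)
  have p_a: "(a, a) \<in> (adj_rel {(l2,{s,b}), (l5,{b,t})})\<^sup>*"
    by (rule rtrancl_refl)
  have p_b: "(b, s) \<in> (adj_rel {(l2,{s,b}), (l5,{b,t})})\<^sup>*"
    apply (rule converse_rtrancl_into_rtrancl[of b s])
     apply (simp add: adj_rel_insert)
    by (rule rtrancl_refl)
  have p_t: "(t, s) \<in> (adj_rel {(l2,{s,b}), (l5,{b,t})})\<^sup>*"
    apply (rule converse_rtrancl_into_rtrancl[of t b])
     apply (simp add: adj_rel_insert)
    apply (rule converse_rtrancl_into_rtrancl[of b s])
     apply (simp add: adj_rel_insert)
    by (rule rtrancl_refl)
  have h2: "\<forall>x\<in>{s,a,b,t}. (x, ?c x) \<in> (adj_rel {(l2,{s,b}), (l5,{b,t})})\<^sup>*" using p_s p_a p_b p_t dfacts by simp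
  show "num_comps {s,a,b,t} {(l2,{s,b}), (l5,{b,t})} = 2" using label_all(1)[OF h1 h2] dfacts by (simp add: numeral_eq_Suc card_insert_if)
  show "((s,t) \<in> conn_rel {s,a,b,t} {(l2,{s,b}), (l5,{b,t})}) = True" using label_all(2)[OF h1 h2, of s t] dfacts by simp
qed

lemma ws_34: "num_comps {s,a,b,t} {(l3,{a,b}), (l4,{a,t})} = 2" "((s,t) \<in> conn_rel {s,a,b,t} {(l3,{a,b}), (l4,{a,t})}) = False"
proof -
  let ?c = "(\<lambda>x. if x = s then s else if x = a then a else if x = b then a else a)"
  have h1: "\<forall>(x,y)\<in>adj_rel {(l3,{a,b}), (l4,{a,t})}. ?c x = ?c y" using dfacts by (simp add: adj_rel_insert)
  have p_s: "(s, s) \<in> (adj_rel {(l3,{a,b}), (l4,{a,t})})\<^sup>*"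
    by (rule rtrancl_refl)
  have p_a: "(a, a) \<in> (adj_rel {(l3,{a,b}), (l4,{a,t})})\<^sup>*"
    by (rule rtrancl_refl)
  have p_b: "(b, a) \<in> (adj_rel {(l3,{a,b}), (l4,{a,t})})\<^sup>*"
    apply (rule converse_rtrancl_into_rtrancl[of b a])
     apply (simp add: adj_rel_insert)
    by (rule rtrancl_refl)
  have p_t: "(t, a) \<in> (adj_rel {(l3,{a,b}), (l4,{a,t})})\<^sup>*"
    apply (rule converse_rtrancl_into_rtrancl[of t a])
     apply (simp add: adj_rel_insert)
    by (rule rtrancl_refl)
  have h2: "\<forall>x\<in>{s,a,b,t}. (x, ?c x) \<in> (adj_rel {(l3,{a,b}), (l4,{a,t})})\<^sup>*" using p_s p_a p_b p_t dfacts by simp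
  show "num_comps {s,a,b,t} {(l3,{a,b}), (l4,{a,t})} = 2" using label_all(1)[OF h1 h2] dfacts by (simp add: numeral_eq_Suc card_insert_if)
  show "((s,t) \<in> conn_rel {s,a,b,t} {(l3,{a,b}), (l4,{a,t})}) = False" using label_all(2)[OF h1 h2, of s t] dfacts by simp
qed

lemma ws_35: "num_comps {s,a,b,t} {(l3,{a,b}), (l5,{b,t})} = 2" "((s,t) \<in> conn_rel {s,a,b,t} {(l3,{a,b}), (l5,{b,t})}) = False"
proof -
  let ?c = "(\<lambda>x. if x = s then s else if x = a then a else if x = b then a else a)"
  have h1: "\<forall>(x,y)\<in>adj_rel {(l3,{a,b}), (l5,{b,t})}. ?c x = ?c y" using dfacts by (simp add: adj_rel_insert)
  have p_s: "(s, s) \<in> (adj_rel {(l3,{a,b}), (l5,{b,t})})\<^sup>*"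
    by (rule rtrancl_refl)
  have p_a: "(a, a) \<in> (adj_rel {(l3,{a,b}), (l5,{b,t})})\<^sup>*"
    by (rule rtrancl_refl)
  have p_b: "(b, a) \<in> (adj_rel {(l3,{a,b}), (l5,{b,t})})\<^sup>*"
    apply (rule converse_rtrancl_into_rtrancl[of b a])
     apply (simp add: adj_rel_insert)
    by (rule rtrancl_refl)
  have p_t: "(t, a) \<in> (adj_rel {(l3,{a,b}), (l5,{b,t})})\<^sup>*"
    apply (rule converse_rtrancl_into_rtrancl[of t b])
     apply (simp add: adj_rel_insert)
    apply (rule converse_rtrancl_into_rtrancl[of b a])
     apply (simp add: adj_rel_insert)
    by (rule rtrancl_refl)
  have h2: "\<forall>x\<in>{s,a,b,t}. (x, ?c x) \<in> (adj_rel {(l3,{a,b}), (l5,{b,t})})\<^sup>*" using p_s p_a p_b p_t dfacts by simp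
  show "num_comps {s,a,b,t} {(l3,{a,b}), (l5,{b,t})} = 2" using label_all(1)[OF h1 h2] dfacts by (simp add: numeral_eq_Suc card_insert_if)
  show "((s,t) \<in> conn_rel {s,a,b,t} {(l3,{a,b}), (l5,{b,t})}) = False" using label_all(2)[OF h1 h2, of s t] dfacts by simp
qed

lemma ws_45: "num_comps {s,a,b,t} {(l4,{a,t}), (l5,{b,t})} = 2" "((s,t) \<in> conn_rel {s,a,b,t} {(l4,{a,t}), (l5,{b,t})}) = False"
proof -
  let ?c = "(\<lambda>x. if x = s then s else if x = a then a else if x = b then a else a)"
  have h1: "\<forall>(x,y)\<in>adj_rel {(l4,{a,t}), (l5,{b,t})}. ?c x = ?c y" using dfacts by (simp add: adj_rel_insert)
  have p_s: "(s, s) \<in> (adj_rel {(l4,{a,t}), (l5,{b,t})})\<^sup>*"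
    by (rule rtrancl_refl)
  have p_a: "(a, a) \<in> (adj_rel {(l4,{a,t}), (l5,{b,t})})\<^sup>*"
    by (rule rtrancl_refl)
  have p_b: "(b, a) \<in> (adj_rel {(l4,{a,t}), (l5,{b,t})})\<^sup>*"
    apply (rule converse_rtrancl_into_rtrancl[of b t])
     apply (simp add: adj_rel_insert)
    apply (rule converse_rtrancl_into_rtrancl[of t a])
     apply (simp add: adj_rel_insert)
    by (rule rtrancl_refl)
  have p_t: "(t, a) \<in> (adj_rel {(l4,{a,t}), (l5,{b,t})})\<^sup>*"
    apply (rule converse_rtrancl_into_rtrancl[of t a])
     apply (simp add: adj_rel_insert)
    by (rule rtrancl_refl)
  have h2: "\<forall>x\<in>{s,a,b,t}. (x, ?c x) \<in> (adj_rel {(l4,{a,t}), (l5,{b,t})})\<^sup>*" using p_s p_a p_b p_t dfacts by simp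
  show "num_comps {s,a,b,t} {(l4,{a,t}), (l5,{b,t})} = 2" using label_all(1)[OF h1 h2] dfacts by (simp add: numeral_eq_Suc card_insert_if)
  show "((s,t) \<in> conn_rel {s,a,b,t} {(l4,{a,t}), (l5,{b,t})}) = False" using label_all(2)[OF h1 h2, of s t] dfacts by simp
qed

lemma ws_123: "num_comps {s,a,b,t} {(l1,{s,a}), (l2,{s,b}), (l3,{a,b})} = 2" "((s,t) \<in> conn_rel {s,a,b,t} {(l1,{s,a}), (l2,{s,b}), (l3,{a,b})}) = False"
proof -
  let ?c = "(\<lambda>x. if x = s then s else if x = a then s else if x = b then s else t)"
  have h1: "\<forall>(x,y)\<in>adj_rel {(l1,{s,a}), (l2,{s,b}), (l3,{a,b})}. ?c x = ?c y" using dfacts by (simp add: adj_rel_insert)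
  have p_s: "(s, s) \<in> (adj_rel {(l1,{s,a}), (l2,{s,b}), (l3,{a,b})})\<^sup>*"
    by (rule rtrancl_refl)
  have p_a: "(a, s) \<in> (adj_rel {(l1,{s,a}), (l2,{s,b}), (l3,{a,b})})\<^sup>*"
    apply (rule converse_rtrancl_into_rtrancl[of a s])
     apply (simp add: adj_rel_insert)
    by (rule rtrancl_refl)
  have p_b: "(b, s) \<in> (adj_rel {(l1,{s,a}), (l2,{s,b}), (l3,{a,b})})\<^sup>*"
    apply (rule converse_rtrancl_into_rtrancl[of b s])
     apply (simp add: adj_rel_insert)
    by (rule rtrancl_refl)
  have p_t: "(t, t) \<in> (adj_rel {(l1,{s,a}), (l2,{s,b}), (l3,{a,b})})\<^sup>*"
    by (rule rtrancl_refl)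
  have h2: "\<forall>x\<in>{s,a,b,t}. (x, ?c x) \<in> (adj_rel {(l1,{s,a}), (l2,{s,b}), (l3,{a,b})})\<^sup>*" using p_s p_a p_b p_t dfacts by simp
  show "num_comps {s,a,b,t} {(l1,{s,a}), (l2,{s,b}), (l3,{a,b})} = 2" using label_all(1)[OF h1 h2] dfacts by (simp add: numeral_eq_Suc card_insert_if)
  show "((s,t) \<in> conn_rel {s,a,b,t} {(l1,{s,a}), (l2,{s,b}), (l3,{a,b})}) = False" using label_all(2)[OF h1 h2, of s t] dfacts by simp
qed

lemma ws_124: "num_comps {s,a,b,t} {(l1,{s,a}), (l2,{s,b}), (l4,{a,t})} = 1" "((s,t) \<in> conn_rel {s,a,b,t} {(l1,{s,a}), (l2,{s,b}), (l4,{a,t})}) = True"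
proof -
  let ?c = "(\<lambda>x. if x = s then s else if x = a then s else if x = b then s else s)"
  have h1: "\<forall>(x,y)\<in>adj_rel {(l1,{s,a}), (l2,{s,b}), (l4,{a,t})}. ?c x = ?c y" using dfacts by (simp add: adj_rel_insert)
  have p_s: "(s, s) \<in> (adj_rel {(l1,{s,a}), (l2,{s,b}), (l4,{a,t})})\<^sup>*"
    by (rule rtrancl_refl)
  have p_a: "(a, s) \<in> (adj_rel {(l1,{s,a}), (l2,{s,b}), (l4,{a,t})})\<^sup>*"
    apply (rule converse_rtrancl_into_rtrancl[of a s])
     apply (simp add: adj_rel_insert)
    by (rule rtrancl_refl)
  have p_b: "(b, s) \<in> (adj_rel {(l1,{s,a}), (l2,{s,b}), (l4,{a,t})})\<^sup>*"
    apply (rule converse_rtrancl_into_rtrancl[of b s])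
     apply (simp add: adj_rel_insert)
    by (rule rtrancl_refl)
  have p_t: "(t, s) \<in> (adj_rel {(l1,{s,a}), (l2,{s,b}), (l4,{a,t})})\<^sup>*"
    apply (rule converse_rtrancl_into_rtrancl[of t a])
     apply (simp add: adj_rel_insert)
    apply (rule converse_rtrancl_into_rtrancl[of a s])
     apply (simp add: adj_rel_insert)
    by (rule rtrancl_refl)
  have h2: "\<forall>x\<in>{s,a,b,t}. (x, ?c x) \<in> (adj_rel {(l1,{s,a}), (l2,{s,b}), (l4,{a,t})})\<^sup>*" using p_s p_a p_b p_t dfacts by simp
  show "num_comps {s,a,b,t} {(l1,{s,a}), (l2,{s,b}), (l4,{a,t})} = 1" using label_all(1)[OF h1 h2] dfacts by (simp add: numeral_eq_Suc card_insert_if)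
  show "((s,t) \<in> conn_rel {s,a,b,t} {(l1,{s,a}), (l2,{s,b}), (l4,{a,t})}) = True" using label_all(2)[OF h1 h2, of s t] dfacts by simp
qed

lemma ws_125: "num_comps {s,a,b,t} {(l1,{s,a}), (l2,{s,b}), (l5,{b,t})} = 1" "((s,t) \<in> conn_rel {s,a,b,t} {(l1,{s,a}), (l2,{s,b}), (l5,{b,t})}) = True"
proof -
  let ?c = "(\<lambda>x. if x = s then s else if x = a then s else if x = b then s else s)"
  have h1: "\<forall>(x,y)\<in>adj_rel {(l1,{s,a}), (l2,{s,b}), (l5,{b,t})}. ?c x = ?c y" using dfacts by (simp add: adj_rel_insert)
  have p_s: "(s, s) \<in> (adj_rel {(l1,{s,a}), (l2,{s,b}), (l5,{b,t})})\<^sup>*"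
    by (rule rtrancl_refl)
  have p_a: "(a, s) \<in> (adj_rel {(l1,{s,a}), (l2,{s,b}), (l5,{b,t})})\<^sup>*"
    apply (rule converse_rtrancl_into_rtrancl[of a s])
     apply (simp add: adj_rel_insert)
    by (rule rtrancl_refl)
  have p_b: "(b, s) \<in> (adj_rel {(l1,{s,a}), (l2,{s,b}), (l5,{b,t})})\<^sup>*"
    apply (rule converse_rtrancl_into_rtrancl[of b s])
     apply (simp add: adj_rel_insert)
    by (rule rtrancl_refl)
  have p_t: "(t, s) \<in> (adj_rel {(l1,{s,a}), (l2,{s,b}), (l5,{b,t})})\<^sup>*"
    apply (rule converse_rtrancl_into_rtrancl[of t b])
     apply (simp add: adj_rel_insert)
    apply (rule converse_rtrancl_into_rtrancl[of b s])
     apply (simp add: adj_rel_insert)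
    by (rule rtrancl_refl)
  have h2: "\<forall>x\<in>{s,a,b,t}. (x, ?c x) \<in> (adj_rel {(l1,{s,a}), (l2,{s,b}), (l5,{b,t})})\<^sup>*" using p_s p_a p_b p_t dfacts by simp
  show "num_comps {s,a,b,t} {(l1,{s,a}), (l2,{s,b}), (l5,{b,t})} = 1" using label_all(1)[OF h1 h2] dfacts by (simp add: numeral_eq_Suc card_insert_if)
  show "((s,t) \<in> conn_rel {s,a,b,t} {(l1,{s,a}), (l2,{s,b}), (l5,{b,t})}) = True" using label_all(2)[OF h1 h2, of s t] dfacts by simp
qed

lemma ws_134: "num_comps {s,a,b,t} {(l1,{s,a}), (l3,{a,b}), (l4,{a,t})} = 1" "((s,t) \<in> conn_rel {s,a,b,t} {(l1,{s,a}), (l3,{a,b}), (l4,{a,t})}) = True"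
proof -
  let ?c = "(\<lambda>x. if x = s then s else if x = a then s else if x = b then s else s)"
  have h1: "\<forall>(x,y)\<in>adj_rel {(l1,{s,a}), (l3,{a,b}), (l4,{a,t})}. ?c x = ?c y" using dfacts by (simp add: adj_rel_insert)
  have p_s: "(s, s) \<in> (adj_rel {(l1,{s,a}), (l3,{a,b}), (l4,{a,t})})\<^sup>*"
    by (rule rtrancl_refl)
  have p_a: "(a, s) \<in> (adj_rel {(l1,{s,a}), (l3,{a,b}), (l4,{a,t})})\<^sup>*"
    apply (rule converse_rtrancl_into_rtrancl[of a s])
     apply (simp add: adj_rel_insert)
    by (rule rtrancl_refl)
  have p_b: "(b, s) \<in> (adj_rel {(l1,{s,a}), (l3,{a,b}), (l4,{a,t})})\<^sup>*"
    apply (rule converse_rtrancl_into_rtrancl[of b a])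
     apply (simp add: adj_rel_insert)
    apply (rule converse_rtrancl_into_rtrancl[of a s])
     apply (simp add: adj_rel_insert)
    by (rule rtrancl_refl)
  have p_t: "(t, s) \<in> (adj_rel {(l1,{s,a}), (l3,{a,b}), (l4,{a,t})})\<^sup>*"
    apply (rule converse_rtrancl_into_rtrancl[of t a])
     apply (simp add: adj_rel_insert)
    apply (rule converse_rtrancl_into_rtrancl[of a s])
     apply (simp add: adj_rel_insert)
    by (rule rtrancl_refl)
  have h2: "\<forall>x\<in>{s,a,b,t}. (x, ?c x) \<in> (adj_rel {(l1,{s,a}), (l3,{a,b}), (l4,{a,t})})\<^sup>*" using p_s p_a p_b p_t dfacts by simp
  show "num_comps {s,a,b,t} {(l1,{s,a}), (l3,{a,b}), (l4,{a,t})} = 1" using label_all(1)[OF h1 h2] dfacts by (simp add: numeral_eq_Suc card_insert_if)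
  show "((s,t) \<in> conn_rel {s,a,b,t} {(l1,{s,a}), (l3,{a,b}), (l4,{a,t})}) = True" using label_all(2)[OF h1 h2, of s t] dfacts by simp
qed

lemma ws_135: "num_comps {s,a,b,t} {(l1,{s,a}), (l3,{a,b}), (l5,{b,t})} = 1" "((s,t) \<in> conn_rel {s,a,b,t} {(l1,{s,a}), (l3,{a,b}), (l5,{b,t})}) = True"
proof -
  let ?c = "(\<lambda>x. if x = s then s else if x = a then s else if x = b then s else s)"
  have h1: "\<forall>(x,y)\<in>adj_rel {(l1,{s,a}), (l3,{a,b}), (l5,{b,t})}. ?c x = ?c y" using dfacts by (simp add: adj_rel_insert)
  have p_s: "(s, s) \<in> (adj_rel {(l1,{s,a}), (l3,{a,b}), (l5,{b,t})})\<^sup>*"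
    by (rule rtrancl_refl)
  have p_a: "(a, s) \<in> (adj_rel {(l1,{s,a}), (l3,{a,b}), (l5,{b,t})})\<^sup>*"
    apply (rule converse_rtrancl_into_rtrancl[of a s])
     apply (simp add: adj_rel_insert)
    by (rule rtrancl_refl)
  have p_b: "(b, s) \<in> (adj_rel {(l1,{s,a}), (l3,{a,b}), (l5,{b,t})})\<^sup>*"
    apply (rule converse_rtrancl_into_rtrancl[of b a])
     apply (simp add: adj_rel_insert)
    apply (rule converse_rtrancl_into_rtrancl[of a s])
     apply (simp add: adj_rel_insert)
    by (rule rtrancl_refl)
  have p_t: "(t, s) \<in> (adj_rel {(l1,{s,a}), (l3,{a,b}), (l5,{b,t})})\<^sup>*"
    apply (rule converse_rtrancl_into_rtrancl[of t b])
     apply (simp add: adj_rel_insert)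
    apply (rule converse_rtrancl_into_rtrancl[of b a])
     apply (simp add: adj_rel_insert)
    apply (rule converse_rtrancl_into_rtrancl[of a s])
     apply (simp add: adj_rel_insert)
    by (rule rtrancl_refl)
  have h2: "\<forall>x\<in>{s,a,b,t}. (x, ?c x) \<in> (adj_rel {(l1,{s,a}), (l3,{a,b}), (l5,{b,t})})\<^sup>*" using p_s p_a p_b p_t dfacts by simp
  show "num_comps {s,a,b,t} {(l1,{s,a}), (l3,{a,b}), (l5,{b,t})} = 1" using label_all(1)[OF h1 h2] dfacts by (simp add: numeral_eq_Suc card_insert_if)
  show "((s,t) \<in> conn_rel {s,a,b,t} {(l1,{s,a}), (l3,{a,b}), (l5,{b,t})}) = True" using label_all(2)[OF h1 h2, of s t] dfacts by simp
qed

lemma ws_145: "num_comps {s,a,b,t} {(l1,{s,a}), (l4,{a,t}), (l5,{b,t})} = 1" "((s,t) \<in> conn_rel {s,a,b,t} {(l1,{s,a}), (l4,{a,t}), (l5,{b,t})}) = True"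
proof -
  let ?c = "(\<lambda>x. if x = s then s else if x = a then s else if x = b then s else s)"
  have h1: "\<forall>(x,y)\<in>adj_rel {(l1,{s,a}), (l4,{a,t}), (l5,{b,t})}. ?c x = ?c y" using dfacts by (simp add: adj_rel_insert)
  have p_s: "(s, s) \<in> (adj_rel {(l1,{s,a}), (l4,{a,t}), (l5,{b,t})})\<^sup>*"
    by (rule rtrancl_refl)
  have p_a: "(a, s) \<in> (adj_rel {(l1,{s,a}), (l4,{a,t}), (l5,{b,t})})\<^sup>*"
    apply (rule converse_rtrancl_into_rtrancl[of a s])
     apply (simp add: adj_rel_insert)
    by (rule rtrancl_refl)
  have p_b: "(b, s) \<in> (adj_rel {(l1,{s,a}), (l4,{a,t}), (l5,{b,t})})\<^sup>*"
    apply (rule converse_rtrancl_into_rtrancl[of b t])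
     apply (simp add: adj_rel_insert)
    apply (rule converse_rtrancl_into_rtrancl[of t a])
     apply (simp add: adj_rel_insert)
    apply (rule converse_rtrancl_into_rtrancl[of a s])
     apply (simp add: adj_rel_insert)
    by (rule rtrancl_refl)
  have p_t: "(t, s) \<in> (adj_rel {(l1,{s,a}), (l4,{a,t}), (l5,{b,t})})\<^sup>*"
    apply (rule converse_rtrancl_into_rtrancl[of t a])
     apply (simp add: adj_rel_insert)
    apply (rule converse_rtrancl_into_rtrancl[of a s])
     apply (simp add: adj_rel_insert)
    by (rule rtrancl_refl)
  have h2: "\<forall>x\<in>{s,a,b,t}. (x, ?c x) \<in> (adj_rel {(l1,{s,a}), (l4,{a,t}), (l5,{b,t})})\<^sup>*" using p_s p_a p_b p_t dfacts by simp
  show "num_comps {s,a,b,t} {(l1,{s,a}), (l4,{a,t}), (l5,{b,t})} = 1" using label_all(1)[OF h1 h2] dfacts by (simp add: numeral_eq_Suc card_insert_if)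
  show "((s,t) \<in> conn_rel {s,a,b,t} {(l1,{s,a}), (l4,{a,t}), (l5,{b,t})}) = True" using label_all(2)[OF h1 h2, of s t] dfacts by simp
qed

lemma ws_234: "num_comps {s,a,b,t} {(l2,{s,b}), (l3,{a,b}), (l4,{a,t})} = 1" "((s,t) \<in> conn_rel {s,a,b,t} {(l2,{s,b}), (l3,{a,b}), (l4,{a,t})}) = True"
proof -
  let ?c = "(\<lambda>x. if x = s then s else if x = a then s else if x = b then s else s)"
  have h1: "\<forall>(x,y)\<in>adj_rel {(l2,{s,b}), (l3,{a,b}), (l4,{a,t})}. ?c x = ?c y" using dfacts by (simp add: adj_rel_insert)
  have p_s: "(s, s) \<in> (adj_rel {(l2,{s,b}), (l3,{a,b}), (l4,{a,t})})\<^sup>*"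
    by (rule rtrancl_refl)
  have p_a: "(a, s) \<in> (adj_rel {(l2,{s,b}), (l3,{a,b}), (l4,{a,t})})\<^sup>*"
    apply (rule converse_rtrancl_into_rtrancl[of a b])
     apply (simp add: adj_rel_insert)
    apply (rule converse_rtrancl_into_rtrancl[of b s])
     apply (simp add: adj_rel_insert)
    by (rule rtrancl_refl)
  have p_b: "(b, s) \<in> (adj_rel {(l2,{s,b}), (l3,{a,b}), (l4,{a,t})})\<^sup>*"
    apply (rule converse_rtrancl_into_rtrancl[of b s])
     apply (simp add: adj_rel_insert)
    by (rule rtrancl_refl)
  have p_t: "(t, s) \<in> (adj_rel {(l2,{s,b}), (l3,{a,b}), (l4,{a,t})})\<^sup>*"
    apply (rule converse_rtrancl_into_rtrancl[of t a])
     apply (simp add: adj_rel_insert)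
    apply (rule converse_rtrancl_into_rtrancl[of a b])
     apply (simp add: adj_rel_insert)
    apply (rule converse_rtrancl_into_rtrancl[of b s])
     apply (simp add: adj_rel_insert)
    by (rule rtrancl_refl)
  have h2: "\<forall>x\<in>{s,a,b,t}. (x, ?c x) \<in> (adj_rel {(l2,{s,b}), (l3,{a,b}), (l4,{a,t})})\<^sup>*" using p_s p_a p_b p_t dfacts by simp
  show "num_comps {s,a,b,t} {(l2,{s,b}), (l3,{a,b}), (l4,{a,t})} = 1" using label_all(1)[OF h1 h2] dfacts by (simp add: numeral_eq_Suc card_insert_if)
  show "((s,t) \<in> conn_rel {s,a,b,t} {(l2,{s,b}), (l3,{a,b}), (l4,{a,t})}) = True" using label_all(2)[OF h1 h2, of s t] dfacts by simp
qed

lemma ws_235: "num_comps {s,a,b,t} {(l2,{s,b}), (l3,{a,b}), (l5,{b,t})} = 1" "((s,t) \<in> conn_rel {s,a,b,t} {(l2,{s,b}), (l3,{a,b}), (l5,{b,t})}) = True"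
proof -
  let ?c = "(\<lambda>x. if x = s then s else if x = a then s else if x = b then s else s)"
  have h1: "\<forall>(x,y)\<in>adj_rel {(l2,{s,b}), (l3,{a,b}), (l5,{b,t})}. ?c x = ?c y" using dfacts by (simp add: adj_rel_insert)
  have p_s: "(s, s) \<in> (adj_rel {(l2,{s,b}), (l3,{a,b}), (l5,{b,t})})\<^sup>*"
    by (rule rtrancl_refl)
  have p_a: "(a, s) \<in> (adj_rel {(l2,{s,b}), (l3,{a,b}), (l5,{b,t})})\<^sup>*"
    apply (rule converse_rtrancl_into_rtrancl[of a b])
     apply (simp add: adj_rel_insert)
    apply (rule converse_rtrancl_into_rtrancl[of b s])
     apply (simp add: adj_rel_insert)
    by (rule rtrancl_refl)
  have p_b: "(b, s) \<in> (adj_rel {(l2,{s,b}), (l3,{a,b}), (l5,{b,t})})\<^sup>*"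
    apply (rule converse_rtrancl_into_rtrancl[of b s])
     apply (simp add: adj_rel_insert)
    by (rule rtrancl_refl)
  have p_t: "(t, s) \<in> (adj_rel {(l2,{s,b}), (l3,{a,b}), (l5,{b,t})})\<^sup>*"
    apply (rule converse_rtrancl_into_rtrancl[of t b])
     apply (simp add: adj_rel_insert)
    apply (rule converse_rtrancl_into_rtrancl[of b s])
     apply (simp add: adj_rel_insert)
    by (rule rtrancl_refl)
  have h2: "\<forall>x\<in>{s,a,b,t}. (x, ?c x) \<in> (adj_rel {(l2,{s,b}), (l3,{a,b}), (l5,{b,t})})\<^sup>*" using p_s p_a p_b p_t dfacts by simp
  show "num_comps {s,a,b,t} {(l2,{s,b}), (l3,{a,b}), (l5,{b,t})} = 1" using label_all(1)[OF h1 h2] dfacts by (simp add: numeral_eq_Suc card_insert_if)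
  show "((s,t) \<in> conn_rel {s,a,b,t} {(l2,{s,b}), (l3,{a,b}), (l5,{b,t})}) = True" using label_all(2)[OF h1 h2, of s t] dfacts by simp
qed

lemma ws_245: "num_comps {s,a,b,t} {(l2,{s,b}), (l4,{a,t}), (l5,{b,t})} = 1" "((s,t) \<in> conn_rel {s,a,b,t} {(l2,{s,b}), (l4,{a,t}), (l5,{b,t})}) = True"
proof -
  let ?c = "(\<lambda>x. if x = s then s else if x = a then s else if x = b then s else s)"
  have h1: "\<forall>(x,y)\<in>adj_rel {(l2,{s,b}), (l4,{a,t}), (l5,{b,t})}. ?c x = ?c y" using dfacts by (simp add: adj_rel_insert)
  have p_s: "(s, s) \<in> (adj_rel {(l2,{s,b}), (l4,{a,t}), (l5,{b,t})})\<^sup>*"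
    by (rule rtrancl_refl)
  have p_a: "(a, s) \<in> (adj_rel {(l2,{s,b}), (l4,{a,t}), (l5,{b,t})})\<^sup>*"
    apply (rule converse_rtrancl_into_rtrancl[of a t])
     apply (simp add: adj_rel_insert)
    apply (rule converse_rtrancl_into_rtrancl[of t b])
     apply (simp add: adj_rel_insert)
    apply (rule converse_rtrancl_into_rtrancl[of b s])
     apply (simp add: adj_rel_insert)
    by (rule rtrancl_refl)
  have p_b: "(b, s) \<in> (adj_rel {(l2,{s,b}), (l4,{a,t}), (l5,{b,t})})\<^sup>*"
    apply (rule converse_rtrancl_into_rtrancl[of b s])
     apply (simp add: adj_rel_insert)
    by (rule rtrancl_refl)
  have p_t: "(t, s) \<in> (adj_rel {(l2,{s,b}), (l4,{a,t}), (l5,{b,t})})\<^sup>*"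
    apply (rule converse_rtrancl_into_rtrancl[of t b])
     apply (simp add: adj_rel_insert)
    apply (rule converse_rtrancl_into_rtrancl[of b s])
     apply (simp add: adj_rel_insert)
    by (rule rtrancl_refl)
  have h2: "\<forall>x\<in>{s,a,b,t}. (x, ?c x) \<in> (adj_rel {(l2,{s,b}), (l4,{a,t}), (l5,{b,t})})\<^sup>*" using p_s p_a p_b p_t dfacts by simp
  show "num_comps {s,a,b,t} {(l2,{s,b}), (l4,{a,t}), (l5,{b,t})} = 1" using label_all(1)[OF h1 h2] dfacts by (simp add: numeral_eq_Suc card_insert_if)
  show "((s,t) \<in> conn_rel {s,a,b,t} {(l2,{s,b}), (l4,{a,t}), (l5,{b,t})}) = True" using label_all(2)[OF h1 h2, of s t] dfacts by simp
qed

lemma ws_345: "num_comps {s,a,b,t} {(l3,{a,b}), (l4,{a,t}), (l5,{b,t})} = 2" "((s,t) \<in> conn_rel {s,a,b,t} {(l3,{a,b}), (l4,{a,t}), (l5,{b,t})}) = False"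
proof -
  let ?c = "(\<lambda>x. if x = s then s else if x = a then a else if x = b then a else a)"
  have h1: "\<forall>(x,y)\<in>adj_rel {(l3,{a,b}), (l4,{a,t}), (l5,{b,t})}. ?c x = ?c y" using dfacts by (simp add: adj_rel_insert)
  have p_s: "(s, s) \<in> (adj_rel {(l3,{a,b}), (l4,{a,t}), (l5,{b,t})})\<^sup>*"
    by (rule rtrancl_refl)
  have p_a: "(a, a) \<in> (adj_rel {(l3,{a,b}), (l4,{a,t}), (l5,{b,t})})\<^sup>*"
    by (rule rtrancl_refl)
  have p_b: "(b, a) \<in> (adj_rel {(l3,{a,b}), (l4,{a,t}), (l5,{b,t})})\<^sup>*"
    apply (rule converse_rtrancl_into_rtrancl[of b a])
     apply (simp add: adj_rel_insert)
    by (rule rtrancl_refl)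
  have p_t: "(t, a) \<in> (adj_rel {(l3,{a,b}), (l4,{a,t}), (l5,{b,t})})\<^sup>*"
    apply (rule converse_rtrancl_into_rtrancl[of t a])
     apply (simp add: adj_rel_insert)
    by (rule rtrancl_refl)
  have h2: "\<forall>x\<in>{s,a,b,t}. (x, ?c x) \<in> (adj_rel {(l3,{a,b}), (l4,{a,t}), (l5,{b,t})})\<^sup>*" using p_s p_a p_b p_t dfacts by simp
  show "num_comps {s,a,b,t} {(l3,{a,b}), (l4,{a,t}), (l5,{b,t})} = 2" using label_all(1)[OF h1 h2] dfacts by (simp add: numeral_eq_Suc card_insert_if)
  show "((s,t) \<in> conn_rel {s,a,b,t} {(l3,{a,b}), (l4,{a,t}), (l5,{b,t})}) = False" using label_all(2)[OF h1 h2, of s t] dfacts by simp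
qed

lemma ws_1234: "num_comps {s,a,b,t} {(l1,{s,a}), (l2,{s,b}), (l3,{a,b}), (l4,{a,t})} = 1" "((s,t) \<in> conn_rel {s,a,b,t} {(l1,{s,a}), (l2,{s,b}), (l3,{a,b}), (l4,{a,t})}) = True"
proof -
  let ?c = "(\<lambda>x. if x = s then s else if x = a then s else if x = b then s else s)"
  have h1: "\<forall>(x,y)\<in>adj_rel {(l1,{s,a}), (l2,{s,b}), (l3,{a,b}), (l4,{a,t})}. ?c x = ?c y" using dfacts by (simp add: adj_rel_insert)
  have p_s: "(s, s) \<in> (adj_rel {(l1,{s,a}), (l2,{s,b}), (l3,{a,b}), (l4,{a,t})})\<^sup>*"
    by (rule rtrancl_refl)
  have p_a: "(a, s) \<in> (adj_rel {(l1,{s,a}), (l2,{s,b}), (l3,{a,b}), (l4,{a,t})})\<^sup>*"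
    apply (rule converse_rtrancl_into_rtrancl[of a s])
     apply (simp add: adj_rel_insert)
    by (rule rtrancl_refl)
  have p_b: "(b, s) \<in> (adj_rel {(l1,{s,a}), (l2,{s,b}), (l3,{a,b}), (l4,{a,t})})\<^sup>*"
    apply (rule converse_rtrancl_into_rtrancl[of b s])
     apply (simp add: adj_rel_insert)
    by (rule rtrancl_refl)
  have p_t: "(t, s) \<in> (adj_rel {(l1,{s,a}), (l2,{s,b}), (l3,{a,b}), (l4,{a,t})})\<^sup>*"
    apply (rule converse_rtrancl_into_rtrancl[of t a])
     apply (simp add: adj_rel_insert)
    apply (rule converse_rtrancl_into_rtrancl[of a s])
     apply (simp add: adj_rel_insert)
    by (rule rtrancl_refl)
  have h2: "\<forall>x\<in>{s,a,b,t}. (x, ?c x) \<in> (adj_rel {(l1,{s,a}), (l2,{s,b}), (l3,{a,b}), (l4,{a,t})})\<^sup>*" using p_s p_a p_b p_t dfacts by simp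
  show "num_comps {s,a,b,t} {(l1,{s,a}), (l2,{s,b}), (l3,{a,b}), (l4,{a,t})} = 1" using label_all(1)[OF h1 h2] dfacts by (simp add: numeral_eq_Suc card_insert_if)
  show "((s,t) \<in> conn_rel {s,a,b,t} {(l1,{s,a}), (l2,{s,b}), (l3,{a,b}), (l4,{a,t})}) = True" using label_all(2)[OF h1 h2, of s t] dfacts by simp
qed

lemma ws_1235: "num_comps {s,a,b,t} {(l1,{s,a}), (l2,{s,b}), (l3,{a,b}), (l5,{b,t})} = 1" "((s,t) \<in> conn_rel {s,a,b,t} {(l1,{s,a}), (l2,{s,b}), (l3,{a,b}), (l5,{b,t})}) = True"
proof -
  let ?c = "(\<lambda>x. if x = s then s else if x = a then s else if x = b then s else s)"
  have h1: "\<forall>(x,y)\<in>adj_rel {(l1,{s,a}), (l2,{s,b}), (l3,{a,b}), (l5,{b,t})}. ?c x = ?c y" using dfacts by (simp add: adj_rel_insert)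
  have p_s: "(s, s) \<in> (adj_rel {(l1,{s,a}), (l2,{s,b}), (l3,{a,b}), (l5,{b,t})})\<^sup>*"
    by (rule rtrancl_refl)
  have p_a: "(a, s) \<in> (adj_rel {(l1,{s,a}), (l2,{s,b}), (l3,{a,b}), (l5,{b,t})})\<^sup>*"
    apply (rule converse_rtrancl_into_rtrancl[of a s])
     apply (simp add: adj_rel_insert)
    by (rule rtrancl_refl)
  have p_b: "(b, s) \<in> (adj_rel {(l1,{s,a}), (l2,{s,b}), (l3,{a,b}), (l5,{b,t})})\<^sup>*"
    apply (rule converse_rtrancl_into_rtrancl[of b s])
     apply (simp add: adj_rel_insert)
    by (rule rtrancl_refl)
  have p_t: "(t, s) \<in> (adj_rel {(l1,{s,a}), (l2,{s,b}), (l3,{a,b}), (l5,{b,t})})\<^sup>*"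
    apply (rule converse_rtrancl_into_rtrancl[of t b])
     apply (simp add: adj_rel_insert)
    apply (rule converse_rtrancl_into_rtrancl[of b s])
     apply (simp add: adj_rel_insert)
    by (rule rtrancl_refl)
  have h2: "\<forall>x\<in>{s,a,b,t}. (x, ?c x) \<in> (adj_rel {(l1,{s,a}), (l2,{s,b}), (l3,{a,b}), (l5,{b,t})})\<^sup>*" using p_s p_a p_b p_t dfacts by simp
  show "num_comps {s,a,b,t} {(l1,{s,a}), (l2,{s,b}), (l3,{a,b}), (l5,{b,t})} = 1" using label_all(1)[OF h1 h2] dfacts by (simp add: numeral_eq_Suc card_insert_if)
  show "((s,t) \<in> conn_rel {s,a,b,t} {(l1,{s,a}), (l2,{s,b}), (l3,{a,b}), (l5,{b,t})}) = True" using label_all(2)[OF h1 h2, of s t] dfacts by simp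
qed

lemma ws_1245: "num_comps {s,a,b,t} {(l1,{s,a}), (l2,{s,b}), (l4,{a,t}), (l5,{b,t})} = 1" "((s,t) \<in> conn_rel {s,a,b,t} {(l1,{s,a}), (l2,{s,b}), (l4,{a,t}), (l5,{b,t})}) = True"
proof -
  let ?c = "(\<lambda>x. if x = s then s else if x = a then s else if x = b then s else s)"
  have h1: "\<forall>(x,y)\<in>adj_rel {(l1,{s,a}), (l2,{s,b}), (l4,{a,t}), (l5,{b,t})}. ?c x = ?c y" using dfacts by (simp add: adj_rel_insert)
  have p_s: "(s, s) \<in> (adj_rel {(l1,{s,a}), (l2,{s,b}), (l4,{a,t}), (l5,{b,t})})\<^sup>*"
    by (rule rtrancl_refl)
  have p_a: "(a, s) \<in> (adj_rel {(l1,{s,a}), (l2,{s,b}), (l4,{a,t}), (l5,{b,t})})\<^sup>*"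
    apply (rule converse_rtrancl_into_rtrancl[of a s])
     apply (simp add: adj_rel_insert)
    by (rule rtrancl_refl)
  have p_b: "(b, s) \<in> (adj_rel {(l1,{s,a}), (l2,{s,b}), (l4,{a,t}), (l5,{b,t})})\<^sup>*"
    apply (rule converse_rtrancl_into_rtrancl[of b s])
     apply (simp add: adj_rel_insert)
    by (rule rtrancl_refl)
  have p_t: "(t, s) \<in> (adj_rel {(l1,{s,a}), (l2,{s,b}), (l4,{a,t}), (l5,{b,t})})\<^sup>*"
    apply (rule converse_rtrancl_into_rtrancl[of t a])
     apply (simp add: adj_rel_insert)
    apply (rule converse_rtrancl_into_rtrancl[of a s])
     apply (simp add: adj_rel_insert)
    by (rule rtrancl_refl)
  have h2: "\<forall>x\<in>{s,a,b,t}. (x, ?c x) \<in> (adj_rel {(l1,{s,a}), (l2,{s,b}), (l4,{a,t}), (l5,{b,t})})\<^sup>*" using p_s p_a p_b p_t dfacts by simp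
  show "num_comps {s,a,b,t} {(l1,{s,a}), (l2,{s,b}), (l4,{a,t}), (l5,{b,t})} = 1" using label_all(1)[OF h1 h2] dfacts by (simp add: numeral_eq_Suc card_insert_if)
  show "((s,t) \<in> conn_rel {s,a,b,t} {(l1,{s,a}), (l2,{s,b}), (l4,{a,t}), (l5,{b,t})}) = True" using label_all(2)[OF h1 h2, of s t] dfacts by simp
qed

lemma ws_1345: "num_comps {s,a,b,t} {(l1,{s,a}), (l3,{a,b}), (l4,{a,t}), (l5,{b,t})} = 1" "((s,t) \<in> conn_rel {s,a,b,t} {(l1,{s,a}), (l3,{a,b}), (l4,{a,t}), (l5,{b,t})}) = True"
proof -
  let ?c = "(\<lambda>x. if x = s then s else if x = a then s else if x = b then s else s)"
  have h1: "\<forall>(x,y)\<in>adj_rel {(l1,{s,a}), (l3,{a,b}), (l4,{a,t}), (l5,{b,t})}. ?c x = ?c y" using dfacts by (simp add: adj_rel_insert)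
  have p_s: "(s, s) \<in> (adj_rel {(l1,{s,a}), (l3,{a,b}), (l4,{a,t}), (l5,{b,t})})\<^sup>*"
    by (rule rtrancl_refl)
  have p_a: "(a, s) \<in> (adj_rel {(l1,{s,a}), (l3,{a,b}), (l4,{a,t}), (l5,{b,t})})\<^sup>*"
    apply (rule converse_rtrancl_into_rtrancl[of a s])
     apply (simp add: adj_rel_insert)
    by (rule rtrancl_refl)
  have p_b: "(b, s) \<in> (adj_rel {(l1,{s,a}), (l3,{a,b}), (l4,{a,t}), (l5,{b,t})})\<^sup>*"
    apply (rule converse_rtrancl_into_rtrancl[of b a])
     apply (simp add: adj_rel_insert)
    apply (rule converse_rtrancl_into_rtrancl[of a s])
     apply (simp add: adj_rel_insert)
    by (rule rtrancl_refl)
  have p_t: "(t, s) \<in> (adj_rel {(l1,{s,a}), (l3,{a,b}), (l4,{a,t}), (l5,{b,t})})\<^sup>*"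
    apply (rule converse_rtrancl_into_rtrancl[of t a])
     apply (simp add: adj_rel_insert)
    apply (rule converse_rtrancl_into_rtrancl[of a s])
     apply (simp add: adj_rel_insert)
    by (rule rtrancl_refl)
  have h2: "\<forall>x\<in>{s,a,b,t}. (x, ?c x) \<in> (adj_rel {(l1,{s,a}), (l3,{a,b}), (l4,{a,t}), (l5,{b,t})})\<^sup>*" using p_s p_a p_b p_t dfacts by simp
  show "num_comps {s,a,b,t} {(l1,{s,a}), (l3,{a,b}), (l4,{a,t}), (l5,{b,t})} = 1" using label_all(1)[OF h1 h2] dfacts by (simp add: numeral_eq_Suc card_insert_if)
  show "((s,t) \<in> conn_rel {s,a,b,t} {(l1,{s,a}), (l3,{a,b}), (l4,{a,t}), (l5,{b,t})}) = True" using label_all(2)[OF h1 h2, of s t] dfacts by simp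
qed

lemma ws_2345: "num_comps {s,a,b,t} {(l2,{s,b}), (l3,{a,b}), (l4,{a,t}), (l5,{b,t})} = 1" "((s,t) \<in> conn_rel {s,a,b,t} {(l2,{s,b}), (l3,{a,b}), (l4,{a,t}), (l5,{b,t})}) = True"
proof -
  let ?c = "(\<lambda>x. if x = s then s else if x = a then s else if x = b then s else s)"
  have h1: "\<forall>(x,y)\<in>adj_rel {(l2,{s,b}), (l3,{a,b}), (l4,{a,t}), (l5,{b,t})}. ?c x = ?c y" using dfacts by (simp add: adj_rel_insert)
  have p_s: "(s, s) \<in> (adj_rel {(l2,{s,b}), (l3,{a,b}), (l4,{a,t}), (l5,{b,t})})\<^sup>*"
    by (rule rtrancl_refl)
  have p_a: "(a, s) \<in> (adj_rel {(l2,{s,b}), (l3,{a,b}), (l4,{a,t}), (l5,{b,t})})\<^sup>*"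
    apply (rule converse_rtrancl_into_rtrancl[of a b])
     apply (simp add: adj_rel_insert)
    apply (rule converse_rtrancl_into_rtrancl[of b s])
     apply (simp add: adj_rel_insert)
    by (rule rtrancl_refl)
  have p_b: "(b, s) \<in> (adj_rel {(l2,{s,b}), (l3,{a,b}), (l4,{a,t}), (l5,{b,t})})\<^sup>*"
    apply (rule converse_rtrancl_into_rtrancl[of b s])
     apply (simp add: adj_rel_insert)
    by (rule rtrancl_refl)
  have p_t: "(t, s) \<in> (adj_rel {(l2,{s,b}), (l3,{a,b}), (l4,{a,t}), (l5,{b,t})})\<^sup>*"
    apply (rule converse_rtrancl_into_rtrancl[of t b])
     apply (simp add: adj_rel_insert)
    apply (rule converse_rtrancl_into_rtrancl[of b s])
     apply (simp add: adj_rel_insert)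
    by (rule rtrancl_refl)
  have h2: "\<forall>x\<in>{s,a,b,t}. (x, ?c x) \<in> (adj_rel {(l2,{s,b}), (l3,{a,b}), (l4,{a,t}), (l5,{b,t})})\<^sup>*" using p_s p_a p_b p_t dfacts by simp
  show "num_comps {s,a,b,t} {(l2,{s,b}), (l3,{a,b}), (l4,{a,t}), (l5,{b,t})} = 1" using label_all(1)[OF h1 h2] dfacts by (simp add: numeral_eq_Suc card_insert_if)
  show "((s,t) \<in> conn_rel {s,a,b,t} {(l2,{s,b}), (l3,{a,b}), (l4,{a,t}), (l5,{b,t})}) = True" using label_all(2)[OF h1 h2, of s t] dfacts by simp
qed

lemma ws_12345: "num_comps {s,a,b,t} {(l1,{s,a}), (l2,{s,b}), (l3,{a,b}), (l4,{a,t}), (l5,{b,t})} = 1" "((s,t) \<in> conn_rel {s,a,b,t} {(l1,{s,a}), (l2,{s,b}), (l3,{a,b}), (l4,{a,t}), (l5,{b,t})}) = True"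
proof -
  let ?c = "(\<lambda>x. if x = s then s else if x = a then s else if x = b then s else s)"
  have h1: "\<forall>(x,y)\<in>adj_rel {(l1,{s,a}), (l2,{s,b}), (l3,{a,b}), (l4,{a,t}), (l5,{b,t})}. ?c x = ?c y" using dfacts by (simp add: adj_rel_insert)
  have p_s: "(s, s) \<in> (adj_rel {(l1,{s,a}), (l2,{s,b}), (l3,{a,b}), (l4,{a,t}), (l5,{b,t})})\<^sup>*"
    by (rule rtrancl_refl)
  have p_a: "(a, s) \<in> (adj_rel {(l1,{s,a}), (l2,{s,b}), (l3,{a,b}), (l4,{a,t}), (l5,{b,t})})\<^sup>*"
    apply (rule converse_rtrancl_into_rtrancl[of a s])
     apply (simp add: adj_rel_insert)
    by (rule rtrancl_refl)
  have p_b: "(b, s) \<in> (adj_rel {(l1,{s,a}), (l2,{s,b}), (l3,{a,b}), (l4,{a,t}), (l5,{b,t})})\<^sup>*"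
    apply (rule converse_rtrancl_into_rtrancl[of b s])
     apply (simp add: adj_rel_insert)
    by (rule rtrancl_refl)
  have p_t: "(t, s) \<in> (adj_rel {(l1,{s,a}), (l2,{s,b}), (l3,{a,b}), (l4,{a,t}), (l5,{b,t})})\<^sup>*"
    apply (rule converse_rtrancl_into_rtrancl[of t a])
     apply (simp add: adj_rel_insert)
    apply (rule converse_rtrancl_into_rtrancl[of a s])
     apply (simp add: adj_rel_insert)
    by (rule rtrancl_refl)
  have h2: "\<forall>x\<in>{s,a,b,t}. (x, ?c x) \<in> (adj_rel {(l1,{s,a}), (l2,{s,b}), (l3,{a,b}), (l4,{a,t}), (l5,{b,t})})\<^sup>*" using p_s p_a p_b p_t dfacts by simp
  show "num_comps {s,a,b,t} {(l1,{s,a}), (l2,{s,b}), (l3,{a,b}), (l4,{a,t}), (l5,{b,t})} = 1" using label_all(1)[OF h1 h2] dfacts by (simp add: numeral_eq_Suc card_insert_if)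
  show "((s,t) \<in> conn_rel {s,a,b,t} {(l1,{s,a}), (l2,{s,b}), (l3,{a,b}), (l4,{a,t}), (l5,{b,t})}) = True" using label_all(2)[OF h1 h2, of s t] dfacts by simp
qed

lemma W_CP: "chrom_poly {s,a,b,t} {(l1,{s,a}), (l2,{s,b}), (l3,{a,b}), (l4,{a,t}), (l5,{b,t})} q = (-4) * q ^ 1 + (8) * q ^ 2 + (-5) * q ^ 3 + (1) * q ^ 4"
  unfolding chrom_poly_def
  by (simp add: sum_Pow_insert efacts dfacts doubleton_eq_iff ws_0 ws_1 ws_2 ws_3 ws_4 ws_5 ws_12 ws_13 ws_14 ws_15 ws_23 ws_24 ws_25 ws_34 ws_35 ws_45 ws_123 ws_124 ws_125 ws_134 ws_135 ws_145 ws_234 ws_235 ws_245 ws_345 ws_1234 ws_1235 ws_1245 ws_1345 ws_2345 ws_12345)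

lemma W_CS: "CS {s,a,b,t} {(l1,{s,a}), (l2,{s,b}), (l3,{a,b}), (l4,{a,t}), (l5,{b,t})} s t q = (-4) * q ^ 1 + (2) * q ^ 2"
  unfolding CS_def
  by (simp add: sum_Pow_insert efacts dfacts doubleton_eq_iff ws_0 ws_1 ws_2 ws_3 ws_4 ws_5 ws_12 ws_13 ws_14 ws_15 ws_23 ws_24 ws_25 ws_34 ws_35 ws_45 ws_123 ws_124 ws_125 ws_134 ws_135 ws_145 ws_234 ws_235 ws_245 ws_345 ws_1234 ws_1235 ws_1245 ws_1345 ws_2345 ws_12345)

end


lemma inW_basic: "inW V E s t \<Longrightarrow> finite V \<and> finite E \<and> wfE V E \<and> s \<in> V \<and> t \<in> V \<and> s \<noteq> t"
proof (induction rule: inW.induct)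
  case (K2 s t l)
  then show ?case unfolding wfE_def by auto
next
  case (Wheatstone s a b t l1 l2 l3 l4 l5)
  then show ?case unfolding wfE_def by auto
next
  case (parallel V1 E1 s t V2 E2)
  then show ?case using wf_union by auto
next
  case (series V1 E1 s m V2 E2 t)
  then show ?case using wf_union by auto
qed

definition pathfam :: "'a set \<Rightarrow> ('a,'b) edge set \<Rightarrow> 'a \<Rightarrow> 'a \<Rightarrow> ('a list \<times> ('a,'b) edge list) list \<Rightarrow> bool" where
  "pathfam V E x y P \<longleftrightarrow> (\<forall>i < length P. is_path V E x y (fst (P ! i)) (snd (P ! i))) \<and>
      (\<forall>i < length P. \<forall>j < length P. i \<noteq> j \<longrightarrow> set (snd (P ! i)) \<inter> set (snd (P ! j)) = {})"

lemma is_path_mono: "is_path V E x y vs es \<Longrightarrow> V \<subseteq> V' \<Longrightarrow> E \<subseteq> E' \<Longrightarrow> is_path V' E' x y vs es"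
  unfolding is_path_def by auto

lemma is_path_edges: "is_path V E x y vs es \<Longrightarrow> set es \<subseteq> E"
  unfolding is_path_def by (metis in_set_conv_nth subsetI)

lemma is_path_verts: "is_path V E x y vs es \<Longrightarrow> set vs \<subseteq> V"
  unfolding is_path_def by auto

lemma is_path_ends: "is_path V E x y vs es \<Longrightarrow> x \<in> set vs \<and> y \<in> set vs"
  unfolding is_path_def by auto

lemma is_path_ne: "is_path V E x y vs es \<Longrightarrow> x \<noteq> y \<Longrightarrow> es \<noteq> []"
  unfolding is_path_def by (cases vs) auto

lemma path_rev:
  assumes "is_path V E x y vs es" shows "is_path V E y x (rev vs) (rev es)"
proof -
  have p: "vs \<noteq> []" "hd vs = x" "last vs = y" "distinct vs" "set vs \<subseteq> V" "length vs = Suc (length es)"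
    "\<And>i. i < length es \<Longrightarrow> es ! i \<in> E \<and> snd (es ! i) = {vs ! i, vs ! Suc i}"
    using assms unfolding is_path_def by auto
  show ?thesis unfolding is_path_def
  proof (intro conjI allI impI)
    show "rev vs \<noteq> []" "distinct (rev vs)" "set (rev vs) \<subseteq> V" "length (rev vs) = Suc (length (rev es))"
      using p by auto
    show "hd (rev vs) = y" using p by (simp add: hd_rev)
    show "last (rev vs) = x" using p by (simp add: last_rev)
    fix i assume i: "i < length (rev es)"
    let ?j = "length es - Suc i"
    have j: "?j < length es" using i by simp
    have e: "rev es ! i = es ! ?j" using i by (simp add: rev_nth)
    have v1: "rev vs ! i = vs ! Suc ?j" using i p(6) by (simp add: rev_nth Suc_diff_Suc)
    have v2: "rev vs ! Suc i = vs ! ?j" using i p(6) by (simp add: rev_nth)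
    show "rev es ! i \<in> E" using p(7)[OF j] e by simp
    show "snd (rev es ! i) = {rev vs ! i, rev vs ! Suc i}" using p(7)[OF j] e v1 v2 by (simp add: insert_commute)
  qed
qed

lemma path_concat:
  assumes p1: "is_path V E x y vs1 es1" and p2: "is_path V E y z vs2 es2"
    and d: "set vs1 \<inter> set vs2 = {y}"
  shows "is_path V E x z (vs1 @ tl vs2) (es1 @ es2)"
proof -
  have a: "vs1 \<noteq> []" "hd vs1 = x" "last vs1 = y" "distinct vs1" "set vs1 \<subseteq> V" "length vs1 = Suc (length es1)"
    "\<And>i. i < length es1 \<Longrightarrow> es1 ! i \<in> E \<and> snd (es1 ! i) = {vs1 ! i, vs1 ! Suc i}"
    using p1 unfolding is_path_def by auto
  have b: "vs2 \<noteq> []" "hd vs2 = y" "last vs2 = z" "distinct vs2" "set vs2 \<subseteq> V" "length vs2 = Suc (length es2)"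
    "\<And>i. i < length es2 \<Longrightarrow> es2 ! i \<in> E \<and> snd (es2 ! i) = {vs2 ! i, vs2 ! Suc i}"
    using p2 unfolding is_path_def by auto
  obtain w ws where vs2: "vs2 = w # ws" using b(1) by (cases vs2) auto
  have w: "w = y" using b(2) vs2 by simp
  have last1: "vs1 ! length es1 = y" using a(1,3,6) by (simp add: last_conv_nth)
  have idx: "(vs1 @ tl vs2) ! (length es1 + j) = vs2 ! j" if "j \<le> length es2" for j
  proof (cases j)
    case 0 then show ?thesis using a(6) last1 vs2 w by (simp add: nth_append)
  next
    case (Suc k) then show ?thesis using a(6) vs2 by (simp add: nth_append)
  qed
  show ?thesis unfolding is_path_def
  proof (intro conjI allI impI)
    show "vs1 @ tl vs2 \<noteq> []" using a(1) by simp
    show "hd (vs1 @ tl vs2) = x" using a(1,2) by simp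
    show "last (vs1 @ tl vs2) = z"
    proof (cases ws)
      case Nil then show ?thesis using a(3) b(3) vs2 w by simp
    next
      case (Cons u us) then show ?thesis using b(3) vs2 by simp
    qed
    show "distinct (vs1 @ tl vs2)" using a(4) b(4) d vs2 w by auto
    show "set (vs1 @ tl vs2) \<subseteq> V" using a(5) b(5) vs2 by auto
    show "length (vs1 @ tl vs2) = Suc (length (es1 @ es2))" using a(6) b(6) vs2 by simp
    fix i assume i: "i < length (es1 @ es2)"
    have goal: "(es1 @ es2) ! i \<in> E \<and> snd ((es1 @ es2) ! i) = {(vs1 @ tl vs2) ! i, (vs1 @ tl vs2) ! Suc i}"
    proof (cases "i < length es1")
      case True
      then show ?thesis using a(6,7) by (simp add: nth_append)
    next
      case False
      define j where "j = i - length es1"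
      have ij: "i = length es1 + j" and j: "j < length es2" using False i unfolding j_def by auto
      have "(es1 @ es2) ! i = es2 ! j" using ij by (simp add: nth_append)
      moreover have "(vs1 @ tl vs2) ! i = vs2 ! j" using idx[of j] j ij by simp
      moreover have "(vs1 @ tl vs2) ! Suc i = vs2 ! Suc j" using idx[of "Suc j"] j ij by simp
      ultimately show ?thesis using b(7)[OF j] by simp
    qed
    then show "(es1 @ es2) ! i \<in> E" by simp
    from goal show "snd ((es1 @ es2) ! i) = {(vs1 @ tl vs2) ! i, (vs1 @ tl vs2) ! Suc i}" by simp
  qed
qed

lemma pathfam_mono: "pathfam V E x y P \<Longrightarrow> V \<subseteq> V' \<Longrightarrow> E \<subseteq> E' \<Longrightarrow> pathfam V' E' x y P"
  unfolding pathfam_def by (metis is_path_mono)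

lemma pathfam_edges: "pathfam V E x y P \<Longrightarrow> p \<in> set P \<Longrightarrow> set (snd p) \<subseteq> E"
  unfolding pathfam_def by (auto simp: in_set_conv_nth dest!: is_path_edges)

lemma pathfam_append:
  assumes "pathfam V E x y P1" "pathfam V E x y P2"
    and "\<And>p p'. p \<in> set P1 \<Longrightarrow> p' \<in> set P2 \<Longrightarrow> set (snd p) \<inter> set (snd p') = {}"
  shows "pathfam V E x y (P1 @ P2)"
  unfolding pathfam_def
proof (intro conjI allI impI)
  fix i assume i: "i < length (P1 @ P2)"
  show "is_path V E x y (fst ((P1 @ P2) ! i)) (snd ((P1 @ P2) ! i))"
    using assms(1,2) i unfolding pathfam_def by (cases "i < length P1") (auto simp: nth_append)
next
  fix i j assume i: "i < length (P1 @ P2)" and j: "j < length (P1 @ P2)" and ij: "i \<noteq> j"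
  have m1: "P1 ! k \<in> set P1" if "k < length P1" for k using that by simp
  have m2: "P2 ! k \<in> set P2" if "k < length P2" for k using that by simp
  show "set (snd ((P1 @ P2) ! i)) \<inter> set (snd ((P1 @ P2) ! j)) = {}"
  proof (cases "i < length P1"; cases "j < length P1")
    assume "i < length P1" "j < length P1"
    then show ?thesis using assms(1) ij unfolding pathfam_def by (simp add: nth_append)
  next
    assume a: "i < length P1" "\<not> j < length P1"
    then show ?thesis using assms(3)[OF m1[of i] m2[of "j - length P1"]] j by (simp add: nth_append)
  next
    assume a: "\<not> i < length P1" "j < length P1"
    then show ?thesis using assms(3)[OF m1[of j] m2[of "i - length P1"]] i by (simp add: nth_append inf_commute)
  next
    assume a: "\<not> i < length P1" "\<not> j < length P1"
    then show ?thesis using assms(2) ij i j unfolding pathfam_def by (simp add: nth_append)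
  qed
qed

lemma pathfam_single: "is_path V E x y vs es \<Longrightarrow> pathfam V E x y [(vs,es)]"
  unfolding pathfam_def by simp

lemma pathfam_bound:
  assumes fin: "finite E" and xy: "x \<noteq> y" and P: "pathfam V E x y P"
  shows "length P \<le> card E"
proof -
  have ne: "snd (P ! i) \<noteq> []" if "i < length P" for i
    using P that xy is_path_ne unfolding pathfam_def by metis
  define g where "g = (\<lambda>i. hd (snd (P ! i)))"
  have inE: "g i \<in> E" if "i < length P" for i
  proof -
    have "g i \<in> set (snd (P ! i))" unfolding g_def using ne[OF that] by simp
    moreover have "set (snd (P ! i)) \<subseteq> E" using P that unfolding pathfam_def by (auto dest: is_path_edges)
    ultimately show ?thesis by auto
  qed
  have "inj_on g {..<length P}"
  proof (rule inj_onI)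
    fix i j assume i: "i \<in> {..<length P}" and j: "j \<in> {..<length P}" and e: "g i = g j"
    show "i = j"
    proof (rule ccontr)
      assume "i \<noteq> j"
      then have "set (snd (P ! i)) \<inter> set (snd (P ! j)) = {}" using P i j unfolding pathfam_def by auto
      moreover have "g i \<in> set (snd (P ! i))" "g j \<in> set (snd (P ! j))" unfolding g_def using ne i j by auto
      ultimately show False using e by auto
    qed
  qed
  then have c: "card (g ` {..<length P}) = length P" by (simp add: card_image)
  have sub: "g ` {..<length P} \<subseteq> E" using inE by auto
  have "card (g ` {..<length P}) \<le> card E" by (rule card_mono[OF fin sub])
  then show ?thesis using c by simp
qed

lemma pathfam_le_mmf:
  assumes fV: "finite V" and fE: "finite E" and x: "x \<in> V" and y: "y \<in> V" and xy: "x \<noteq> y"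
    and P: "pathfam V E x y P"
  shows "length P \<le> maxmaxflow V E"
proof -
  let ?S = "{n. \<exists>P :: ('a list \<times> ('a,'b) edge list) list.
      length P = n \<and> (\<forall>i < n. is_path V E x y (fst (P ! i)) (snd (P ! i))) \<and>
      (\<forall>i < n. \<forall>j < n. i \<noteq> j \<longrightarrow> set (snd (P ! i)) \<inter> set (snd (P ! j)) = {})}"
  have "?S \<subseteq> {..card E}"
  proof
    fix n assume "n \<in> ?S"
    then obtain Q :: "('a list \<times> ('a,'b) edge list) list" where "length Q = n" "pathfam V E x y Q"
      unfolding pathfam_def by auto
    then show "n \<in> {..card E}" using pathfam_bound[OF fE xy] by auto
  qed
  then have finS: "finite ?S" by (rule finite_subset) simp
  have "length P \<in> ?S" using P unfolding pathfam_def by auto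
  then have "length P \<le> local_edge_conn V E x y" unfolding local_edge_conn_def using finS by (rule Max_ge[rotated])
  also have "\<dots> \<le> maxmaxflow V E" unfolding maxmaxflow_def
  proof (rule Max_ge)
    have "{local_edge_conn V E x y |x y. x \<in> V \<and> y \<in> V \<and> x \<noteq> y} \<subseteq> (\<lambda>(x,y). local_edge_conn V E x y) ` (V \<times> V)"
      by auto
    then show "finite {local_edge_conn V E x y |x y. x \<in> V \<and> y \<in> V \<and> x \<noteq> y}"
      by (rule finite_subset) (use fV in simp)
    show "local_edge_conn V E x y \<in> {local_edge_conn V E x y |x y. x \<in> V \<and> y \<in> V \<and> x \<noteq> y}"
      using x y xy by auto
  qed
  finally show ?thesis .
qed

lemma inW_path: "inW V E s t \<Longrightarrow> \<exists>vs es. is_path V E s t vs es"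
proof (induction rule: inW.induct)
  case (K2 s t l)
  have "is_path {s,t} {(l,{s,t})} s t [s,t] [(l,{s,t})]" using K2 unfolding is_path_def by auto
  then show ?case by blast
next
  case (Wheatstone s a b t l1 l2 l3 l4 l5)
  have "is_path {s,a,b,t} {(l1, {s, a}), (l2, {s, b}), (l3, {a, b}), (l4, {a, t}), (l5, {b, t})} s t [s,a,t] [(l1,{s,a}),(l4,{a,t})]"
    using Wheatstone unfolding is_path_def by (auto simp: less_Suc_eq)
  then show ?case by blast
next
  case (parallel V1 E1 s t V2 E2)
  then obtain vs es where "is_path V1 E1 s t vs es" by blast
  then have "is_path (V1 \<union> V2) (E1 \<union> E2) s t vs es" by (rule is_path_mono) auto
  then show ?case by blast
next
  case (series V1 E1 s m V2 E2 t)
  obtain vs1 es1 where p1: "is_path V1 E1 s m vs1 es1" using series by blast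
  obtain vs2 es2 where p2: "is_path V2 E2 m t vs2 es2" using series by blast
  have q1: "is_path (V1 \<union> V2) (E1 \<union> E2) s m vs1 es1" by (rule is_path_mono[OF p1]) auto
  have q2: "is_path (V1 \<union> V2) (E1 \<union> E2) m t vs2 es2" by (rule is_path_mono[OF p2]) auto
  have "set vs1 \<inter> set vs2 = {m}" using is_path_verts[OF p1] is_path_verts[OF p2] is_path_ends[OF p1] is_path_ends[OF p2] series.hyps(3)
    by auto
  then show ?case using path_concat[OF q1 q2] by blast
qed


definition phi :: "nat \<Rightarrow> real \<Rightarrow> real" where
  "phi L r = real L * ln (1 + r) - (real L - 1) * ln (1 + r^2) - ln 2"

definition dphi :: "nat \<Rightarrow> real \<Rightarrow> real" where
  "dphi L r = real L / (1 + r) - (real L - 1) * (2 * r) / (1 + r^2)"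

lemma phi_deriv: assumes "r > -1" shows "(phi L has_real_derivative dphi L r) (at r)"
proof -
  have p1: "1 + r > 0" using assms by simp
  have p2: "1 + r^2 > 0" by (simp add: add_pos_nonneg)
  have d1: "((\<lambda>r. ln (1 + r)) has_real_derivative (1 / (1 + r))) (at r)"
    using p1 by (auto intro!: derivative_eq_intros)
  have d2: "((\<lambda>r. ln (1 + r^2)) has_real_derivative ((2 * r) / (1 + r^2))) (at r)"
    using p2 by (auto intro!: derivative_eq_intros simp: power2_eq_square)
  have "((\<lambda>r. real L * ln (1 + r) - (real L - 1) * ln (1 + r^2) - ln 2) has_real_derivative
     (real L * (1 / (1 + r)) - (real L - 1) * ((2 * r) / (1 + r^2)) - 0)) (at r)"
    by (intro DERIV_diff DERIV_cmult d1 d2 DERIV_const)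
  then show ?thesis unfolding phi_def dphi_def by simp
qed

lemma phi_cont: assumes "r > -1" shows "isCont (phi L) r"
  using phi_deriv[OF assms] by (rule DERIV_isCont)

lemma phi_le_iff:
  assumes L: "L \<ge> 1" and r: "r > -1"
  shows "(1 + r)^L \<le> 2 * (1 + r^2)^(L - 1) \<longleftrightarrow> phi L r \<le> 0"
    and "(1 + r)^L = 2 * (1 + r^2)^(L - 1) \<longleftrightarrow> phi L r = 0"
proof -
  have p1: "1 + r > 0" using r by simp
  have p2: "1 + r^2 > 0" by (simp add: add_pos_nonneg)
  have lA: "ln ((1 + r)^L) = real L * ln (1 + r)" using p1 by (simp add: ln_realpow)
  have lB: "ln (2 * (1 + r^2)^(L - 1)) = ln 2 + (real L - 1) * ln (1 + r^2)"
    using p2 L by (simp add: ln_mult ln_realpow of_nat_diff)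
  have A: "(1 + r)^L > 0" using p1 by simp
  have B: "2 * (1 + r^2)^(L - 1) > 0" using p2 by simp
  show "(1 + r)^L \<le> 2 * (1 + r^2)^(L - 1) \<longleftrightarrow> phi L r \<le> 0"
    using ln_le_cancel_iff[OF A B] lA lB unfolding phi_def by linarith
  show "(1 + r)^L = 2 * (1 + r^2)^(L - 1) \<longleftrightarrow> phi L r = 0"
    using ln_inj_iff[OF A B] lA lB unfolding phi_def by linarith
qed

lemma phi_0: "phi L 0 < 0" unfolding phi_def by simp

lemma phi_1: assumes "L \<ge> 1" shows "phi L 1 = 0"
  unfolding phi_def using assms by (simp add: algebra_simps of_nat_diff)

lemma half_ineq: "(3/2::real)^(n+3) > 2 * (5/4)^(n+2)"
proof (induction n)
  case 0 then show ?case by (simp add: power_divide)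
next
  case (Suc n)
  have "2 * (5/4::real)^(Suc n + 2) = (5/4) * (2 * (5/4)^(n+2))" by simp
  also have "\<dots> < (5/4) * (3/2)^(n+3)" using Suc by simp
  also have "\<dots> \<le> (3/2) * (3/2)^(n+3)" by simp
  also have "\<dots> = (3/2)^(Suc n + 3)" by (simp only: add_Suc power_Suc)
  finally show ?case .
qed

lemma phi_half: assumes "L \<ge> 3" shows "phi L (1/2) > 0"
proof -
  obtain n where n: "L = n + 3" using assms by (metis add.commute le_iff_add)
  have "(1 + 1/2::real)^L > 2 * (1 + (1/2)^2)^(L - 1)"
    using half_ineq[of n] unfolding n by (simp add: numeral_eq_Suc)
  then have "\<not> phi L (1/2) \<le> 0" using phi_le_iff(1)[of L "1/2"] assms by simp
  then show ?thesis by simp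
qed

lemma dphi_decr:
  assumes L: "L \<ge> 3" and xy: "0 \<le> x" "x < y" "y \<le> 1"
  shows "dphi L y < dphi L x"
proof -
  have a: "real L / (1 + y) < real L / (1 + x)" using L xy by (simp add: frac_less2)
  have b: "x / (1 + x^2) \<le> y / (1 + y^2)"
  proof -
    have "x * (1 + y^2) \<le> y * (1 + x^2)"
    proof -
      have "y * (1 + x^2) - x * (1 + y^2) = (y - x) * (1 - x * y)" by (simp add: algebra_simps power2_eq_square)
      moreover have "x * y \<le> 1" using xy by (intro mult_le_one) auto
      ultimately have "y * (1 + x^2) - x * (1 + y^2) \<ge> 0" using xy by simp
      then show ?thesis by simp
    qed
    then show ?thesis by (simp add: field_simps add_pos_nonneg)
  qed
  have c: "(real L - 1) * (2 * x) / (1 + x^2) \<le> (real L - 1) * (2 * y) / (1 + y^2)"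
  proof -
    have "(real L - 1) * (2 * x) / (1 + x^2) = 2 * (real L - 1) * (x / (1 + x^2))" by simp
    also have "\<dots> \<le> 2 * (real L - 1) * (y / (1 + y^2))" using b L by (intro mult_left_mono) auto
    also have "\<dots> = (real L - 1) * (2 * y) / (1 + y^2)" by simp
    finally show ?thesis .
  qed
  show ?thesis unfolding dphi_def using a c by linarith
qed

lemma phi_root_unique:
  assumes L: "L \<ge> 3" and r1: "0 < r1" "r1 < r2" "r2 < 1" and z: "phi L r1 = 0" "phi L r2 = 0"
  shows False
proof -
  have cont: "continuous_on {a..b} (phi L)" if "a > -1" for a b
    by (rule continuous_at_imp_continuous_on) (use that phi_cont in auto)
  have diff: "phi L differentiable (at x)" if "x > -1" for x
    unfolding real_differentiable_def using phi_deriv[OF that] by blast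
  have c12: "continuous_on {r1..r2} (phi L)" using cont[of r1 r2] r1 by simp
  have c21: "continuous_on {r2..1} (phi L)" using cont[of r2 1] r1 by simp
  have d12: "\<And>x. r1 < x \<Longrightarrow> x < r2 \<Longrightarrow> phi L differentiable (at x)" using diff r1 by simp
  have d21: "\<And>x. r2 < x \<Longrightarrow> x < 1 \<Longrightarrow> phi L differentiable (at x)" using diff r1 by simp
  obtain z1 where z1: "r1 < z1" "z1 < r2" "DERIV (phi L) z1 :> 0"
    using Rolle[OF r1(2) _ c12 d12] z by force
  obtain z2 where z2: "r2 < z2" "z2 < 1" "DERIV (phi L) z2 :> 0"
    using Rolle[OF r1(3) _ c21 d21] z phi_1[of L] L by force
  have "dphi L z1 = 0" using DERIV_unique[OF z1(3) phi_deriv[of z1]] r1 z1 by simp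
  moreover have "dphi L z2 = 0" using DERIV_unique[OF z2(3) phi_deriv[of z2]] r1 z1 z2 by simp
  moreover have "dphi L z2 < dphi L z1" by (rule dphi_decr[OF L]) (use r1 z1 z2 in auto)
  ultimately show False by simp
qed

lemma phi_root_exists:
  assumes L: "L \<ge> 3"
  shows "\<exists>r. 0 < r \<and> r < 1 \<and> phi L r = 0"
proof -
  have "\<exists>x\<ge>0. x \<le> 1/2 \<and> phi L x = 0"
    by (rule IVT) (use phi_0[of L] phi_half[OF L] phi_cont in auto)
  then obtain x where x: "0 \<le> x" "x \<le> 1/2" "phi L x = 0" by blast
  have "x \<noteq> 0" using x phi_0[of L] by auto
  then show ?thesis using x by (intro exI[of _ x]) auto
qed

lemma rho_star_props:
  assumes L: "L \<ge> 3"
  shows "0 < rho_star L" "rho_star L < 1" "phi L (rho_star L) = 0"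
    "\<And>r. 0 < r \<Longrightarrow> r \<le> rho_star L \<Longrightarrow> (1 + r)^L \<le> 2 * (1 + r^2)^(L - 1)"
proof -
  let ?P = "\<lambda>r. 0 < r \<and> r < 1 \<and> (1 + r) ^ L = 2 * (1 + r\<^sup>2) ^ (L - 1)"
  have iff: "?P r \<longleftrightarrow> 0 < r \<and> r < 1 \<and> phi L r = 0" for r
    using phi_le_iff(2)[of L r] L by auto
  obtain r0 where r0: "0 < r0" "r0 < 1" "phi L r0 = 0" using phi_root_exists[OF L] by blast
  have uniq: "r = r0" if "0 < r" "r < 1" "phi L r = 0" for r
  proof (rule ccontr)
    assume "r \<noteq> r0"
    then consider "r < r0" | "r0 < r" by linarith
    then show False
    proof cases
      case 1 then show False using phi_root_unique[OF L that(1) 1 r0(2) that(3) r0(3)] by simp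
    next
      case 2 then show False using phi_root_unique[OF L r0(1) 2 that(2) r0(3) that(3)] by simp
    qed
  qed
  have "rho_star L = r0" unfolding rho_star_def
  proof (rule the_equality)
    show "?P r0" using iff[of r0] r0 by meson
    fix r :: real assume "?P r" then show "r = r0" using iff[of r] uniq[of r] by meson
  qed
  then show "0 < rho_star L" "rho_star L < 1" "phi L (rho_star L) = 0" using r0 by auto
  fix r assume r: "0 < r" "r \<le> rho_star L"
  have "phi L r \<le> 0"
  proof (rule ccontr)
    assume "\<not> phi L r \<le> 0"
    then have pos: "phi L r > 0" by simp
    have "\<exists>x\<ge>0. x \<le> r \<and> phi L x = 0"
      by (rule IVT) (use phi_0[of L] pos r phi_cont in auto)
    then obtain x where x: "0 \<le> x" "x \<le> r" "phi L x = 0" by blast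
    have "x \<noteq> 0" using x phi_0[of L] by auto
    then have "x = r0" using uniq[of x] x r \<open>rho_star L = r0\<close> r0 by auto
    then have "r = r0" using x r \<open>rho_star L = r0\<close> by simp
    then show False using pos r0 by simp
  qed
  then show "(1 + r)^L \<le> 2 * (1 + r^2)^(L - 1)" using phi_le_iff(1)[of L r] L r by simp
qed


lemma X_facts:
  assumes L: "L \<ge> 3" and r0: "0 < \<rho>" and r1: "\<rho> \<le> rho_star L"
    and X: "X = (2 / (1 + \<rho>)) powr (1 / (real L - 1))"
  shows "\<rho> < 1" "X > 1" "X ^ (L - 1) = 2 / (1 + \<rho>)" "(1 + \<rho>) / (1 + \<rho>^2) \<le> X"
    "X^2 \<le> 2 / (1 + \<rho>)" "\<rho> * X^2 < 1" "\<rho> * X < 1"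
proof -
  show rl: "\<rho> < 1" using r1 rho_star_props(2)[OF L] by simp
  have c1: "2 / (1 + \<rho>) > 1" using rl r0 by simp
  have e0: "1 / (real L - 1) > 0" using L by simp
  have "(2 / (1 + \<rho>)) powr 0 < (2 / (1 + \<rho>)) powr (1 / (real L - 1))"
    by (rule powr_less_mono[OF e0 c1])
  then show X1: "X > 1" using X c1 r0 by simp
  have "X ^ (L - 1) = X powr (real (L - 1))" using X1 by (simp add: powr_realpow)
  also have "\<dots> = (2 / (1 + \<rho>)) powr (1 / (real L - 1) * real (L - 1))" unfolding X by (simp add: powr_powr)
  also have "1 / (real L - 1) * real (L - 1) = 1" using L by (simp add: of_nat_diff)
  finally show XL: "X ^ (L - 1) = 2 / (1 + \<rho>)" using c1 r0 by simp
  have pr: "(1 + \<rho>)^L \<le> 2 * (1 + \<rho>^2)^(L - 1)" by (rule rho_star_props(4)[OF L r0 r1])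
  have q2: "1 + \<rho>^2 > 0" by (simp add: add_pos_nonneg)
  have "((1 + \<rho>) / (1 + \<rho>^2)) ^ (L - 1) = (1 + \<rho>)^(L - 1) / (1 + \<rho>^2)^(L - 1)" by (simp add: power_divide)
  also have "\<dots> \<le> 2 / (1 + \<rho>)"
  proof -
    have "(1 + \<rho>)^(L - 1) * (1 + \<rho>) = (1 + \<rho>)^L" using L by (metis Suc_diff_1 less_le_trans numeral_3_eq_3 power_Suc2 zero_less_Suc)
    then have "(1 + \<rho>)^(L - 1) * (1 + \<rho>) \<le> 2 * (1 + \<rho>^2)^(L - 1)" using pr by simp
    then show ?thesis using q2 r0 by (simp add: field_simps)
  qed
  finally have "((1 + \<rho>) / (1 + \<rho>^2)) ^ (L - 1) \<le> X ^ (L - 1)" using XL by simp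
  moreover have "L - 1 = Suc (L - 2)" using L by simp
  ultimately show "(1 + \<rho>) / (1 + \<rho>^2) \<le> X" using power_le_imp_le_base[of _ "L - 2" X] X1 by simp
  have "X^2 \<le> X^(L - 1)" by (rule power_increasing) (use L X1 in auto)
  then show X2: "X^2 \<le> 2 / (1 + \<rho>)" using XL by simp
  have "\<rho> * X^2 \<le> \<rho> * (2 / (1 + \<rho>))" by (rule mult_left_mono[OF X2]) (use r0 in simp)
  also have "\<dots> < 1" using r0 rl by (simp add: field_simps)
  finally show rx2: "\<rho> * X^2 < 1" .
  have "X \<le> X^2" using X1 by (simp add: power2_eq_square)
  then have "\<rho> * X \<le> \<rho> * X^2" using r0 by simp
  then show "\<rho> * X < 1" using rx2 by simp
qed

lemma par_bound:
  fixes w t1 t2 :: complex and \<rho> M1 M2 :: real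
  assumes r0: "0 < \<rho>" and r1: "\<rho> < 1" and w: "cmod w = 1 / \<rho>"
    and t1: "cmod t1 \<le> \<rho>" and t2: "cmod t2 \<le> \<rho>"
    and b1: "\<rho> + cmod t1 \<le> \<rho> * (1 + cmod t1) * M1" and b2: "\<rho> + cmod t2 \<le> \<rho> * (1 + cmod t2) * M2"
    and m1: "M1 \<ge> 0" and m2: "M2 \<ge> 0" and rm: "\<rho> * (M1 * M2) < 1"
  shows "1 + w * t1 * t2 \<noteq> 0"
    "\<rho> + cmod ((t1 + t2 + (w - 1) * t1 * t2) / (1 + w * t1 * t2)) \<le>
       \<rho> * (1 + cmod ((t1 + t2 + (w - 1) * t1 * t2) / (1 + w * t1 * t2))) * (M1 * M2)"
proof -
  define a where "a = cmod t1"
  define b where "b = cmod t2"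
  have a0: "a \<ge> 0" and b0: "b \<ge> 0" unfolding a_def b_def by auto
  have aR: "a \<le> \<rho>" and bR: "b \<le> \<rho>" using t1 t2 unfolding a_def b_def by auto
  define p where "p = a * b"
  have p0: "p \<ge> 0" unfolding p_def using a0 b0 by simp
  have pR: "p \<le> \<rho> * \<rho>" unfolding p_def using aR bR a0 b0 by (intro mult_mono) auto
  have pr: "p / \<rho> \<le> \<rho>" using pR r0 by (simp add: field_simps)
  have nz: "cmod (w * t1 * t2) = p / \<rho>" unfolding p_def a_def b_def using w by (simp add: norm_mult)
  define D0 where "D0 = 1 - p / \<rho>"
  have D0p: "D0 > 0" unfolding D0_def using pr r1 by simp
  have Dge: "cmod (1 + w * t1 * t2) \<ge> D0"
  proof -
    have "1 = cmod ((1 + w * t1 * t2) - w * t1 * t2)" by simp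
    also have "\<dots> \<le> cmod (1 + w * t1 * t2) + cmod (w * t1 * t2)" by (rule norm_triangle_ineq4)
    finally show ?thesis unfolding D0_def using nz by simp
  qed
  then show nzD: "1 + w * t1 * t2 \<noteq> 0" using D0p by auto
  define num where "num = a + b + (1 / \<rho> + 1) * p"
  have Nle: "cmod (t1 + t2 + (w - 1) * t1 * t2) \<le> num"
  proof -
    have i1: "cmod (t1 + t2 + (w - 1) * t1 * t2) \<le> cmod (t1 + t2) + cmod ((w - 1) * t1 * t2)"
      by (rule norm_triangle_ineq)
    have i2: "cmod (t1 + t2) \<le> cmod t1 + cmod t2" by (rule norm_triangle_ineq)
    have i3: "cmod ((w - 1) * t1 * t2) = cmod (w - 1) * p" unfolding p_def a_def b_def by (simp add: norm_mult)
    have i4: "cmod (w - 1) \<le> 1 / \<rho> + 1" using norm_triangle_ineq4[of w 1] w by simp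
    have i5: "cmod (w - 1) * p \<le> (1 / \<rho> + 1) * p" using i4 p0 by (rule mult_right_mono)
    show ?thesis unfolding num_def using i1 i2 i3 i5 unfolding a_def b_def by linarith
  qed
  define B where "B = num / D0"
  define \<tau> where "\<tau> = cmod ((t1 + t2 + (w - 1) * t1 * t2) / (1 + w * t1 * t2))"
  have tB: "\<tau> \<le> B"
  proof -
    have "\<tau> = cmod (t1 + t2 + (w - 1) * t1 * t2) / cmod (1 + w * t1 * t2)" unfolding \<tau>_def by (simp add: norm_divide)
    also have "\<dots> \<le> num / D0"
      by (rule frac_le) (use Nle Dge D0p norm_ge_zero[of "t1 + t2 + (w - 1) * t1 * t2"] in linarith)+
    finally show ?thesis unfolding B_def .
  qed
  have BD: "B * D0 = num" unfolding B_def using D0p by simp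
  have id1: "(\<rho> + B) * D0 = (\<rho> + a) * (\<rho> + b) / \<rho>"
  proof -
    have "(\<rho> + B) * D0 = \<rho> * D0 + num" using BD by (simp add: algebra_simps)
    also have "\<dots> = (\<rho> + a) * (\<rho> + b) / \<rho>" unfolding D0_def num_def p_def using r0 by (simp add: field_simps)
    finally show ?thesis .
  qed
  have id2: "\<rho> * (1 + B) * D0 = \<rho> * (1 + a) * (1 + b)"
  proof -
    have "\<rho> * (1 + B) * D0 = \<rho> * (D0 + num)" using BD by (simp add: algebra_simps)
    also have "\<dots> = \<rho> * (1 + a) * (1 + b)" unfolding D0_def num_def p_def using r0 by (simp add: field_simps)
    finally show ?thesis .
  qed
  have prod: "(\<rho> + a) * (\<rho> + b) \<le> (\<rho> * (1 + a) * M1) * (\<rho> * (1 + b) * M2)"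
  proof -
    have n1: "0 \<le> \<rho> * (1 + cmod t1) * M1" using r0 m1 by simp
    show ?thesis using b1 b2 a0 b0 r0 n1 unfolding a_def b_def by (intro mult_mono) auto
  qed
  have "(\<rho> + B) * D0 \<le> \<rho> * (1 + B) * (M1 * M2) * D0"
  proof -
    have "(\<rho> + a) * (\<rho> + b) / \<rho> \<le> (\<rho> * (1 + a) * M1) * (\<rho> * (1 + b) * M2) / \<rho>"
      by (rule divide_right_mono[OF prod]) (use r0 in simp)
    also have "\<dots> = \<rho> * (1 + a) * (1 + b) * (M1 * M2)" using r0 by (simp add: field_simps)
    finally have c: "(\<rho> + a) * (\<rho> + b) / \<rho> \<le> \<rho> * (1 + a) * (1 + b) * (M1 * M2)" .
    have "\<rho> * (1 + B) * (M1 * M2) * D0 = (\<rho> * (1 + B) * D0) * (M1 * M2)" by (simp only: mult_ac)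
    also have "\<dots> = \<rho> * (1 + a) * (1 + b) * (M1 * M2)" by (simp only: id2)
    finally have e2: "\<rho> * (1 + B) * (M1 * M2) * D0 = \<rho> * (1 + a) * (1 + b) * (M1 * M2)" .
    show ?thesis unfolding id1 e2 by (rule c)
  qed
  then have key: "\<rho> + B \<le> \<rho> * (1 + B) * (M1 * M2)" using D0p by simp
  have "\<rho> + \<tau> - \<rho> * (1 + \<tau>) * (M1 * M2) = \<rho> * (1 - M1 * M2) + \<tau> * (1 - \<rho> * (M1 * M2))" by (simp add: algebra_simps)
  also have "\<dots> \<le> \<rho> * (1 - M1 * M2) + B * (1 - \<rho> * (M1 * M2))" using tB rm by (simp add: mult_right_mono)
  also have "\<dots> = \<rho> + B - \<rho> * (1 + B) * (M1 * M2)" by (simp add: algebra_simps)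
  finally show "\<rho> + cmod ((t1 + t2 + (w - 1) * t1 * t2) / (1 + w * t1 * t2)) \<le>
       \<rho> * (1 + cmod ((t1 + t2 + (w - 1) * t1 * t2) / (1 + w * t1 * t2))) * (M1 * M2)"
    using key unfolding \<tau>_def by simp
qed

lemma ser_bound:
  fixes t1 t2 :: complex and \<rho> X :: real
  assumes r0: "0 < \<rho>" and r1: "\<rho> < 1" and rx: "\<rho> * X < 1" and xb: "(1 + \<rho>) / (1 + \<rho>^2) \<le> X"
    and t1: "cmod t1 \<le> \<rho>" and t2: "cmod t2 \<le> \<rho>"
  shows "cmod (t1 * t2) \<le> \<rho>" "\<rho> + cmod (t1 * t2) \<le> \<rho> * (1 + cmod (t1 * t2)) * X"
proof -
  define \<tau> where "\<tau> = cmod (t1 * t2)"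
  have tr: "\<tau> \<le> \<rho> * \<rho>" unfolding \<tau>_def norm_mult using t1 t2 r0 by (intro mult_mono) auto
  have "\<rho> * \<rho> \<le> \<rho>" using r0 r1 by simp
  then show "cmod (t1 * t2) \<le> \<rho>" using tr unfolding \<tau>_def by simp
  have q2: "1 + \<rho>^2 > 0" by (simp add: add_pos_nonneg)
  have xx: "1 + \<rho> \<le> X * (1 + \<rho>^2)" using xb q2 by (simp add: field_simps)
  have "0 \<le> \<rho> * (X * (1 + \<rho>^2) - (1 + \<rho>))" using xx r0 by simp
  also have "\<dots> = (\<rho> * X - \<rho>) + (\<rho> * \<rho>) * (\<rho> * X - 1)" by (simp add: algebra_simps power2_eq_square)
  also have "\<dots> \<le> (\<rho> * X - \<rho>) + \<tau> * (\<rho> * X - 1)"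
    using mult_right_mono_neg[OF tr, of "\<rho> * X - 1"] rx by simp
  also have "\<dots> = \<rho> * (1 + \<tau>) * X - (\<rho> + \<tau>)" by (simp add: algebra_simps)
  finally have "0 \<le> \<rho> * (1 + \<tau>) * X - (\<rho> + \<tau>)" .
  then show "\<rho> + cmod (t1 * t2) \<le> \<rho> * (1 + cmod (t1 * t2)) * X" unfolding \<tau>_def by simp
qed

lemma tau_le:
  fixes \<rho> \<tau> M :: real
  assumes r0: "0 < \<rho>" and r1: "\<rho> < 1" and b: "\<rho> + \<tau> \<le> \<rho> * (1 + \<tau>) * M" and M: "M \<le> 2 / (1 + \<rho>)" and t0: "\<tau> \<ge> 0"
  shows "\<tau> \<le> \<rho>"
proof -
  have "\<rho> * (1 + \<tau>) * M \<le> \<rho> * (1 + \<tau>) * (2 / (1 + \<rho>))" using M r0 t0 by (intro mult_left_mono) auto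
  then have c: "\<rho> + \<tau> \<le> \<rho> * (1 + \<tau>) * (2 / (1 + \<rho>))" using b by linarith
  have "(\<rho> + \<tau>) * (1 + \<rho>) \<le> \<rho> * (1 + \<tau>) * (2 / (1 + \<rho>)) * (1 + \<rho>)"
    by (rule mult_right_mono[OF c]) (use r0 in simp)
  also have "\<rho> * (1 + \<tau>) * (2 / (1 + \<rho>)) * (1 + \<rho>) = 2 * \<rho> * (1 + \<tau>)" using r0 by (simp add: field_simps)
  finally have "(\<rho> + \<tau>) * (1 + \<rho>) \<le> 2 * \<rho> * (1 + \<tau>)" .
  then have "\<tau> * (1 - \<rho>) \<le> \<rho> * (1 - \<rho>)" by (simp add: algebra_simps)
  then show ?thesis using r1 by simp
qed

lemma adj_par:
  fixes w t2 :: complex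
  assumes w: "w \<noteq> 0" and t2: "t2 \<noteq> 1"
  shows "1 + w * (-1 / w) * t2 \<noteq> 0" "((-1 / w) + t2 + (w - 1) * (-1 / w) * t2) / (1 + w * (-1 / w) * t2) = -1 / w"
proof -
  have e: "1 + w * (-1 / w) * t2 = 1 - t2" using w by (simp add: field_simps)
  show "1 + w * (-1 / w) * t2 \<noteq> 0" using e t2 by simp
  have "(-1 / w) + t2 + (w - 1) * (-1 / w) * t2 = (-1 / w) * (1 - t2)" using w by (simp add: field_simps)
  then show "((-1 / w) + t2 + (w - 1) * (-1 / w) * t2) / (1 + w * (-1 / w) * t2) = -1 / w"
    using e t2 by simp
qed

lemma wh_bound:
  fixes q :: complex and \<rho> X :: real
  assumes q1: "q \<noteq> 1" and q2: "q \<noteq> 2" and q0: "q \<noteq> 0" and r: "\<rho> = 1 / cmod (q - 1)"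
    and X1: "X > 1" and rx: "\<rho> * X^2 < 1"
    and h: "cmod (q - 2) \<ge> 2 * (1 - \<rho> * X^2) / (X^2 - 1)"
  shows "((-4) * q ^ 1 + 2 * q ^ 2) / ((-4) * q ^ 1 + 8 * q ^ 2 + (-5) * q ^ 3 + 1 * q ^ 4) = 2 / ((q - 1) * (q - 2))"
    "\<rho> + cmod (2 / ((q - 1) * (q - 2))) \<le> \<rho> * (1 + cmod (2 / ((q - 1) * (q - 2)))) * X^2"
proof -
  have a: "q - 1 \<noteq> 0" "q - 2 \<noteq> 0" using q1 q2 by auto
  have "(-4) * q ^ 1 + 8 * q ^ 2 + (-5) * q ^ 3 + 1 * q ^ 4 = q * (q - 2) * ((q - 1) * (q - 2))"
    by (simp add: algebra_simps power2_eq_square power3_eq_cube power4_eq_xxxx)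
  moreover have "(-4) * q ^ 1 + 2 * q ^ 2 = q * (q - 2) * 2" by (simp add: algebra_simps power2_eq_square)
  ultimately show "((-4) * q ^ 1 + 2 * q ^ 2) / ((-4) * q ^ 1 + 8 * q ^ 2 + (-5) * q ^ 3 + 1 * q ^ 4) = 2 / ((q - 1) * (q - 2))"
    using a q0 by simp
  define d where "d = cmod (q - 2)"
  have d0: "d > 0" using a unfolding d_def by simp
  have c1: "cmod (q - 1) > 0" using a by simp
  have tw: "cmod (2 / ((q - 1) * (q - 2))) = 2 * \<rho> / d" unfolding d_def r by (simp add: norm_divide norm_mult)
  have r0: "\<rho> > 0" unfolding r using c1 by simp
  have x2: "X^2 > 1" using X1 by (simp add: one_less_power)
  have "2 * (1 - \<rho> * X^2) \<le> d * (X^2 - 1)" using h x2 unfolding d_def by (simp add: field_simps)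
  then have "d + 2 \<le> (d + 2 * \<rho>) * X^2" by (simp add: algebra_simps)
  then have "(d + 2) * (\<rho> / d) \<le> (d + 2 * \<rho>) * X^2 * (\<rho> / d)" using r0 d0 by (intro mult_right_mono) auto
  then have "\<rho> + 2 * \<rho> / d \<le> \<rho> * (1 + 2 * \<rho> / d) * X^2" using d0 by (simp add: field_simps)
  then show "\<rho> + cmod (2 / ((q - 1) * (q - 2))) \<le> \<rho> * (1 + cmod (2 / ((q - 1) * (q - 2)))) * X^2" using tw by simp
qed


lemma nz_lemma:
  fixes w t1 t2 :: complex
  assumes r0: "0 < \<rho>" "\<rho> < 1" and w: "cmod w = 1 / \<rho>" and t1: "cmod t1 \<le> \<rho>" and t2: "cmod t2 \<le> \<rho>"
  shows "1 + w * t1 * t2 \<noteq> 0"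
proof
  assume h: "1 + w * t1 * t2 = 0"
  have "cmod (w * t1 * t2) = 1" using h by (metis add_eq_0_iff norm_minus_cancel norm_one)
  moreover have "cmod (w * t1 * t2) \<le> (1 / \<rho>) * \<rho> * \<rho>"
    unfolding norm_mult w using t1 t2 r0 by (intro mult_mono) auto
  moreover have "(1 / \<rho>) * \<rho> * \<rho> < 1" using r0 by simp
  ultimately show False by simp
qed

lemma adj_par2:
  fixes w t1 :: complex
  assumes w: "w \<noteq> 0" and t1: "t1 \<noteq> 1"
  shows "1 + w * t1 * (-1 / w) \<noteq> 0" "(t1 + (-1 / w) + (w - 1) * t1 * (-1 / w)) / (1 + w * t1 * (-1 / w)) = -1 / w"
proof -
  have e: "1 + w * t1 * (-1 / w) = 1 - t1" using w by (simp add: field_simps)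
  show "1 + w * t1 * (-1 / w) \<noteq> 0" using e t1 by simp
  have "t1 + (-1 / w) + (w - 1) * t1 * (-1 / w) = (-1 / w) * (1 - t1)" using w by (simp add: field_simps)
  then show "(t1 + (-1 / w) + (w - 1) * t1 * (-1 / w)) / (1 + w * t1 * (-1 / w)) = -1 / w"
    using e t1 by simp
qed

lemma par_alg:
  fixes q P P1 P2 S S1 S2 :: complex
  assumes q: "q \<noteq> 0" and p1: "P1 \<noteq> 0" and p2: "P2 \<noteq> 0"
    and D: "1 + (q - 1) * (S1 / P1) * (S2 / P2) \<noteq> 0"
    and e1: "q^2 * P = P1 * P2 + (q - 1) * S1 * S2" and e2: "q^2 * (P - S) = (P1 - S1) * (P2 - S2)"
  shows "P \<noteq> 0" "S / P = ((S1/P1) + (S2/P2) + (q - 1 - 1) * (S1/P1) * (S2/P2)) / (1 + (q - 1) * (S1/P1) * (S2/P2))"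
proof -
  have Dn: "P1 * P2 + (q - 1) * S1 * S2 \<noteq> 0"
  proof -
    have "P1 * P2 + (q - 1) * S1 * S2 = P1 * P2 * (1 + (q - 1) * (S1 / P1) * (S2 / P2))"
      using p1 p2 by (simp add: field_simps)
    then show ?thesis using p1 p2 D by simp
  qed
  have P: "P = (P1 * P2 + (q - 1) * S1 * S2) / q^2" using e1 q by (simp add: eq_divide_eq mult.commute)
  then show Pn: "P \<noteq> 0" using q Dn by simp
  have "q^2 * S = q^2 * P - (P1 - S1) * (P2 - S2)" using e2 by (simp add: algebra_simps)
  then have S: "S = (P1 * P2 + (q - 1) * S1 * S2 - (P1 - S1) * (P2 - S2)) / q^2"
    using e1 q by (simp add: eq_divide_eq mult.commute)
  have "S / P = (P1 * P2 + (q - 1) * S1 * S2 - (P1 - S1) * (P2 - S2)) / (P1 * P2 + (q - 1) * S1 * S2)"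
    unfolding S P using q by simp
  also have "\<dots> = (S1 * P2 + S2 * P1 + (q - 1 - 1) * S1 * S2) / (P1 * P2 + (q - 1) * S1 * S2)"
    by (simp add: algebra_simps)
  also have "\<dots> = ((S1/P1) + (S2/P2) + (q - 1 - 1) * (S1/P1) * (S2/P2)) / (1 + (q - 1) * (S1/P1) * (S2/P2))"
  proof -
    have n: "(S1/P1) + (S2/P2) + (q - 1 - 1) * (S1/P1) * (S2/P2) = (S1 * P2 + S2 * P1 + (q - 1 - 1) * S1 * S2) / (P1 * P2)"
      using p1 p2 by (simp add: field_simps)
    have d: "1 + (q - 1) * (S1/P1) * (S2/P2) = (P1 * P2 + (q - 1) * S1 * S2) / (P1 * P2)"
      using p1 p2 by (simp add: field_simps)
    have z: "P1 * P2 \<noteq> 0" using p1 p2 by simp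
    show ?thesis unfolding n d using z by simp
  qed
  finally show "S / P = ((S1/P1) + (S2/P2) + (q - 1 - 1) * (S1/P1) * (S2/P2)) / (1 + (q - 1) * (S1/P1) * (S2/P2))" .
qed

lemma ser_alg:
  fixes q P P1 P2 S S1 S2 :: complex
  assumes q: "q \<noteq> 0" and p1: "P1 \<noteq> 0" and p2: "P2 \<noteq> 0"
    and e1: "q * P = P1 * P2" and e2: "q * S = S1 * S2"
  shows "P \<noteq> 0" "S / P = (S1 / P1) * (S2 / P2)"
proof -
  have P: "P = P1 * P2 / q" using e1 q by (simp add: field_simps)
  have S: "S = S1 * S2 / q" using e2 q by (simp add: field_simps)
  show "P \<noteq> 0" using P q p1 p2 by simp
  show "S / P = (S1 / P1) * (S2 / P2)" unfolding P S using q p1 p2 by simp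
qed

lemma set_tl_sub: "set (tl xs) \<subseteq> set xs"
  by (cases xs) auto

definition extpath :: "'a set \<Rightarrow> ('a,'b) edge set \<Rightarrow> 'a set \<Rightarrow> ('a,'b) edge set \<Rightarrow> 'a \<Rightarrow> 'a \<Rightarrow> bool" where
  "extpath V' E' V E s t \<longleftrightarrow> (\<exists>vs es. is_path V' E' s t vs es \<and> set es \<inter> E = {} \<and> set vs \<inter> V \<subseteq> {s,t})"

locale zf =
  fixes L :: nat and q :: complex and \<rho> X :: real
  assumes L3: "L \<ge> 3" and q1: "q \<noteq> 1" and q0: "q \<noteq> 0" and q2: "q \<noteq> 2"
    and rdef: "\<rho> = 1 / cmod (q - 1)" and r0: "0 < \<rho>" and r1: "\<rho> < 1"
    and X1: "X > 1" and XL: "X ^ (L - 1) = 2 / (1 + \<rho>)" and Xb: "(1 + \<rho>) / (1 + \<rho>^2) \<le> X"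
    and X2: "X^2 \<le> 2 / (1 + \<rho>)" and rX2: "\<rho> * X^2 < 1" and rX: "\<rho> * X < 1"
    and hq2: "cmod (q - 2) \<ge> 2 * (1 - \<rho> * X^2) / (X^2 - 1)"
begin

definition TT :: "'a set \<Rightarrow> ('a,'b) edge set \<Rightarrow> 'a \<Rightarrow> 'a \<Rightarrow> complex" where
  "TT V E s t = CS V E s t q / chrom_poly V E q"

definition Inv :: "'a set \<Rightarrow> ('a,'b) edge set \<Rightarrow> 'a \<Rightarrow> 'a \<Rightarrow> bool" where
  "Inv V E s t \<longleftrightarrow> cmod (TT V E s t) \<le> \<rho> \<and> (TT V E s t = -1 / (q - 1) \<or>
     (\<exists>P. pathfam V E s t P \<and> 1 \<le> length P \<and> length P \<le> L - 1 \<and>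
        \<rho> + cmod (TT V E s t) \<le> \<rho> * (1 + cmod (TT V E s t)) * X ^ length P))"

lemma w_norm: "cmod (q - 1) = 1 / \<rho>" using rdef r0 by simp

lemma w_nz: "q - 1 \<noteq> 0" using q1 by simp

lemma t0_norm: "cmod (-1 / (q - 1)) = \<rho>" using rdef by (simp add: norm_divide)

lemma Xpow_le: assumes "k \<le> L - 1" shows "X ^ k \<le> 2 / (1 + \<rho>)"
proof -
  have "X ^ k \<le> X ^ (L - 1)" by (rule power_increasing) (use X1 assms in auto)
  then show ?thesis using XL by simp
qed

lemma rho_two: "\<rho> * (2 / (1 + \<rho>)) < 1" using r0 r1 by (simp add: field_simps)

lemma main:
  "inW V E s t \<Longrightarrow> finite V' \<Longrightarrow> finite E' \<Longrightarrow> V \<subseteq> V' \<Longrightarrow> E \<subseteq> E' \<Longrightarrow> maxmaxflow V' E' \<le> L \<Longrightarrow>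
   chrom_poly V E q \<noteq> 0 \<and> (extpath V' E' V E s t \<longrightarrow> Inv V E s t)"
proof (induction arbitrary: V' E' rule: inW.induct)
  case (K2 s t l)
  have cp: "chrom_poly {s,t} {(l,{s,t})} q = q^2 - q" by (rule K2_vals(1)[OF K2(1)])
  have cs: "CS {s,t} {(l,{s,t})} s t q = - q" by (rule K2_vals(2)[OF K2(1)])
  have cpn: "q^2 - q \<noteq> 0" using q0 q1 by (simp add: power2_eq_square right_diff_distrib[symmetric])
  have T: "TT {s,t} {(l,{s,t})} s t = -1 / (q - 1)"
    unfolding TT_def cp cs using q0 q1 by (simp add: field_simps power2_eq_square)
  show ?case using cpn cp T t0_norm unfolding Inv_def by simp
next
  case (Wheatstone s a b t l1 l2 l3 l4 l5)
  let ?V = "{s, a, b, t}"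
  let ?E = "{(l1, {s, a}), (l2, {s, b}), (l3, {a, b}), (l4, {a, t}), (l5, {b, t})}"
  have cp: "chrom_poly ?V ?E q = (-4) * q ^ 1 + (8) * q ^ 2 + (-5) * q ^ 3 + (1) * q ^ 4"
    by (rule W_CP[OF Wheatstone(1)])
  have cs: "CS ?V ?E s t q = (-4) * q ^ 1 + (2) * q ^ 2"
    by (rule W_CS[OF Wheatstone(1)])
  have fac: "(-4) * q ^ 1 + (8) * q ^ 2 + (-5) * q ^ 3 + (1) * q ^ 4 = q * (q - 1) * (q - 2)^2"
    by (simp add: algebra_simps power2_eq_square power3_eq_cube power4_eq_xxxx)
  have cpn: "chrom_poly ?V ?E q \<noteq> 0" unfolding cp fac using q0 q1 q2 by simp
  have wb: "((-4) * q ^ 1 + 2 * q ^ 2) / ((-4) * q ^ 1 + 8 * q ^ 2 + (-5) * q ^ 3 + 1 * q ^ 4) = 2 / ((q - 1) * (q - 2))"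
    "\<rho> + cmod (2 / ((q - 1) * (q - 2))) \<le> \<rho> * (1 + cmod (2 / ((q - 1) * (q - 2)))) * X^2"
    using wh_bound[OF q1 q2 q0 rdef X1 rX2 hq2] by auto
  have T: "TT ?V ?E s t = 2 / ((q - 1) * (q - 2))" unfolding TT_def cp cs using wb(1) by simp
  have Tle: "cmod (TT ?V ?E s t) \<le> \<rho>"
    by (rule tau_le[OF r0 r1 _ X2]) (use wb(2) T in auto)
  have d: "s \<noteq> a" "s \<noteq> b" "s \<noteq> t" "a \<noteq> b" "a \<noteq> t" "b \<noteq> t" using Wheatstone(1) by auto
  define P where "P = [([s,a,t], [(l1,{s,a}),(l4,{a,t})]), ([s,b,t], [(l2,{s,b}),(l5,{b,t})])]"
  have p1: "is_path ?V ?E s t [s,a,t] [(l1,{s,a}),(l4,{a,t})]"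
    using d unfolding is_path_def by (auto simp: less_Suc_eq)
  have p2: "is_path ?V ?E s t [s,b,t] [(l2,{s,b}),(l5,{b,t})]"
    using d unfolding is_path_def by (auto simp: less_Suc_eq)
  have dj: "set [(l1,{s,a}),(l4,{a,t})] \<inter> set [(l2,{s,b}),(l5,{b,t})] = {}"
    using d by (auto simp: doubleton_eq_iff)
  have dj2: "set [(l2,{s,b}),(l5,{b,t})] \<inter> set [(l1,{s,a}),(l4,{a,t})] = {}"
    using dj by (simp only: Int_commute)
  have P0: "P ! 0 = ([s,a,t], [(l1,{s,a}),(l4,{a,t})])" by (simp add: P_def)
  have P1: "P ! 1 = ([s,b,t], [(l2,{s,b}),(l5,{b,t})])" by (simp add: P_def)
  have lP: "length P = 2" by (simp add: P_def)
  have "pathfam ?V ?E s t P" unfolding pathfam_def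
  proof (intro conjI allI impI)
    fix i assume "i < length P"
    then have "i = 0 \<or> i = 1" unfolding lP by linarith
    then show "is_path ?V ?E s t (fst (P ! i)) (snd (P ! i))"
      by (elim disjE; hypsubst; simp only: P0 P1 fst_conv snd_conv p1 p2)
  next
    fix i j assume "i < length P" "j < length P" "i \<noteq> j"
    then have "(i = 0 \<and> j = 1) \<or> (i = 1 \<and> j = 0)" unfolding lP by linarith
    then show "set (snd (P ! i)) \<inter> set (snd (P ! j)) = {}"
      by (elim disjE conjE; hypsubst; simp only: P0 P1 snd_conv dj dj2)
  qed
  moreover have "length P = 2" unfolding P_def by simp
  moreover have "2 \<le> L - 1" using L3 by simp
  ultimately have "Inv ?V ?E s t" unfolding Inv_def using Tle T wb(2) by (metis one_le_numeral)
  then show ?case using cpn by simp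
next
  case (parallel V1 E1 s t V2 E2)
  have b1: "finite V1" "finite E1" "wfE V1 E1" "s \<in> V1" "t \<in> V1" "s \<noteq> t" using inW_basic[OF parallel.hyps(1)] by auto
  have b2: "finite V2" "finite E2" "wfE V2 E2" "s \<in> V2" "t \<in> V2" using inW_basic[OF parallel.hyps(2)] by auto
  have sub: "V1 \<subseteq> V'" "E1 \<subseteq> E'" "V2 \<subseteq> V'" "E2 \<subseteq> E'" using parallel.prems by auto
  obtain vs1 es1 where pa1: "is_path V1 E1 s t vs1 es1" using inW_path[OF parallel.hyps(1)] by blast
  obtain vs2 es2 where pa2: "is_path V2 E2 s t vs2 es2" using inW_path[OF parallel.hyps(2)] by blast
  have ext1: "extpath V' E' V1 E1 s t" unfolding extpath_def
  proof (intro exI conjI)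
    show "is_path V' E' s t vs2 es2" by (rule is_path_mono[OF pa2 sub(3,4)])
    show "set es2 \<inter> E1 = {}" using is_path_edges[OF pa2] parallel.hyps(4) by auto
    show "set vs2 \<inter> V1 \<subseteq> {s,t}" using is_path_verts[OF pa2] parallel.hyps(3) by auto
  qed
  have ext2: "extpath V' E' V2 E2 s t" unfolding extpath_def
  proof (intro exI conjI)
    show "is_path V' E' s t vs1 es1" by (rule is_path_mono[OF pa1 sub(1,2)])
    show "set es1 \<inter> E2 = {}" using is_path_edges[OF pa1] parallel.hyps(4) by auto
    show "set vs1 \<inter> V2 \<subseteq> {s,t}" using is_path_verts[OF pa1] parallel.hyps(3) by auto
  qed
  have I1: "chrom_poly V1 E1 q \<noteq> 0" "Inv V1 E1 s t"
    using parallel.IH(1)[OF parallel.prems(1,2) sub(1,2) parallel.prems(5)] ext1 by auto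
  have I2: "chrom_poly V2 E2 q \<noteq> 0" "Inv V2 E2 s t"
    using parallel.IH(2)[OF parallel.prems(1,2) sub(3,4) parallel.prems(5)] ext2 by auto
  define t1 where "t1 = TT V1 E1 s t"
  define t2 where "t2 = TT V2 E2 s t"
  have t1r: "cmod t1 \<le> \<rho>" using I1(2) unfolding Inv_def t1_def by auto
  have t2r: "cmod t2 \<le> \<rho>" using I2(2) unfolding Inv_def t2_def by auto
  have D: "1 + (q - 1) * t1 * t2 \<noteq> 0" by (rule nz_lemma[OF r0 r1 w_norm t1r t2r])
  have pp: "q^2 * chrom_poly (V1 \<union> V2) (E1 \<union> E2) q = chrom_poly V1 E1 q * chrom_poly V2 E2 q + (q - 1) * CS V1 E1 s t q * CS V2 E2 s t q"
    "q^2 * CD (V1 \<union> V2) (E1 \<union> E2) s t q = CD V1 E1 s t q * CD V2 E2 s t q"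
    using parallel_poly[OF b1(1) b2(1) b1(2) b2(2) b1(3) b2(3) parallel.hyps(3,4) b1(6)] by auto
  have e2: "q^2 * (chrom_poly (V1 \<union> V2) (E1 \<union> E2) q - CS (V1 \<union> V2) (E1 \<union> E2) s t q) =
      (chrom_poly V1 E1 q - CS V1 E1 s t q) * (chrom_poly V2 E2 q - CS V2 E2 s t q)"
    using pp(2) CP_split[of "V1 \<union> V2" "E1 \<union> E2" q s t] CP_split[of V1 E1 q s t] CP_split[of V2 E2 q s t] by simp
  have alg: "chrom_poly (V1 \<union> V2) (E1 \<union> E2) q \<noteq> 0"
    "TT (V1 \<union> V2) (E1 \<union> E2) s t = (t1 + t2 + (q - 1 - 1) * t1 * t2) / (1 + (q - 1) * t1 * t2)"
    using par_alg[OF q0 I1(1) I2(1) _ pp(1) e2] D unfolding TT_def t1_def t2_def by auto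
  show ?case
  proof (intro conjI impI)
    show "chrom_poly (V1 \<union> V2) (E1 \<union> E2) q \<noteq> 0" by (rule alg(1))
    assume ext: "extpath V' E' (V1 \<union> V2) (E1 \<union> E2) s t"
    show "Inv (V1 \<union> V2) (E1 \<union> E2) s t"
    proof (cases "t1 = -1 / (q - 1)")
      case True
      have "t2 \<noteq> 1" using t2r r1 by auto
      then have "TT (V1 \<union> V2) (E1 \<union> E2) s t = -1 / (q - 1)"
        using adj_par(2)[OF w_nz, of t2] alg(2) True by simp
      then show ?thesis unfolding Inv_def using t0_norm by simp
    next
      case F1: False
      show ?thesis
      proof (cases "t2 = -1 / (q - 1)")
        case True
        have "t1 \<noteq> 1" using t1r r1 by auto
        then have "TT (V1 \<union> V2) (E1 \<union> E2) s t = -1 / (q - 1)"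
          using adj_par2(2)[OF w_nz, of t1] alg(2) True by simp
        then show ?thesis unfolding Inv_def using t0_norm by simp
      next
        case F2: False
        obtain P1 where P1: "pathfam V1 E1 s t P1" "1 \<le> length P1" "length P1 \<le> L - 1"
          "\<rho> + cmod t1 \<le> \<rho> * (1 + cmod t1) * X ^ length P1"
          using I1(2) F1 unfolding Inv_def t1_def by auto
        obtain P2 where P2: "pathfam V2 E2 s t P2" "1 \<le> length P2" "length P2 \<le> L - 1"
          "\<rho> + cmod t2 \<le> \<rho> * (1 + cmod t2) * X ^ length P2"
          using I2(2) F2 unfolding Inv_def t2_def by auto
        define P where "P = P1 @ P2"
        have PF: "pathfam (V1 \<union> V2) (E1 \<union> E2) s t P" unfolding P_def
        proof (rule pathfam_append)
          show "pathfam (V1 \<union> V2) (E1 \<union> E2) s t P1" by (rule pathfam_mono[OF P1(1)]) auto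
          show "pathfam (V1 \<union> V2) (E1 \<union> E2) s t P2" by (rule pathfam_mono[OF P2(1)]) auto
          fix p p' assume "p \<in> set P1" "p' \<in> set P2"
          then show "set (snd p) \<inter> set (snd p') = {}"
            using pathfam_edges[OF P1(1)] pathfam_edges[OF P2(1)] parallel.hyps(4) by blast
        qed
        obtain vs es where ex: "is_path V' E' s t vs es" "set es \<inter> (E1 \<union> E2) = {}"
          using ext unfolding extpath_def by blast
        have PF': "pathfam V' E' s t (P @ [(vs,es)])"
        proof (rule pathfam_append)
          show "pathfam V' E' s t P" by (rule pathfam_mono[OF PF]) (use sub in auto)
          show "pathfam V' E' s t [(vs,es)]" by (rule pathfam_single[OF ex(1)])
          fix p p' assume pP: "p \<in> set P" and "p' \<in> set [(vs,es)]"
          then have p': "snd p' = es" by simp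
          have "set (snd p) \<subseteq> E1 \<union> E2" by (rule pathfam_edges[OF PF pP])
          then show "set (snd p) \<inter> set (snd p') = {}" unfolding p' using ex(2) by blast
        qed
        have sV': "s \<in> V'" "t \<in> V'" using sub b1 by auto
        have "length (P @ [(vs,es)]) \<le> maxmaxflow V' E'"
          by (rule pathfam_le_mmf[OF parallel.prems(1,2) sV' b1(6) PF'])
        then have lenP: "length P \<le> L - 1" using parallel.prems(5) by simp
        have lP: "length P = length P1 + length P2" unfolding P_def by simp
        have M: "X ^ length P \<le> 2 / (1 + \<rho>)" by (rule Xpow_le[OF lenP])
        have rm: "\<rho> * (X ^ length P1 * X ^ length P2) < 1"
        proof -
          have "\<rho> * (X ^ length P1 * X ^ length P2) = \<rho> * X ^ length P" unfolding lP by (simp add: power_add)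
          also have "\<dots> \<le> \<rho> * (2 / (1 + \<rho>))" by (rule mult_left_mono[OF M]) (use r0 in simp)
          also have "\<dots> < 1" by (rule rho_two)
          finally show ?thesis .
        qed
        have pb: "\<rho> + cmod ((t1 + t2 + (q - 1 - 1) * t1 * t2) / (1 + (q - 1) * t1 * t2)) \<le>
           \<rho> * (1 + cmod ((t1 + t2 + (q - 1 - 1) * t1 * t2) / (1 + (q - 1) * t1 * t2))) * (X ^ length P1 * X ^ length P2)"
          by (rule par_bound(2)[OF r0 r1 w_norm t1r t2r P1(4) P2(4) _ _ rm]) (use X1 in auto)
        then have pb': "\<rho> + cmod (TT (V1 \<union> V2) (E1 \<union> E2) s t) \<le> \<rho> * (1 + cmod (TT (V1 \<union> V2) (E1 \<union> E2) s t)) * X ^ length P"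
          unfolding alg(2) lP by (simp add: power_add)
        have Tr: "cmod (TT (V1 \<union> V2) (E1 \<union> E2) s t) \<le> \<rho>" by (rule tau_le[OF r0 r1 pb' M]) simp
        have "1 \<le> length P" using lP P1(2) by simp
        then show ?thesis unfolding Inv_def using Tr PF lenP pb' by blast
      qed
    qed
  qed
next
  case (series V1 E1 s m V2 E2 t)
  have b1: "finite V1" "finite E1" "wfE V1 E1" "s \<in> V1" "m \<in> V1" "s \<noteq> m" using inW_basic[OF series.hyps(1)] by auto
  have b2: "finite V2" "finite E2" "wfE V2 E2" "m \<in> V2" "t \<in> V2" "m \<noteq> t" using inW_basic[OF series.hyps(2)] by auto
  have sub: "V1 \<subseteq> V'" "E1 \<subseteq> E'" "V2 \<subseteq> V'" "E2 \<subseteq> E'" using series.prems by auto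
  have sV2: "s \<notin> V2" using series.hyps(3) b1(4,6) by auto
  have tV1: "t \<notin> V1" using series.hyps(3) b2(5,6) by auto
  have C1: "chrom_poly V1 E1 q \<noteq> 0" using series.IH(1)[OF series.prems(1,2) sub(1,2) series.prems(5)] by auto
  have C2: "chrom_poly V2 E2 q \<noteq> 0" using series.IH(2)[OF series.prems(1,2) sub(3,4) series.prems(5)] by auto
  have sp: "q * chrom_poly (V1 \<union> V2) (E1 \<union> E2) q = chrom_poly V1 E1 q * chrom_poly V2 E2 q"
    "q * CS (V1 \<union> V2) (E1 \<union> E2) s t q = CS V1 E1 s m q * CS V2 E2 m t q"
    using series_poly[OF b1(1) b2(1) b1(2) b2(2) b1(3) b2(3) series.hyps(3,4) b1(4) b2(5)] by auto
  have alg: "chrom_poly (V1 \<union> V2) (E1 \<union> E2) q \<noteq> 0" "TT (V1 \<union> V2) (E1 \<union> E2) s t = TT V1 E1 s m * TT V2 E2 m t"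
    using ser_alg[OF q0 C1 C2 sp] unfolding TT_def by auto
  show ?case
  proof (intro conjI impI)
    show "chrom_poly (V1 \<union> V2) (E1 \<union> E2) q \<noteq> 0" by (rule alg(1))
    assume ext: "extpath V' E' (V1 \<union> V2) (E1 \<union> E2) s t"
    obtain vs es where ex: "is_path V' E' s t vs es" "set es \<inter> (E1 \<union> E2) = {}" "set vs \<inter> (V1 \<union> V2) \<subseteq> {s,t}"
      using ext unfolding extpath_def by blast
    obtain vs1 es1 where pa1: "is_path V1 E1 s m vs1 es1" using inW_path[OF series.hyps(1)] by blast
    obtain vs2 es2 where pa2: "is_path V2 E2 m t vs2 es2" using inW_path[OF series.hyps(2)] by blast
    have v1: "set vs1 \<subseteq> V1" by (rule is_path_verts[OF pa1])
    have v2: "set vs2 \<subseteq> V2" by (rule is_path_verts[OF pa2])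
    have ed1: "set es1 \<subseteq> E1" by (rule is_path_edges[OF pa1])
    have ed2: "set es2 \<subseteq> E2" by (rule is_path_edges[OF pa2])
    have ext1: "extpath V' E' V1 E1 s m" unfolding extpath_def
    proof (intro exI conjI)
      have r2: "is_path V' E' t m (rev vs2) (rev es2)" by (rule is_path_mono[OF path_rev[OF pa2] sub(3,4)])
      have "set vs \<inter> set (rev vs2) = {t}"
        using ex(3) v2 sV2 is_path_ends[OF ex(1)] is_path_ends[OF pa2] by auto
      then show "is_path V' E' s m (vs @ tl (rev vs2)) (es @ rev es2)" by (rule path_concat[OF ex(1) r2])
      show "set (es @ rev es2) \<inter> E1 = {}" using ex(2) ed2 series.hyps(4) by auto
      show "set (vs @ tl (rev vs2)) \<inter> V1 \<subseteq> {s,m}"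
        using ex(3) v2 tV1 series.hyps(3) set_tl_sub[of "rev vs2"] by auto
    qed
    have ext2: "extpath V' E' V2 E2 m t" unfolding extpath_def
    proof (intro exI conjI)
      have r1': "is_path V' E' m s (rev vs1) (rev es1)" by (rule is_path_mono[OF path_rev[OF pa1] sub(1,2)])
      have "set (rev vs1) \<inter> set vs = {s}"
        using ex(3) v1 tV1 is_path_ends[OF ex(1)] is_path_ends[OF pa1] by auto
      then show "is_path V' E' m t (rev vs1 @ tl vs) (rev es1 @ es)" by (rule path_concat[OF r1' ex(1)])
      show "set (rev es1 @ es) \<inter> E2 = {}" using ex(2) ed1 series.hyps(4) by auto
      show "set (rev vs1 @ tl vs) \<inter> V2 \<subseteq> {m,t}"
        using ex(3) v1 sV2 series.hyps(3) set_tl_sub[of vs] by auto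
    qed
    have I1: "Inv V1 E1 s m" using series.IH(1)[OF series.prems(1,2) sub(1,2) series.prems(5)] ext1 by auto
    have I2: "Inv V2 E2 m t" using series.IH(2)[OF series.prems(1,2) sub(3,4) series.prems(5)] ext2 by auto
    have t1r: "cmod (TT V1 E1 s m) \<le> \<rho>" using I1 unfolding Inv_def by auto
    have t2r: "cmod (TT V2 E2 m t) \<le> \<rho>" using I2 unfolding Inv_def by auto
    have sb: "cmod (TT V1 E1 s m * TT V2 E2 m t) \<le> \<rho>"
      "\<rho> + cmod (TT V1 E1 s m * TT V2 E2 m t) \<le> \<rho> * (1 + cmod (TT V1 E1 s m * TT V2 E2 m t)) * X"
      using ser_bound[OF r0 r1 rX Xb t1r t2r] by auto
    have q1': "is_path (V1 \<union> V2) (E1 \<union> E2) s m vs1 es1" by (rule is_path_mono[OF pa1]) auto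
    have q2': "is_path (V1 \<union> V2) (E1 \<union> E2) m t vs2 es2" by (rule is_path_mono[OF pa2]) auto
    have "set vs1 \<inter> set vs2 = {m}" using v1 v2 is_path_ends[OF pa1] is_path_ends[OF pa2] series.hyps(3) by auto
    then have pc: "is_path (V1 \<union> V2) (E1 \<union> E2) s t (vs1 @ tl vs2) (es1 @ es2)" by (rule path_concat[OF q1' q2'])
    have "pathfam (V1 \<union> V2) (E1 \<union> E2) s t [(vs1 @ tl vs2, es1 @ es2)]" by (rule pathfam_single[OF pc])
    moreover have "1 \<le> L - 1" using L3 by simp
    ultimately show "Inv (V1 \<union> V2) (E1 \<union> E2) s t" unfolding Inv_def alg(2) using sb by (metis length_Cons list.size(3) One_nat_def power_one_right order_refl)
  qed
qed

end


theorem theorem8p2: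
  fixes L :: nat and V :: "'a set" and E :: "('a,'b) edge set" and s t :: 'a and q :: complex
  assumes "L \<ge> 3"
    and "inW V E s t"
    and "maxmaxflow V E \<le> L"
    and "q \<noteq> 1"
    and "cmod (q - 1) \<ge> 1 / rho_star L"
    and "cmod (q - 2) \<ge>
           (let \<rho> = 1 / cmod (q - 1); X = (2 / (1 + \<rho>)) powr (1 / (real L - 1))
            in 2 * (1 - \<rho> * X\<^sup>2) / (X\<^sup>2 - 1))"
  shows "chrom_poly V E q \<noteq> 0"
proof -
  note L3 = assms(1)
  define \<rho> where "\<rho> = 1 / cmod (q - 1)"
  define X where "X = (2 / (1 + \<rho>)) powr (1 / (real L - 1))"
  have rs0: "0 < rho_star L" and rs1: "rho_star L < 1" using rho_star_props[OF L3] by auto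
  have big: "cmod (q - 1) > 1"
  proof -
    have "1 < 1 / rho_star L" using rs0 rs1 by simp
    then show ?thesis using assms(5) by linarith
  qed
  have r0: "0 < \<rho>" unfolding \<rho>_def using big assms(4) by simp
  have rle: "\<rho> \<le> rho_star L"
  proof -
    have "1 / cmod (q - 1) \<le> 1 / (1 / rho_star L)"
      by (rule divide_left_mono[OF assms(5)]) (use rs0 big assms(4) in auto)
    then show ?thesis unfolding \<rho>_def using rs0 by simp
  qed
  have q0: "q \<noteq> 0" using big by auto
  have q2: "q \<noteq> 2" using big by auto
  note XF = X_facts[OF L3 r0 rle X_def]
  have hq2: "cmod (q - 2) \<ge> 2 * (1 - \<rho> * X^2) / (X^2 - 1)"
    using assms(6) unfolding Let_def \<rho>_def[symmetric] X_def[symmetric] .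
  interpret zf L q \<rho> X
    by (unfold_locales) (use L3 assms(4) q0 q2 \<rho>_def r0 XF hq2 in auto)
  have b: "finite V" "finite E" using inW_basic[OF assms(2)] by auto
  show ?thesis using main[OF assms(2) b order_refl order_refl assms(3)] by simp
qed

end
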